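(* Let $m\ge1$, $m'=\lceil(m+1)/2\rceil$ and $\alpha,\beta\in P_{de,C,m}^\vee$. Then \[ |S(\alpha,\beta)|^{2^{d-2}}\le(\#P_{e,C,m}^{2(n+1)})^{2^{d-2}}(\#P_{e,C,m-m'}^{n+1})^{-(d-1)}\min\left\{N^{(m-m')}(\alpha),\ (\#P_{e,C,m'-1}^{n+1})^{-(d-1)}N^{(m)}(\beta)\right\}. \]
   Context: Let $\mathbb{F}_q$ be a finite field, $\psi$ a non-trivial additive character of $\mathbb{F}_q$, and $\psi_m(a_0+\dots+a_mt^m)=\prod_i\psi(a_i)$. Let $C$ be a smooth projective geometrically integral curve of genus $g$ over $\mathbb{F}_q$, $L$ a line bundle of degree $e\ge2g-1$, and $F=\sum_{j_1,\dots,j_d}a_{j_1\dots j_d}x_{j_1}\cdots x_{j_d}\in\mathbb{F}_q[x_0,\dots,x_n]$ a form of degree $d\ge2$ with symmetric coefficients. $P_{re,C}=H^0(C,L^{\otimes r})$, $P_{re,C,k}=P_{re,C}\otimes\mathbb{F}_q[t]/t^{k+1}$ (products are cup products). $P_{de,C,m}^\vee=P_{de,C}^\vee\otimes\mathbb{F}_q[t]/t^{m+1}$, with $\alpha(y)=\sum_l(\sum_{i+j=l}\alpha_i(y_j))t^l$ for $\alpha=\sum\alpha_it^i$, $y=\sum y_jt^j$. $\vec x\in P_{e,C,m}^{n+1}$ is globally generating if the components of $\vec x\bmod t$ generate $L$. $S(\alpha,\beta)=\sum\psi_m\big(\alpha(F(\vec x_0))+\beta(\vec x_1\cdot\nabla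 F(\vec x_0))\big)$ over $\vec x_0,\vec x_1\in P_{e,C,m}^{n+1}$ with $\vec x_0$ globally generating. $\Psi_j(\vec x^{(1)},\dots,\vec x^{(d-1)})=d!\sum_{j_1,\dots,j_{d-1}}a_{j_1,\dots,j_{d-1},j}x^{(1)}_{j_1}\cdots x^{(d-1)}_{j_{d-1}}$, and for $\gamma\in P_{de,C,m}^\vee$ and $0\le k\le m$, $N^{(k)}(\gamma)=\#\{(\vec y^{(1)},\dots,\vec y^{(d-1)})\in(P_{e,C,k}^{n+1})^{d-1}:\gamma(\Psi_i(\vec y^{(1)},\dots,\vec y^{(d-1)})y)\equiv 0\bmod t^{k+1}\ \forall\,0\le i\le n,\ y\in P_{e,C,k}\}$. *)

theory Defs
  imports Complex_Main "HOL-Computational_Algebra.Polynomial"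
begin

section \<open>The curve C, encoded by its function field K over F_q\<close>

text \<open>F_q is a finite field type 'k, embedded into the function field 'K of C via emb.
 A smooth projective geometrically integral curve over the perfect field F_q is the same
 as a function field of one variable K/F_q with F_q algebraically closed in K.\<close>

definition const_emb :: "('k::field \<Rightarrow> 'K::field) \<Rightarrow> bool" where
  "const_emb emb \<longleftrightarrow> emb 0 = 0 \<and> emb 1 = 1 \<and> (\<forall>a b. emb (a + b) = emb a + emb b)
     \<and> (\<forall>a b. emb (a * b) = emb a * emb b)"

definition algebraic_over :: "('k::field \<Rightarrow> 'K::field) \<Rightarrow> 'K \<Rightarrow> bool" where
  "algebraic_over emb f \<longleftrightarrow> (\<exists>p. p \<noteq> 0 \<and> poly (map_poly emb p) f = 0)"

definition rat_fun_field :: "('k::field \<Rightarrow> 'K::field) \<Rightarrow> 'K \<Rightarrow> 'K set" where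
  "rat_fun_field emb x = {f. \<exists>p q. poly (map_poly emb q) x \<noteq> 0 \<and>
      f = poly (map_poly emb p) x / poly (map_poly emb q) x}"

definition function_field :: "('k::field \<Rightarrow> 'K::field) \<Rightarrow> bool" where
  "function_field emb \<longleftrightarrow> const_emb emb \<and>
     (\<exists>x. \<not> algebraic_over emb x \<and>
        (\<exists>B. finite B \<and> (\<forall>f. \<exists>c. (\<forall>b\<in>B. c b \<in> rat_fun_field emb x) \<and> f = (\<Sum>b\<in>B. c b * b)))) \<and>
     (\<forall>f. algebraic_over emb f \<longrightarrow> f \<in> range emb)"

text \<open>Closed points of C = normalized discrete valuations of K trivial on F_q
  (value at 0 normalised to 0).\<close>

definition place :: "('k::field \<Rightarrow> 'K::field) \<Rightarrow> ('K \<Rightarrow> int) \<Rightarrow> bool" where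
  "place emb v \<longleftrightarrow>
     (\<forall>a b. a \<noteq> 0 \<longrightarrow> b \<noteq> 0 \<longrightarrow> v (a * b) = v a + v b) \<and>
     (\<forall>a b. a \<noteq> 0 \<longrightarrow> b \<noteq> 0 \<longrightarrow> a + b \<noteq> 0 \<longrightarrow> min (v a) (v b) \<le> v (a + b)) \<and>
     (\<forall>c. c \<noteq> 0 \<longrightarrow> v (emb c) = 0) \<and> (\<exists>t. t \<noteq> 0 \<and> v t = 1) \<and> v 0 = 0"

definition val_ring :: "('K::field \<Rightarrow> int) \<Rightarrow> 'K set" where
  "val_ring v = {f. f = 0 \<or> 0 \<le> v f}"

definition residue_card :: "('K::field \<Rightarrow> int) \<Rightarrow> nat" where
  "residue_card v = card (val_ring v // {(f, g). f \<in> val_ring v \<and> g \<in> val_ring v \<and> (f = g \<or> 1 \<le> v (f - g))})"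

definition place_deg :: "('k::{finite,field} \<Rightarrow> 'K::field) \<Rightarrow> ('K \<Rightarrow> int) \<Rightarrow> nat" where
  "place_deg emb v = (THE r. residue_card v = card (UNIV :: 'k set) ^ r)"

definition divisor :: "('k::field \<Rightarrow> 'K::field) \<Rightarrow> (('K \<Rightarrow> int) \<Rightarrow> int) \<Rightarrow> bool" where
  "divisor emb D \<longleftrightarrow> (\<forall>v. \<not> place emb v \<longrightarrow> D v = 0) \<and> finite {v. D v \<noteq> 0}"

definition div_deg :: "('k::{finite,field} \<Rightarrow> 'K::field) \<Rightarrow> (('K \<Rightarrow> int) \<Rightarrow> int) \<Rightarrow> int" where
  "div_deg emb D = (\<Sum>v\<in>{v. D v \<noteq> 0}. D v * int (place_deg emb v))"

definition RR_space :: "('k::field \<Rightarrow> 'K::field) \<Rightarrow> (('K \<Rightarrow> int) \<Rightarrow> int) \<Rightarrow> 'K set" where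
  "RR_space emb D = {f. f = 0 \<or> (\<forall>v. place emb v \<longrightarrow> - D v \<le> v f)}"

definition RR_dim :: "('k::{finite,field} \<Rightarrow> 'K::field) \<Rightarrow> (('K \<Rightarrow> int) \<Rightarrow> int) \<Rightarrow> nat" where
  "RR_dim emb D = (THE r. card (RR_space emb D) = card (UNIV :: 'k set) ^ r)"

definition genus :: "('k::{finite,field} \<Rightarrow> 'K::field) \<Rightarrow> int" where
  "genus emb = Sup {div_deg emb D + 1 - int (RR_dim emb D) | D. divisor emb D}"

definition div_scale :: "nat \<Rightarrow> (('K \<Rightarrow> int) \<Rightarrow> int) \<Rightarrow> (('K \<Rightarrow> int) \<Rightarrow> int)" where
  "div_scale r D = (\<lambda>v. int r * D v)"

text \<open>Global generation of L = O(D) by sections x_0(0),...,x_n(0) (constant terms).\<close>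

definition glob_gen :: "('k::field \<Rightarrow> 'K::field) \<Rightarrow> (('K \<Rightarrow> int) \<Rightarrow> int) \<Rightarrow> nat
    \<Rightarrow> (nat \<Rightarrow> nat \<Rightarrow> 'K) \<Rightarrow> bool" where
  "glob_gen emb D n x \<longleftrightarrow> (\<forall>v. place emb v \<longrightarrow> (\<exists>j\<le>n. x j 0 \<noteq> 0 \<and> v (x j 0) = - D v))"

section \<open>Truncated objects V \<otimes> F_q[t]/t^(k+1)\<close>

text \<open>An element is a coefficient sequence y :: nat => 'K (coefficient of t^l).\<close>

definition trunc :: "'K::field set \<Rightarrow> nat \<Rightarrow> (nat \<Rightarrow> 'K) set" where
  "trunc V k = {y. (\<forall>l\<le>k. y l \<in> V) \<and> (\<forall>l>k. y l = 0)}"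

definition tvecs :: "'K::field set \<Rightarrow> nat \<Rightarrow> nat \<Rightarrow> (nat \<Rightarrow> nat \<Rightarrow> 'K) set" where
  "tvecs V k N = {x. (\<forall>i<N. x i \<in> trunc V k) \<and> (\<forall>i\<ge>N. x i = (\<lambda>_. 0))}"

definition tmul :: "nat \<Rightarrow> (nat \<Rightarrow> 'K::field) \<Rightarrow> (nat \<Rightarrow> 'K) \<Rightarrow> nat \<Rightarrow> 'K" where
  "tmul k x y = (\<lambda>l. if l \<le> k then (\<Sum>i\<le>l. x i * y (l - i)) else 0)"

definition tone :: "nat \<Rightarrow> 'K::field" where
  "tone = (\<lambda>l. if l = 0 then 1 else 0)"

definition tprod :: "nat \<Rightarrow> (nat \<Rightarrow> 'K::field) list \<Rightarrow> nat \<Rightarrow> 'K" where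
  "tprod k xs = foldr (tmul k) xs tone"

definition sym_coeffs :: "(nat list \<Rightarrow> 'k) \<Rightarrow> bool" where
  "sym_coeffs a \<longleftrightarrow> (\<forall>js js'. mset js = mset js' \<longrightarrow> a js = a js')"

definition idx :: "nat \<Rightarrow> nat \<Rightarrow> nat list set" where
  "idx n r = {js. length js = r \<and> set js \<subseteq> {..n}}"

definition form_eval :: "('k::field \<Rightarrow> 'K::field) \<Rightarrow> nat \<Rightarrow> (nat list \<Rightarrow> 'k) \<Rightarrow> nat \<Rightarrow> nat
    \<Rightarrow> (nat \<Rightarrow> nat \<Rightarrow> 'K) \<Rightarrow> nat \<Rightarrow> 'K" where
  "form_eval emb k a n d x = (\<lambda>l. \<Sum>js\<in>idx n d. emb (a js) * tprod k (map x js) l)"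

text \<open>Formal partial derivative dF/dx_i, evaluated at x.\<close>

definition partial_eval :: "('k::field \<Rightarrow> 'K::field) \<Rightarrow> nat \<Rightarrow> (nat list \<Rightarrow> 'k) \<Rightarrow> nat \<Rightarrow> nat
    \<Rightarrow> nat \<Rightarrow> (nat \<Rightarrow> nat \<Rightarrow> 'K) \<Rightarrow> nat \<Rightarrow> 'K" where
  "partial_eval emb k a n d i x = (\<lambda>l. \<Sum>js\<in>idx n d. emb (a js) *
      (\<Sum>p<d. if js ! p = i then tprod k (map x (take p js @ drop (Suc p) js)) l else 0))"

definition grad_dot :: "('k::field \<Rightarrow> 'K::field) \<Rightarrow> nat \<Rightarrow> (nat list \<Rightarrow> 'k) \<Rightarrow> nat \<Rightarrow> nat
    \<Rightarrow> (nat \<Rightarrow> nat \<Rightarrow> 'K) \<Rightarrow> (nat \<Rightarrow> nat \<Rightarrow> 'K) \<Rightarrow> nat \<Rightarrow> 'K" where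
  "grad_dot emb k a n d x1 x0 = (\<lambda>l. \<Sum>i\<le>n. tmul k (x1 i) (partial_eval emb k a n d i x0) l)"

text \<open>Psi_j(y^(1),...,y^(d-1)); the vector y^(p+1) is ys p.\<close>

definition Psi :: "('k::field \<Rightarrow> 'K::field) \<Rightarrow> nat \<Rightarrow> (nat list \<Rightarrow> 'k) \<Rightarrow> nat \<Rightarrow> nat \<Rightarrow> nat
    \<Rightarrow> (nat \<Rightarrow> nat \<Rightarrow> nat \<Rightarrow> 'K) \<Rightarrow> nat \<Rightarrow> 'K" where
  "Psi emb k a n d j ys = (\<lambda>l. \<Sum>js\<in>idx n (d - 1).
      emb (of_nat (fact d) * a (js @ [j])) * tprod k (map (\<lambda>p. ys p (js ! p)) [0..<d - 1]) l)"

definition lin_fun :: "('k::field \<Rightarrow> 'K::field) \<Rightarrow> 'K set \<Rightarrow> ('K \<Rightarrow> 'k) \<Rightarrow> bool" where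
  "lin_fun emb V f \<longleftrightarrow> (\<forall>x\<in>V. \<forall>y\<in>V. f (x + y) = f x + f y) \<and>
     (\<forall>c. \<forall>x\<in>V. f (emb c * x) = c * f x) \<and> (\<forall>x. x \<notin> V \<longrightarrow> f x = 0)"

text \<open>Elements of V^dual \<otimes> F_q[t]/t^(m+1): alpha = sum_i alpha_i t^i.\<close>

definition tduals :: "('k::field \<Rightarrow> 'K::field) \<Rightarrow> 'K set \<Rightarrow> nat \<Rightarrow> (nat \<Rightarrow> 'K \<Rightarrow> 'k) set" where
  "tduals emb V m = {\<alpha>. (\<forall>i\<le>m. lin_fun emb V (\<alpha> i)) \<and> (\<forall>i>m. \<alpha> i = (\<lambda>_. 0))}"

definition pairing :: "(nat \<Rightarrow> 'K \<Rightarrow> 'k::field) \<Rightarrow> (nat \<Rightarrow> 'K) \<Rightarrow> nat \<Rightarrow> 'k" where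
  "pairing \<alpha> y = (\<lambda>l. \<Sum>i\<le>l. \<alpha> i (y (l - i)))"

definition psi_m :: "('k \<Rightarrow> complex) \<Rightarrow> nat \<Rightarrow> (nat \<Rightarrow> 'k) \<Rightarrow> complex" where
  "psi_m \<psi> m c = (\<Prod>i\<le>m. \<psi> (c i))"

definition nontriv_add_char :: "('k::field \<Rightarrow> complex) \<Rightarrow> bool" where
  "nontriv_add_char \<psi> \<longleftrightarrow> (\<forall>x y. \<psi> (x + y) = \<psi> x * \<psi> y) \<and> (\<exists>x. \<psi> x \<noteq> 1)"

definition S_sum :: "('k::field \<Rightarrow> 'K::field) \<Rightarrow> ('k \<Rightarrow> complex) \<Rightarrow> (('K \<Rightarrow> int) \<Rightarrow> int)
    \<Rightarrow> (nat list \<Rightarrow> 'k) \<Rightarrow> nat \<Rightarrow> nat \<Rightarrow> nat \<Rightarrow> (nat \<Rightarrow> 'K \<Rightarrow> 'k) \<Rightarrow> (nat \<Rightarrow> 'K \<Rightarrow> 'k) \<Rightarrow> complex" where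
  "S_sum emb \<psi> D a n d m \<alpha> \<beta> =
     (\<Sum>x0\<in>{x \<in> tvecs (RR_space emb D) m (Suc n). glob_gen emb D n x}.
       \<Sum>x1\<in>tvecs (RR_space emb D) m (Suc n).
         psi_m \<psi> m (\<lambda>l. pairing \<alpha> (form_eval emb m a n d x0) l
                        + pairing \<beta> (grad_dot emb m a n d x1 x0) l))"

definition N_count :: "('k::field \<Rightarrow> 'K::field) \<Rightarrow> (('K \<Rightarrow> int) \<Rightarrow> int)
    \<Rightarrow> (nat list \<Rightarrow> 'k) \<Rightarrow> nat \<Rightarrow> nat \<Rightarrow> nat \<Rightarrow> (nat \<Rightarrow> 'K \<Rightarrow> 'k) \<Rightarrow> nat" where
  "N_count emb D a n d k \<gamma> = card {ys :: nat \<Rightarrow> nat \<Rightarrow> nat \<Rightarrow> 'K.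
      (\<forall>p<d - 1. ys p \<in> tvecs (RR_space emb D) k (Suc n)) \<and>
      (\<forall>p\<ge>d - 1. ys p = (\<lambda>_ _. 0)) \<and>
      (\<forall>i\<le>n. \<forall>y\<in>trunc (RR_space emb D) k. \<forall>l\<le>k.
          pairing \<gamma> (tmul k (Psi emb k a n d i ys) y) l = 0)}"

end

theory Submission
  imports Defs "HOL-Computational_Algebra.Formal_Power_Series" "HOL-Library.Function_Algebras"
begin

definition ml :: "nat \<Rightarrow> ((nat \<Rightarrow> 'a::ab_group_add) \<Rightarrow> 'b::ab_group_add) \<Rightarrow> bool" where
  "ml r M \<longleftrightarrow> (\<forall>z z'. (\<forall>q<r. z q = z' q) \<longrightarrow> M z = M z') \<and>
     (\<forall>z p u w. p < r \<longrightarrow> M (z(p := u + w)) = M (z(p := u)) + M (z(p := w)))"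

lemma ml_dep: "ml r M \<Longrightarrow> (\<And>q. q < r \<Longrightarrow> z q = z' q) \<Longrightarrow> M z = M z'"
  unfolding ml_def by blast

lemma ml_add: "ml r M \<Longrightarrow> p < r \<Longrightarrow> M (z(p := u + w)) = M (z(p := u)) + M (z(p := w))"
  unfolding ml_def by blast

lemma ml_zero: assumes "ml r M" "p < r" "z p = 0" shows "M z = 0"
proof -
  have "M (z(p := 0 + 0)) = M (z(p := 0)) + M (z(p := 0))" using ml_add[OF assms(1,2)] .
  moreover have "z(p := 0) = z" using assms(3) by auto
  ultimately show ?thesis by simp
qed

lemma ml_diff: assumes "ml r M" "p < r"
  shows "M (z(p := u - w)) = M (z(p := u)) - M (z(p := w))"
proof -
  have "M (z(p := (u - w) + w)) = M (z(p := u - w)) + M (z(p := w))" using ml_add[OF assms] .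
  then show ?thesis by (simp add: algebra_simps)
qed

lemma telescope:
  assumes "ml r M"
  shows "M a - M b = (\<Sum>p<r. M (\<lambda>q. if q < p then a q else if q = p then a q - b q else b q))"
proof -
  define c where "c p = (\<lambda>q. if q < p then a q else b q)" for p
  have step: "M (c (Suc p)) - M (c p) = M (\<lambda>q. if q < p then a q else if q = p then a q - b q else b q)"
    if "p < r" for p
  proof -
    have "M ((c p)(p := a p - b p)) = M ((c p)(p := a p)) - M ((c p)(p := b p))"
      using ml_diff[OF assms that] .
    moreover have "(c p)(p := a p) = c (Suc p)" by (auto simp: c_def)
    moreover have "(c p)(p := b p) = c p" by (auto simp: c_def)
    moreover have "(c p)(p := a p - b p) = (\<lambda>q. if q < p then a q else if q = p then a q - b q else b q)"
      by (auto simp: c_def)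
    ultimately show ?thesis by simp
  qed
  have "(\<Sum>p<r. M (c (Suc p)) - M (c p)) = M (c r) - M (c 0)"
    by (rule sum_lessThan_telescope)
  moreover have "M (c r) = M a" by (rule ml_dep[OF assms]) (auto simp: c_def)
  moreover have "M (c 0) = M b" by (simp add: c_def)
  ultimately show ?thesis using step by simp
qed

fun pdeg :: "nat \<Rightarrow> ('a::ab_group_add \<Rightarrow> 'b::ab_group_add) \<Rightarrow> bool" where
  "pdeg 0 f = (\<forall>x y. f x = f y)"
| "pdeg (Suc j) f = (\<forall>h. pdeg j (\<lambda>x. f (x + h) - f x))"

fun Dl :: "'a::ab_group_add list \<Rightarrow> ('a \<Rightarrow> 'b::ab_group_add) \<Rightarrow> 'a \<Rightarrow> 'b" where
  "Dl [] f = f"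
| "Dl (k # ks) f = Dl ks (\<lambda>x. f (x + k) - f x)"

lemma pdeg_shift: "pdeg j f \<Longrightarrow> pdeg j (\<lambda>x. f (x + c))"
proof (induction j arbitrary: f)
  case 0 then show ?case by simp
next
  case (Suc j)
  show ?case
  proof (simp, intro allI)
    fix h
    have "pdeg j (\<lambda>x. f (x + h) - f x)" using Suc.prems by simp
    from Suc.IH[OF this] have "pdeg j (\<lambda>x. f (x + c + h) - f (x + c))" by (simp add: ac_simps)
    then show "pdeg j (\<lambda>x. f (x + h + c) - f (x + c))" by (simp add: ac_simps)
  qed
qed

lemma pdeg_add: "pdeg j f \<Longrightarrow> pdeg j g \<Longrightarrow> pdeg j (\<lambda>x. f x + g x)"
proof (induction j arbitrary: f g)
  case 0 then show ?case unfolding pdeg.simps by metis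
next
  case (Suc j)
  show ?case
  proof (simp, intro allI)
    fix h
    have "pdeg j (\<lambda>x. (f (x + h) - f x) + (g (x + h) - g x))"
      using Suc.prems Suc.IH by simp
    then show "pdeg j (\<lambda>x. f (x + h) + g (x + h) - (f x + g x))" by (simp add: algebra_simps)
  qed
qed

lemma pdeg_hom:
  assumes "\<And>u v. A (u + v) = A u + A v"
  shows "pdeg j f \<Longrightarrow> pdeg j (\<lambda>x. A (f x))"
proof (induction j arbitrary: f)
  case 0 then show ?case unfolding pdeg.simps by metis
next
  case (Suc j)
  have Adiff: "A (u - v) = A u - A v" for u v
    using assms[of "u - v" v] by (simp add: algebra_simps)
  show ?case
  proof (simp, intro allI)
    fix h
    have "pdeg j (\<lambda>x. A (f (x + h) - f x))" using Suc by simp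
    then show "pdeg j (\<lambda>x. A (f (x + h)) - A (f x))" by (simp add: Adiff)
  qed
qed

lemma pdeg_uminus: "pdeg j f \<Longrightarrow> pdeg j (\<lambda>x. - f x)"
  by (rule pdeg_hom) simp_all

lemma pdeg_diff: "pdeg j f \<Longrightarrow> pdeg j g \<Longrightarrow> pdeg j (\<lambda>x. f x - g x)"
  using pdeg_add[of j f "\<lambda>x. - g x"] pdeg_uminus[of j g] by simp

lemma pdeg_const: "pdeg j (\<lambda>_. c)"
proof (induction j arbitrary: c)
  case 0 then show ?case by simp
next
  case (Suc j) then show ?case by simp
qed

lemma pdeg_sum: "finite I \<Longrightarrow> (\<And>i. i \<in> I \<Longrightarrow> pdeg j (f i)) \<Longrightarrow> pdeg j (\<lambda>x. \<Sum>i\<in>I. f i x)"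
proof (induction I rule: finite_induct)
  case empty then show ?case by (simp add: pdeg_const)
next
  case (insert i I) then show ?case by (simp add: pdeg_add)
qed

lemma pdeg_Suc: "pdeg j f \<Longrightarrow> pdeg (Suc j) f"
proof (induction j arbitrary: f)
  case 0 then show ?case unfolding pdeg.simps by (metis diff_self)
next
  case (Suc j)
  have "\<forall>h. pdeg j (\<lambda>x. f (x + h) - f x)" using Suc.prems by simp
  then have "\<forall>h. pdeg (Suc j) (\<lambda>x. f (x + h) - f x)" using Suc.IH by blast
  then show ?case by (subst pdeg.simps(2)) blast
qed

lemma pdeg_mono: assumes "j \<le> j'" "pdeg j f" shows "pdeg j' f"
  using assms(1)
proof (induction j' rule: dec_induct)
  case base show ?case using assms(2) .
next
  case (step i) then show ?case using pdeg_Suc by blast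
qed

lemma pdeg_id: "pdeg 1 (\<lambda>x. x)"
  by (simp add: pdeg_const)

lemma pdeg_id_shift: "pdeg 1 (\<lambda>x. x + c)"
  using pdeg_shift[OF pdeg_id] .

lemma Dl_const: "Dl ks (\<lambda>_. c) x = (if ks = [] then c else 0)"
proof (induction ks arbitrary: c)
  case Nil then show ?case by simp
next
  case (Cons k ks) then show ?case by (cases ks) simp_all
qed

lemma Dl_zero: "pdeg j f \<Longrightarrow> j < length ks \<Longrightarrow> Dl ks f x = 0"
proof (induction ks arbitrary: j f)
  case Nil then show ?case by simp
next
  case (Cons k ks)
  show ?case
  proof (cases j)
    case 0
    then have "\<forall>x y. f x = f y" using Cons.prems(1) by (metis pdeg.simps(1))
    then have "f (x + k) - f x = 0" for x by (metis diff_self)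
    then have "(\<lambda>x. f (x + k) - f x) = (\<lambda>_. 0)" by (simp add: fun_eq_iff)
    then show ?thesis by (simp add: Dl_const)
  next
    case (Suc j')
    then have "pdeg j' (\<lambda>x. f (x + k) - f x)" using Cons.prems by simp
    moreover have "j' < length ks" using Cons.prems Suc by simp
    ultimately show ?thesis using Cons.IH by simp
  qed
qed

lemma Dl_const_len: "pdeg j f \<Longrightarrow> length ks = j \<Longrightarrow> Dl ks f x = Dl ks f y"
proof (induction ks arbitrary: j f)
  case Nil
  then have "j = 0" by simp
  then show ?case using Nil.prems(1) by (metis Dl.simps(1) pdeg.simps(1))
next
  case (Cons k ks)
  then obtain j' where j: "j = Suc j'" by (cases j) auto
  then have "pdeg j' (\<lambda>x. f (x + k) - f x)" "length ks = j'" using Cons.prems by auto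
  then show ?case using Cons.IH by simp
qed

lemma Dl_hom:
  assumes "\<And>u v. A (u + v) = A u + A v"
  shows "Dl ks (\<lambda>x. A (f x)) x = A (Dl ks f x)"
proof (induction ks arbitrary: f)
  case Nil then show ?case by simp
next
  case (Cons k ks)
  have Adiff: "A (u - v) = A u - A v" for u v
    using assms[of "u - v" v] by (simp add: algebra_simps)
  have "Dl (k # ks) (\<lambda>x. A (f x)) x = Dl ks (\<lambda>x. A (f (x + k) - f x)) x" by (simp add: Adiff)
  also have "\<dots> = A (Dl ks (\<lambda>x. f (x + k) - f x) x)" by (rule Cons.IH)
  finally show ?case by simp
qed

lemma Dl_add: "Dl ks (\<lambda>x. f x + g x) x = Dl ks f x + Dl ks g x"
proof (induction ks arbitrary: f g)
  case Nil then show ?case by simp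
next
  case (Cons k ks)
  have "Dl (k # ks) (\<lambda>x. f x + g x) x = Dl ks (\<lambda>x. (f (x + k) - f x) + (g (x + k) - g x)) x"
    by (simp add: algebra_simps)
  also have "\<dots> = Dl ks (\<lambda>x. f (x + k) - f x) x + Dl ks (\<lambda>x. g (x + k) - g x) x" by (rule Cons.IH)
  finally show ?case by simp
qed

lemma Dl_sum: "finite I \<Longrightarrow> Dl ks (\<lambda>x. \<Sum>i\<in>I. f i x) x = (\<Sum>i\<in>I. Dl ks (f i) x)"
proof (induction I rule: finite_induct)
  case empty then show ?case by (simp add: Dl_const)
next
  case (insert i I) then show ?case by (simp add: Dl_add)
qed

lemma Dl_cmult: "Dl ks (\<lambda>x. (c::'b::ring) * f x) x = c * Dl ks f x"
  by (rule Dl_hom) (simp add: distrib_left)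

lemma Dl_snoc: "Dl (ks @ [k]) f x = Dl ks f (x + k) - Dl ks f x"
  by (induction ks arbitrary: f) simp_all

lemma sum_fun_upd_lessThan:
  fixes e :: "nat \<Rightarrow> nat"
  assumes "p < r" shows "(\<Sum>q<r. (e(p := v)) q) = (\<Sum>q<r. e q) - e p + (v::nat)"
proof -
  have "(\<Sum>q<r. (e(p := v)) q) = (e(p := v)) p + (\<Sum>q\<in>{..<r} - {p}. (e(p := v)) q)"
    using assms by (intro sum.remove) auto
  also have "(\<Sum>q\<in>{..<r} - {p}. (e(p := v)) q) = (\<Sum>q\<in>{..<r} - {p}. e q)" by (rule sum.cong) auto
  also have "(\<Sum>q<r. e q) = e p + (\<Sum>q\<in>{..<r} - {p}. e q)"
    using assms by (intro sum.remove) auto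
  ultimately show ?thesis by simp
qed

lemma ml_pdeg:
  fixes M :: "(nat \<Rightarrow> 'a::ab_group_add) \<Rightarrow> 'b::ab_group_add" and f :: "nat \<Rightarrow> 'c::ab_group_add \<Rightarrow> 'a"
  assumes "ml r M" "\<And>q. q < r \<Longrightarrow> pdeg (e q) (f q)"
  shows "pdeg (\<Sum>q<r. e q) (\<lambda>x. M (\<lambda>q. f q x))"
proof -
  have "\<forall>e (f::nat \<Rightarrow> 'c \<Rightarrow> 'a). (\<Sum>q<r. e q) = s \<longrightarrow> (\<forall>q<r. pdeg (e q) (f q)) \<longrightarrow> pdeg s (\<lambda>x. M (\<lambda>q. f q x))" for s
  proof (induction s)
    case 0
    show ?case
    proof (intro allI impI)
      fix e and f :: "nat \<Rightarrow> 'c \<Rightarrow> 'a" assume s0: "(\<Sum>q<r. e q) = (0::nat)" and pd: "\<forall>q<r. pdeg (e q) (f q)"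
      have "\<forall>q<r. e q = 0" using s0 by simp
      then have c: "\<And>q x y. q < r \<Longrightarrow> f q x = f q y" using pd by (metis pdeg.simps(1))
      show "pdeg 0 (\<lambda>x. M (\<lambda>q. f q x))"
        unfolding pdeg.simps
      proof (intro allI)
        fix x y show "M (\<lambda>q. f q x) = M (\<lambda>q. f q y)" by (rule ml_dep[OF assms(1)]) (rule c)
      qed
    qed
  next
    case (Suc s)
    show ?case
    proof (intro allI impI)
      fix e and f :: "nat \<Rightarrow> 'c \<Rightarrow> 'a" assume ss: "(\<Sum>q<r. e q) = Suc s" and pd: "\<forall>q<r. pdeg (e q) (f q)"
      show "pdeg (Suc s) (\<lambda>x. M (\<lambda>q. f q x))"
      proof (simp only: pdeg.simps, intro allI)
        fix h
        have eq: "(\<lambda>x. M (\<lambda>q. f q (x + h)) - M (\<lambda>q. f q x)) =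
          (\<lambda>x. \<Sum>p<r. M (\<lambda>q. if q < p then f q (x + h) else if q = p then f q (x + h) - f q x else f q x))"
          using telescope[OF assms(1)] by (simp add: fun_eq_iff)
        have "pdeg s (\<lambda>x. M (\<lambda>q. if q < p then f q (x + h) else if q = p then f q (x + h) - f q x else f q x))"
          if p: "p < r" for p
        proof (cases "e p")
          case 0
          then have "\<forall>x y. f p x = f p y" using pd p by (metis pdeg.simps(1))
          then have "f p (x + h) - f p x = 0" for x by (metis diff_self)
          then have "(\<lambda>x. M (\<lambda>q. if q < p then f q (x + h) else if q = p then f q (x + h) - f q x else f q x)) = (\<lambda>_. 0)"
            by (intro ext ml_zero[OF assms(1) p]) simp
          then show ?thesis by (simp add: pdeg_const)
        next
          case (Suc e')
          define e2 where "e2 = e(p := e')"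
          define f2 where "f2 = (\<lambda>q. if q < p then (\<lambda>x. f q (x + h)) else if q = p then (\<lambda>x. f p (x + h) - f p x) else f q)"
          have "e p \<le> (\<Sum>q<r. e q)" using p by (intro member_le_sum) auto
          then have "(\<Sum>q<r. e2 q) = s" unfolding e2_def using sum_fun_upd_lessThan[OF p, of e e'] ss Suc by simp
          moreover have "\<forall>q<r. pdeg (e2 q) (f2 q)"
          proof (intro allI impI)
            fix q assume "q < r"
            then show "pdeg (e2 q) (f2 q)"
              using pd Suc by (auto simp: e2_def f2_def intro: pdeg_shift)
          qed
          ultimately have "pdeg s (\<lambda>x. M (\<lambda>q. f2 q x))" using Suc.IH by blast
          moreover have "(\<lambda>x. M (\<lambda>q. f2 q x)) = (\<lambda>x. M (\<lambda>q. if q < p then f q (x + h) else if q = p then f q (x + h) - f q x else f q x))"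
            by (intro ext arg_cong[where f = M]) (auto simp: f2_def)
          ultimately show ?thesis by simp
        qed
        then show "pdeg s (\<lambda>x. M (\<lambda>q. f q (x + h)) - M (\<lambda>q. f q x))"
          unfolding eq by (intro pdeg_sum) auto
      qed
    qed
  qed
  then show ?thesis using assms(2) by blast
qed


definition symm :: "nat \<Rightarrow> ((nat \<Rightarrow> 'a) \<Rightarrow> 'b) \<Rightarrow> bool" where
  "symm r M \<longleftrightarrow> (\<forall>\<sigma> z. bij_betw \<sigma> {..<r} {..<r} \<longrightarrow> M (z \<circ> \<sigma>) = M z)"

definition ins :: "'a \<Rightarrow> nat \<Rightarrow> (nat \<Rightarrow> 'a) \<Rightarrow> nat \<Rightarrow> 'a" where
  "ins y p w = (\<lambda>q. if q < p then w q else if q = p then y else w (q - 1))"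

lemma sym_ins:
  assumes "symm r M" "p < r"
  shows "M (ins y p w) = M (ins y 0 w)"
proof -
  define c where "c q = (if q < p then q + 1 else if q = p then 0 else q)" for q
  define ci where "ci q = (if q = 0 then p else if q \<le> p then q - 1 else q)" for q
  have "bij_betw c {..<r} {..<r}"
    by (rule bij_betw_byWitness[where f' = ci]) (use assms(2) in \<open>auto simp: c_def ci_def\<close>)
  then have "M (ins y 0 w \<circ> c) = M (ins y 0 w)" using assms(1) unfolding symm_def by blast
  moreover have "ins y 0 w \<circ> c = ins y p w" by (auto simp: c_def ins_def fun_eq_iff)
  ultimately show ?thesis by simp
qed

lemma ml_ins:
  assumes "ml r M"
  shows "ml (r - 1) (\<lambda>w. M (ins y 0 w))"
  unfolding ml_def
proof (intro conjI allI impI)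
  fix z z' :: "nat \<Rightarrow> 'a" assume h: "\<forall>q<r - 1. z q = z' q"
  show "M (ins y 0 z) = M (ins y 0 z')"
    by (rule ml_dep[OF assms]) (use h in \<open>auto simp: ins_def\<close>)
next
  fix z :: "nat \<Rightarrow> 'a" and p u w assume p: "p < r - 1"
  have e: "ins y 0 (z(p := v)) = (ins y 0 z)(Suc p := v)" for v
    by (auto simp: ins_def fun_eq_iff)
  show "M (ins y 0 (z(p := u + w))) = M (ins y 0 (z(p := u))) + M (ins y 0 (z(p := w)))"
    unfolding e using ml_add[OF assms, of "Suc p"] p by simp
qed

lemma symm_ins:
  assumes "symm r M" "ml r M"
  shows "symm (r - 1) (\<lambda>w. M (ins y 0 w))"
  unfolding symm_def
proof (intro allI impI)
  fix \<sigma> :: "nat \<Rightarrow> nat" and z :: "nat \<Rightarrow> 'a"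
  assume b: "bij_betw \<sigma> {..<r - 1} {..<r - 1}"
  define \<tau> where "\<tau> = inv_into {..<r - 1} \<sigma>"
  have bt: "bij_betw \<tau> {..<r - 1} {..<r - 1}" unfolding \<tau>_def by (rule bij_betw_inv_into[OF b])
  define s where "s q = (if q = 0 then 0 else Suc (\<sigma> (q - 1)))" for q
  define si where "si q = (if q = 0 then 0 else Suc (\<tau> (q - 1)))" for q
  have st: "\<tau> (\<sigma> q) = q" if "q < r - 1" for q
    unfolding \<tau>_def using b that by (simp add: bij_betw_def inv_into_f_f)
  have ts: "\<sigma> (\<tau> q) = q" if "q < r - 1" for q
    unfolding \<tau>_def using b that by (simp add: bij_betw_def f_inv_into_f)
  have sm: "\<sigma> q < r - 1" if "q < r - 1" for q using b that by (auto simp: bij_betw_def)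
  have tm: "\<tau> q < r - 1" if "q < r - 1" for q using bt that by (auto simp: bij_betw_def)
  have "bij_betw s {..<r} {..<r}"
  proof (rule bij_betw_byWitness[where f' = si])
    show "\<forall>a\<in>{..<r}. si (s a) = a" using st by (auto simp: s_def si_def)
    show "\<forall>a\<in>{..<r}. s (si a) = a" using ts by (auto simp: s_def si_def)
    show "s ` {..<r} \<subseteq> {..<r}" using sm by (auto simp: s_def) (metis One_nat_def Suc_diff_Suc Suc_less_eq diff_zero gr0I less_imp_diff_less not_less_zero)
    show "si ` {..<r} \<subseteq> {..<r}" using tm by (auto simp: si_def) (metis One_nat_def Suc_diff_Suc Suc_less_eq diff_zero gr0I less_imp_diff_less not_less_zero)
  qed
  then have "M (ins y 0 z \<circ> s) = M (ins y 0 z)" using assms(1) unfolding symm_def by blast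
  moreover have "ins y 0 z \<circ> s = ins y 0 (z \<circ> \<sigma>)" by (auto simp: s_def ins_def fun_eq_iff)
  ultimately show "M (ins y 0 (z \<circ> \<sigma>)) = M (ins y 0 z)" by simp
qed

lemma ins_nth: "ins h 0 (\<lambda>q. hs ! q) = (\<lambda>q. (h # hs) ! q)"
  by (auto simp: ins_def fun_eq_iff nth_Cons')

theorem Dl_top:
  fixes M :: "(nat \<Rightarrow> 'a::ab_group_add) \<Rightarrow> 'b::comm_ring_1"
  assumes "ml r M" "symm r M" "length hs = r"
  shows "Dl hs (\<lambda>x. M (\<lambda>_. x)) x = of_nat (fact r) * M (\<lambda>q. hs ! q)"
  using assms
proof (induction r arbitrary: M hs x)
  case 0
  then have "hs = []" by simp
  then show ?case using ml_dep[OF "0.prems"(1)] by simp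
next
  case (Suc r)
  then obtain h hs' where hs: "hs = h # hs'" and len: "length hs' = r" by (cases hs) auto
  define N where "N w = M (ins h 0 w)" for w
  have mlN: "ml r N" unfolding N_def using ml_ins[OF Suc.prems(1)] by simp
  have syN: "symm r N" unfolding N_def using symm_ins[OF Suc.prems(2,1)] by simp
  define g where "g p x = (\<lambda>q::nat. if q < p then x + h else x)" for p x
  have tel: "M (\<lambda>_. x + h) - M (\<lambda>_. x) = (\<Sum>p<Suc r. N (g p x))" for x
  proof -
    have "M (\<lambda>_. x + h) - M (\<lambda>_. x) = (\<Sum>p<Suc r. M (\<lambda>q. if q < p then x + h else if q = p then x + h - x else x))"
      by (rule telescope[OF Suc.prems(1)])
    also have "\<dots> = (\<Sum>p<Suc r. M (ins h p (g p x)))"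
      by (intro sum.cong refl arg_cong[where f = M]) (auto simp: ins_def g_def fun_eq_iff)
    also have "\<dots> = (\<Sum>p<Suc r. N (g p x))"
      unfolding N_def by (intro sum.cong refl sym_ins[OF Suc.prems(2)]) auto
    finally show ?thesis .
  qed
  define R where "R p x = N (g p x) - N (\<lambda>_. x)" for p x
  have Rzero: "Dl hs' (R p) x = 0" for p x
  proof -
    have "R p x = (\<Sum>q<r. N (\<lambda>q'. if q' < q then g p x q' else if q' = q then g p x q' - x else x))" for x
      unfolding R_def by (rule telescope[OF mlN])
    then have "R p = (\<lambda>x. \<Sum>q<r. N (\<lambda>q'. if q' < q then g p x q' else if q' = q then g p x q' - x else x))"
      by (simp add: fun_eq_iff)
    moreover have "Dl hs' (\<lambda>x. N (\<lambda>q'. if q' < q then g p x q' else if q' = q then g p x q' - x else x)) x = 0"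
      if q: "q < r" for q
    proof -
      define e where "e q' = (if q' = q then 0 else 1::nat)" for q'
      define f where "f q' = (if q' < q then (\<lambda>x. g p x q') else if q' = q then (\<lambda>_. if q < p then h else 0) else (\<lambda>x. x))" for q'
      have "pdeg (\<Sum>q'<r. e q') (\<lambda>x. N (\<lambda>q'. f q' x))"
      proof (rule ml_pdeg[OF mlN])
        fix q' assume "q' < r"
        show "pdeg (e q') (f q')"
          by (auto simp: e_def f_def g_def pdeg_const pdeg_id pdeg_id_shift)
      qed
      moreover have "(\<Sum>q'<r. e q') = r - 1"
      proof -
        have "(\<Sum>q'<r. e q') = (\<Sum>q'\<in>{..<r} - {q}. 1)"
          using q by (subst sum.remove[of _ q]) (auto simp: e_def intro: sum.cong)
        then show ?thesis using q by simp
      qed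
      moreover have "(\<lambda>x. N (\<lambda>q'. f q' x)) = (\<lambda>x. N (\<lambda>q'. if q' < q then g p x q' else if q' = q then g p x q' - x else x))"
        by (intro ext arg_cong[where f = N]) (auto simp: f_def g_def fun_eq_iff)
      ultimately have "pdeg (r - 1) (\<lambda>x. N (\<lambda>q'. if q' < q then g p x q' else if q' = q then g p x q' - x else x))"
        by simp
      then show ?thesis by (rule Dl_zero) (use q len in simp)
    qed
    ultimately show ?thesis by (simp add: Dl_sum)
  qed
  have "Dl hs (\<lambda>x. M (\<lambda>_. x)) x = Dl hs' (\<lambda>x. M (\<lambda>_. x + h) - M (\<lambda>_. x)) x"
    by (simp add: hs)
  also have "\<dots> = Dl hs' (\<lambda>x. \<Sum>p<Suc r. N (\<lambda>_. x) + R p x) x"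
    unfolding tel R_def by simp
  also have "\<dots> = (\<Sum>p<Suc r. Dl hs' (\<lambda>x. N (\<lambda>_. x)) x + Dl hs' (R p) x)"
    by (simp add: Dl_sum Dl_add)
  also have "\<dots> = (\<Sum>p<Suc r. of_nat (fact r) * N (\<lambda>q. hs' ! q))"
    using Suc.IH[OF mlN syN len] Rzero by simp
  also have "\<dots> = of_nat (fact (Suc r)) * M (\<lambda>q. hs ! q)"
    by (simp add: N_def ins_nth hs algebra_simps)
  finally show ?case .
qed

theorem Dl_lin:
  fixes M :: "(nat \<Rightarrow> 'a::ab_group_add) \<Rightarrow> 'b::comm_ring_1"
  assumes "ml r M" "symm r M" "length ks + 1 = r"
  shows "Dl ks (\<lambda>x. M (\<lambda>_. x)) x = Dl ks (\<lambda>x. M (\<lambda>_. x)) 0 + of_nat (fact r) * M (\<lambda>q. (ks @ [x]) ! q)"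
proof -
  have "Dl (ks @ [x]) (\<lambda>x. M (\<lambda>_. x)) 0 = of_nat (fact r) * M (\<lambda>q. (ks @ [x]) ! q)"
    by (rule Dl_top[OF assms(1,2)]) (use assms(3) in simp)
  then have "Dl ks (\<lambda>x. M (\<lambda>_. x)) x - Dl ks (\<lambda>x. M (\<lambda>_. x)) 0 = of_nat (fact r) * M (\<lambda>q. (ks @ [x]) ! q)"
    by (simp add: Dl_snoc)
  then show ?thesis by (metis add.commute diff_add_cancel)
qed

lemma eps_expand:
  fixes M :: "(nat \<Rightarrow> 'a::ab_group_add) \<Rightarrow> 'b::comm_ring_1"
  assumes "ml r M"
    and hom: "\<And>z p w. p < r \<Longrightarrow> M (z(p := E w)) = e * M (z(p := w))"
  shows "\<exists>R. M (\<lambda>_. a + E b) = M (\<lambda>_. a) + e * (\<Sum>p<r. M (\<lambda>q. if q = p then b else a)) + e * e * R"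
proof -
  define Z where "Z p = (\<lambda>q::nat. if q < p then a + E b else if q = p then b else a)" for p
  define B where "B p = (\<lambda>q::nat. if q = p then b else a)" for p
  have t1: "M (\<lambda>_. a + E b) - M (\<lambda>_. a) = (\<Sum>p<r. e * M (Z p))"
  proof -
    have "M (\<lambda>_. a + E b) - M (\<lambda>_. a) = (\<Sum>p<r. M (\<lambda>q. if q < p then a + E b else if q = p then a + E b - a else a))"
      by (rule telescope[OF assms(1)])
    also have "\<dots> = (\<Sum>p<r. M ((Z p)(p := E b)))"
      by (intro sum.cong refl arg_cong[where f = M]) (auto simp: Z_def fun_eq_iff)
    also have "\<dots> = (\<Sum>p<r. e * M ((Z p)(p := b)))"
      by (intro sum.cong refl hom) auto
    also have "\<dots> = (\<Sum>p<r. e * M (Z p))"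
      by (intro sum.cong refl) (auto simp: Z_def fun_upd_idem)
    finally show ?thesis .
  qed
  define W where "W p q' = (\<lambda>q::nat. if q < q' then Z p q else if q = q' then Z p q - B p q else B p q)" for p q'
  have t2: "M (Z p) - M (B p) = e * (\<Sum>q'<r. if q' < p then M ((W p q')(q' := b)) else 0)" if p: "p < r" for p
  proof -
    have "M (Z p) - M (B p) = (\<Sum>q'<r. M (W p q'))"
      unfolding W_def by (rule telescope[OF assms(1)])
    also have "\<dots> = (\<Sum>q'<r. e * (if q' < p then M ((W p q')(q' := b)) else 0))"
    proof (intro sum.cong refl)
      fix q' assume q': "q' \<in> {..<r}"
      show "M (W p q') = e * (if q' < p then M ((W p q')(q' := b)) else 0)"
      proof (cases "q' < p")
        case True
        then have "W p q' = (W p q')(q' := E b)" by (auto simp: W_def Z_def B_def fun_eq_iff)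
        then have "M (W p q') = e * M ((W p q')(q' := b))" using hom[of q' "W p q'" b] q' by simp
        then show ?thesis using True by simp
      next
        case False
        then have "W p q' q' = 0" by (auto simp: W_def Z_def B_def)
        then show ?thesis using False ml_zero[OF assms(1)] q' by simp
      qed
    qed
    finally show ?thesis by (simp add: sum_distrib_left)
  qed
  define R where "R = (\<Sum>p<r. \<Sum>q'<r. if q' < p then M ((W p q')(q' := b)) else 0)"
  have "M (\<lambda>_. a + E b) = M (\<lambda>_. a) + (\<Sum>p<r. e * (M (B p) + e * (\<Sum>q'<r. if q' < p then M ((W p q')(q' := b)) else 0)))"
    using t1 t2 by (simp add: algebra_simps)
  also have "\<dots> = M (\<lambda>_. a) + e * (\<Sum>p<r. M (B p)) + e * e * R"
    by (simp add: R_def algebra_simps sum.distrib sum_distrib_left)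
  finally show ?thesis unfolding B_def by blast
qed


definition subgrp :: "'a::ab_group_add set \<Rightarrow> bool" where
  "subgrp U \<longleftrightarrow> 0 \<in> U \<and> (\<forall>x\<in>U. \<forall>y\<in>U. x + y \<in> U) \<and> (\<forall>x\<in>U. - x \<in> U)"

lemma subgrp_add: "subgrp U \<Longrightarrow> x \<in> U \<Longrightarrow> y \<in> U \<Longrightarrow> x + y \<in> U"
  by (simp add: subgrp_def)
lemma subgrp_uminus: "subgrp U \<Longrightarrow> x \<in> U \<Longrightarrow> - x \<in> U"
  by (simp add: subgrp_def)
lemma subgrp_diff: "subgrp U \<Longrightarrow> x \<in> U \<Longrightarrow> y \<in> U \<Longrightarrow> x - y \<in> U"
  using subgrp_add[of U x "- y"] subgrp_uminus[of U y] by simp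
lemma subgrp_zero: "subgrp U \<Longrightarrow> 0 \<in> U"
  by (simp add: subgrp_def)

lemma sum_shift:
  assumes "subgrp U" "k \<in> U"
  shows "(\<Sum>u\<in>U. f (u + k)) = (\<Sum>u\<in>U. f u)"
  by (rule sum.reindex_bij_witness[where i = "\<lambda>u. u - k" and j = "\<lambda>u. u + k"])
     (use assms in \<open>auto intro: subgrp_add subgrp_diff\<close>)

definition Dc :: "'a::ab_group_add \<Rightarrow> ('a \<Rightarrow> complex) \<Rightarrow> 'a \<Rightarrow> complex" where
  "Dc k f u = f (u + k) * cnj (f u)"

fun Dcl :: "'a::ab_group_add list \<Rightarrow> ('a \<Rightarrow> complex) \<Rightarrow> 'a \<Rightarrow> complex" where
  "Dcl [] f = f"
| "Dcl (k # ks) f = Dcl ks (Dc k f)"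

definition lists_of :: "'a set \<Rightarrow> nat \<Rightarrow> 'a list set" where
  "lists_of K j = {ks. set ks \<subseteq> K \<and> length ks = j}"

lemma finite_lists_of: "finite K \<Longrightarrow> finite (lists_of K j)"
  unfolding lists_of_def by (rule finite_lists_length_eq)

lemma card_lists_of: "finite K \<Longrightarrow> card (lists_of K j) = card K ^ j"
  unfolding lists_of_def by (rule card_lists_length_eq)

lemma lists_of_0: "lists_of K 0 = {[]}"
  by (auto simp: lists_of_def)

lemma sum_lists_of_Suc:
  "(\<Sum>ks\<in>lists_of K (Suc j). g ks) = (\<Sum>k\<in>K. \<Sum>ks\<in>lists_of K j. g (k # ks))"
proof -
  have img: "lists_of K (Suc j) = (\<lambda>(k, ks). k # ks) ` (K \<times> lists_of K j)"
  proof (rule set_eqI)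
    fix xs show "xs \<in> lists_of K (Suc j) \<longleftrightarrow> xs \<in> (\<lambda>(k, ks). k # ks) ` (K \<times> lists_of K j)"
      by (cases xs) (auto simp: lists_of_def image_iff)
  qed
  have inj: "inj_on (\<lambda>(k, ks). k # ks) (K \<times> lists_of K j)" by (auto simp: inj_on_def)
  have "(\<Sum>ks\<in>lists_of K (Suc j). g ks) = (\<Sum>(k, ks)\<in>K \<times> lists_of K j. g (k # ks))"
    unfolding img by (subst sum.reindex[OF inj]) (simp add: case_prod_beta)
  also have "\<dots> = (\<Sum>k\<in>K. \<Sum>ks\<in>lists_of K j. g (k # ks))"
    by (rule sum.cartesian_product[symmetric])
  finally show ?thesis .
qed

lemma sum_sq_le:
  fixes a :: "'i \<Rightarrow> real"
  shows "(\<Sum>k\<in>K. a k)\<^sup>2 \<le> real (card K) * (\<Sum>k\<in>K. (a k)\<^sup>2)"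
proof -
  have "0 \<le> (\<Sum>i\<in>K. \<Sum>j\<in>K. (a i - a j)\<^sup>2)" by (intro sum_nonneg) auto
  also have "\<dots> = (\<Sum>i\<in>K. \<Sum>j\<in>K. (a i)\<^sup>2 + (a j)\<^sup>2 - 2 * (a i * a j))"
    by (simp add: power2_eq_square algebra_simps)
  also have "\<dots> = 2 * (real (card K) * (\<Sum>k\<in>K. (a k)\<^sup>2)) - 2 * (\<Sum>k\<in>K. a k)\<^sup>2"
    by (simp add: sum_subtractf sum.distrib sum_distrib_left sum_distrib_right power2_eq_square algebra_simps)
  finally show ?thesis by simp
qed

lemma power_mean_2:
  fixes a :: "'i \<Rightarrow> real"
  assumes "finite K" "\<And>k. k \<in> K \<Longrightarrow> a k \<ge> 0"
  shows "(\<Sum>k\<in>K. a k) ^ (2 ^ j) \<le> real (card K) ^ (2 ^ j - 1) * (\<Sum>k\<in>K. a k ^ (2 ^ j))"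
  using assms(2)
proof (induction j arbitrary: a)
  case 0 then show ?case by simp
next
  case (Suc j)
  have cs: "(\<Sum>k\<in>K. a k)\<^sup>2 \<le> real (card K) * (\<Sum>k\<in>K. (a k)\<^sup>2)"
    by (rule sum_sq_le)
  have "(\<Sum>k\<in>K. a k) ^ (2 ^ Suc j) = ((\<Sum>k\<in>K. a k)\<^sup>2) ^ (2 ^ j)"
    by (simp add: power_mult[symmetric] mult.commute)
  also have "\<dots> \<le> (real (card K) * (\<Sum>k\<in>K. (a k)\<^sup>2)) ^ (2 ^ j)"
    by (rule power_mono[OF cs]) simp
  also have "\<dots> = real (card K) ^ (2 ^ j) * (\<Sum>k\<in>K. (a k)\<^sup>2) ^ (2 ^ j)"
    by (simp add: power_mult_distrib)
  also have "\<dots> \<le> real (card K) ^ (2 ^ j) * (real (card K) ^ (2 ^ j - 1) * (\<Sum>k\<in>K. ((a k)\<^sup>2) ^ (2 ^ j)))"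
    by (rule mult_left_mono[OF Suc.IH]) auto
  also have "\<dots> = real (card K) ^ (2 ^ Suc j - 1) * (\<Sum>k\<in>K. a k ^ (2 ^ Suc j))"
  proof -
    have e: "2 ^ j + (2 ^ j - 1) = 2 ^ Suc j - (1::nat)" by (simp add: Suc_leI)
    have "real (card K) ^ (2 ^ j) * real (card K) ^ (2 ^ j - 1) = real (card K) ^ (2 ^ Suc j - 1)"
      by (simp add: power_add[symmetric] e mult_2)
    moreover have "((a k)\<^sup>2) ^ (2 ^ j) = a k ^ (2 ^ Suc j)" for k
      by (simp add: power_mult[symmetric] mult.commute)
    ultimately show ?thesis by (simp add: mult.assoc[symmetric])
  qed
  finally show ?case .
qed

lemma weyl1:
  fixes f :: "'a::ab_group_add \<Rightarrow> complex"
  assumes U: "subgrp U" "finite U" and K: "subgrp K" "K \<subseteq> U"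
  shows "cmod (\<Sum>u\<in>U. f u) ^ 2 * real (card K) \<le> real (card U) * (\<Sum>k\<in>K. cmod (\<Sum>u\<in>U. Dc k f u))"
proof -
  have fK: "finite K" using K(2) U(2) finite_subset by blast
  have cK: "card K > 0" using fK subgrp_zero[OF K(1)] card_gt_0_iff by blast
  define A where "A = (\<Sum>u\<in>U. f u)"
  define s where "s u = (\<Sum>k\<in>K. f (u + k))" for u
  have shiftA: "(\<Sum>u\<in>U. f (u + k)) = A" if "k \<in> K" for k
    unfolding A_def using sum_shift[OF U(1)] that K(2) by blast
  have "of_nat (card K) * A = (\<Sum>k\<in>K. \<Sum>u\<in>U. f (u + k))"
    using shiftA by simp
  also have "\<dots> = (\<Sum>u\<in>U. s u)" unfolding s_def by (rule sum.swap)
  finally have KA: "of_nat (card K) * A = (\<Sum>u\<in>U. s u)" .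
  have n1: "real (card K) * cmod A \<le> (\<Sum>u\<in>U. cmod (s u))"
  proof -
    have "cmod (of_nat (card K) * A) \<le> (\<Sum>u\<in>U. cmod (s u))" unfolding KA by (rule norm_sum)
    then show ?thesis by (simp add: norm_mult)
  qed
  have n2: "(\<Sum>u\<in>U. cmod (s u)) ^ 2 \<le> real (card U) * (\<Sum>u\<in>U. cmod (s u) ^ 2)"
    by (rule sum_sq_le)
  define T where "T = (\<Sum>k\<in>K. \<Sum>u\<in>U. Dc k f u)"
  have ss: "(\<Sum>u\<in>U. s u * cnj (s u)) = of_nat (card K) * T"
  proof -
    have "(\<Sum>u\<in>U. s u * cnj (s u)) = (\<Sum>u\<in>U. \<Sum>k'\<in>K. \<Sum>k\<in>K. f (u + k) * cnj (f (u + k')))"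
      unfolding s_def by (simp add: sum_distrib_left sum_distrib_right cnj_sum)
    also have "\<dots> = (\<Sum>k'\<in>K. \<Sum>u\<in>U. \<Sum>k\<in>K. f (u + k) * cnj (f (u + k')))"
      by (rule sum.swap)
    also have "\<dots> = (\<Sum>k'\<in>K. \<Sum>k\<in>K. \<Sum>u\<in>U. f (u + k) * cnj (f (u + k')))"
      by (intro sum.cong refl sum.swap)
    also have "\<dots> = (\<Sum>k'\<in>K. \<Sum>k\<in>K. \<Sum>u\<in>U. Dc (k - k') f u)"
    proof (rule sum.cong[OF refl], rule sum.cong[OF refl])
      fix k' k assume k': "k' \<in> K" and k: "k \<in> K"
      have "(\<Sum>u\<in>U. f (u + k) * cnj (f (u + k'))) = (\<Sum>u\<in>U. f (u + - k' + k) * cnj (f (u + - k' + k')))"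
        using sum_shift[OF U(1), of "- k'" "\<lambda>u. f (u + k) * cnj (f (u + k'))"] k' K(2)
          subgrp_uminus[OF U(1)] by auto
      also have "\<dots> = (\<Sum>u\<in>U. Dc (k - k') f u)"
        by (simp add: Dc_def algebra_simps)
      finally show "(\<Sum>u\<in>U. f (u + k) * cnj (f (u + k'))) = (\<Sum>u\<in>U. Dc (k - k') f u)" .
    qed
    also have "\<dots> = (\<Sum>k'\<in>K. \<Sum>k\<in>K. \<Sum>u\<in>U. Dc k f u)"
    proof (rule sum.cong[OF refl])
      fix k' assume k': "k' \<in> K"
      show "(\<Sum>k\<in>K. \<Sum>u\<in>U. Dc (k - k') f u) = (\<Sum>k\<in>K. \<Sum>u\<in>U. Dc k f u)"
        using sum_shift[OF K(1), of "- k'" "\<lambda>k. \<Sum>u\<in>U. Dc k f u"] subgrp_uminus[OF K(1) k']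
        by simp
    qed
    also have "\<dots> = of_nat (card K) * T" unfolding T_def by simp
    finally show ?thesis .
  qed
  have n3: "(\<Sum>u\<in>U. cmod (s u) ^ 2) \<le> real (card K) * (\<Sum>k\<in>K. cmod (\<Sum>u\<in>U. Dc k f u))"
  proof -
    have "complex_of_real (\<Sum>u\<in>U. cmod (s u) ^ 2) = (\<Sum>u\<in>U. s u * cnj (s u))"
      by (simp only: of_real_sum complex_norm_square)
    then have h2: "complex_of_real (\<Sum>u\<in>U. cmod (s u) ^ 2) = of_nat (card K) * T" using ss by simp
    have X0: "0 \<le> (\<Sum>u\<in>U. cmod (s u) ^ 2)" by (intro sum_nonneg) simp
    have "cmod (of_nat (card K) * T) = cmod (complex_of_real (\<Sum>u\<in>U. cmod (s u) ^ 2))"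
      by (simp only: h2)
    also have "\<dots> = (\<Sum>u\<in>U. cmod (s u) ^ 2)" by (simp only: norm_of_real abs_of_nonneg[OF X0])
    finally have "(\<Sum>u\<in>U. cmod (s u) ^ 2) = cmod (of_nat (card K) * T)" by simp
    also have "\<dots> = real (card K) * cmod T" by (simp add: norm_mult)
    also have "\<dots> \<le> real (card K) * (\<Sum>k\<in>K. cmod (\<Sum>u\<in>U. Dc k f u))"
      unfolding T_def by (intro mult_left_mono norm_sum) auto
    finally show ?thesis .
  qed
  have "(real (card K) * cmod A) ^ 2 \<le> real (card U) * (real (card K) * (\<Sum>k\<in>K. cmod (\<Sum>u\<in>U. Dc k f u)))"
  proof -
    have "(real (card K) * cmod A) ^ 2 \<le> (\<Sum>u\<in>U. cmod (s u)) ^ 2"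
      by (rule power_mono[OF n1]) simp
    also have "\<dots> \<le> real (card U) * (\<Sum>u\<in>U. cmod (s u) ^ 2)" by (rule n2)
    also have "\<dots> \<le> real (card U) * (real (card K) * (\<Sum>k\<in>K. cmod (\<Sum>u\<in>U. Dc k f u)))"
      by (rule mult_left_mono[OF n3]) simp
    finally show ?thesis .
  qed
  then have "real (card K) * (cmod A ^ 2 * real (card K)) \<le> real (card K) * (real (card U) * (\<Sum>k\<in>K. cmod (\<Sum>u\<in>U. Dc k f u)))"
    by (simp add: power2_eq_square algebra_simps)
  then show ?thesis unfolding A_def using cK by simp
qed

lemma weyl:
  fixes f :: "'a::ab_group_add \<Rightarrow> complex"
  assumes U: "subgrp U" "finite U" and K: "subgrp K" "K \<subseteq> U"
  shows "cmod (\<Sum>u\<in>U. f u) ^ (2 ^ j) * real (card K) ^ j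
    \<le> real (card U) ^ (2 ^ j - 1) * (\<Sum>ks\<in>lists_of K j. cmod (\<Sum>u\<in>U. Dcl ks f u))"
proof (induction j arbitrary: f)
  case 0 then show ?case by (simp add: lists_of_0)
next
  case (Suc j)
  have fK: "finite K" using K(2) U(2) finite_subset by blast
  have cK: "card K > 0" using fK subgrp_zero[OF K(1)] card_gt_0_iff by blast
  define N where "N = (2::nat) ^ j"
  have N1: "N \<ge> 1" unfolding N_def by simp
  define cU where "cU = real (card U)"
  define cK' where "cK' = real (card K)"
  define A where "A = cmod (\<Sum>u\<in>U. f u)"
  define B where "B k = cmod (\<Sum>u\<in>U. Dc k f u)" for k
  define C where "C k = (\<Sum>ks\<in>lists_of K j. cmod (\<Sum>u\<in>U. Dcl ks (Dc k f) u))" for k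
  have cKp: "cK' > 0" unfolding cK'_def using cK by simp
  have cU0: "cU \<ge> 0" unfolding cU_def by simp
  have w1: "A ^ 2 * cK' \<le> cU * (\<Sum>k\<in>K. B k)"
    unfolding A_def B_def cU_def cK'_def by (rule weyl1[OF U K])
  have ih: "B k ^ N * cK' ^ j \<le> cU ^ (N - 1) * C k" for k
    unfolding B_def C_def N_def cU_def cK'_def by (rule Suc.IH)
  have "(A ^ 2 * cK') ^ N \<le> (cU * (\<Sum>k\<in>K. B k)) ^ N"
    by (rule power_mono[OF w1]) (simp add: cKp less_imp_le)
  also have "\<dots> = cU ^ N * (\<Sum>k\<in>K. B k) ^ N" by (simp add: power_mult_distrib)
  also have "\<dots> \<le> cU ^ N * (cK' ^ (N - 1) * (\<Sum>k\<in>K. B k ^ N))"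
    unfolding N_def cK'_def
    by (intro mult_left_mono power_mean_2[OF fK]) (auto simp: B_def cU0)
  finally have s1: "(A ^ 2 * cK') ^ N \<le> cU ^ N * (cK' ^ (N - 1) * (\<Sum>k\<in>K. B k ^ N))" .
  have s2: "(\<Sum>k\<in>K. B k ^ N) * cK' ^ j \<le> cU ^ (N - 1) * (\<Sum>k\<in>K. C k)"
    using ih by (simp add: sum_distrib_left sum_distrib_right sum_mono)
  have eA: "(A ^ 2 * cK') ^ N = A ^ (2 * N) * cK' ^ N" by (simp add: power_mult_distrib power_mult)
  have "A ^ (2 * N) * cK' ^ N * cK' ^ j \<le> cU ^ N * (cK' ^ (N - 1) * (\<Sum>k\<in>K. B k ^ N)) * cK' ^ j"
    using mult_right_mono[OF s1, of "cK' ^ j"] cKp unfolding eA by simp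
  also have "\<dots> = cU ^ N * cK' ^ (N - 1) * ((\<Sum>k\<in>K. B k ^ N) * cK' ^ j)"
    by (simp add: algebra_simps)
  also have "\<dots> \<le> cU ^ N * cK' ^ (N - 1) * (cU ^ (N - 1) * (\<Sum>k\<in>K. C k))"
    by (rule mult_left_mono[OF s2]) (simp add: cU0 cKp less_imp_le)
  finally have s3: "A ^ (2 * N) * cK' ^ N * cK' ^ j \<le> cU ^ N * cK' ^ (N - 1) * (cU ^ (N - 1) * (\<Sum>k\<in>K. C k))" .
  have eN: "cK' ^ N = cK' ^ (N - 1) * cK'" using N1 by (metis power_minus_mult less_le_trans zero_less_one le_neq_implies_less not_one_le_zero)
  have eU: "cU ^ N * cU ^ (N - 1) = cU ^ (2 * N - 1)"
    using N1 by (simp add: power_add[symmetric] mult_2)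
  have l: "A ^ (2 * N) * cK' ^ N * cK' ^ j = cK' ^ (N - 1) * (A ^ (2 * N) * cK' ^ Suc j)"
    unfolding eN by (simp only: power_Suc mult_ac)
  have r: "cU ^ N * cK' ^ (N - 1) * (cU ^ (N - 1) * (\<Sum>k\<in>K. C k)) = cK' ^ (N - 1) * (cU ^ (2 * N - 1) * (\<Sum>k\<in>K. C k))"
    unfolding eU[symmetric] by (simp only: mult_ac)
  have "cK' ^ (N - 1) * (A ^ (2 * N) * cK' ^ Suc j) \<le> cK' ^ (N - 1) * (cU ^ (2 * N - 1) * (\<Sum>k\<in>K. C k))"
    using s3 unfolding l r .
  then have "A ^ (2 * N) * cK' ^ Suc j \<le> cU ^ (2 * N - 1) * (\<Sum>k\<in>K. C k)"
    using cKp by (simp add: mult_le_cancel_left_pos)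
  moreover have "(\<Sum>k\<in>K. C k) = (\<Sum>ks\<in>lists_of K (Suc j). cmod (\<Sum>u\<in>U. Dcl ks f u))"
    unfolding C_def by (simp add: sum_lists_of_Suc)
  moreover have "2 * N = 2 ^ Suc j" unfolding N_def by simp
  ultimately show ?case unfolding A_def cU_def cK'_def by simp
qed

definition addchar :: "('k::ab_group_add \<Rightarrow> complex) \<Rightarrow> bool" where
  "addchar \<psi> \<longleftrightarrow> (\<forall>x y. \<psi> (x + y) = \<psi> x * \<psi> y) \<and> (\<forall>x. cnj (\<psi> x) = \<psi> (- x))"

lemma addchar_diff: "addchar \<psi> \<Longrightarrow> \<psi> (x - y) = \<psi> x * cnj (\<psi> y)"
  unfolding addchar_def by (metis diff_conv_add_uminus)

lemma Dcl_char:
  assumes "addchar \<psi>"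
  shows "Dcl ks (\<lambda>u. \<psi> (\<phi> u)) u = \<psi> (Dl ks \<phi> u)"
proof (induction ks arbitrary: \<phi>)
  case Nil then show ?case by simp
next
  case (Cons k ks)
  have "Dc k (\<lambda>u. \<psi> (\<phi> u)) = (\<lambda>u. \<psi> (\<phi> (u + k) - \<phi> u))"
    by (simp add: Dc_def fun_eq_iff addchar_diff[OF assms])
  then show ?case using Cons.IH by simp
qed

lemma char_orth:
  assumes "addchar \<psi>" "subgrp U" "finite U" and L: "\<And>x y. x \<in> U \<Longrightarrow> y \<in> U \<Longrightarrow> L (x + y) = L x + L y"
  shows "(\<Sum>u\<in>U. \<psi> (L u)) = (if \<forall>u\<in>U. \<psi> (L u) = 1 then of_nat (card U) else 0)"
proof (cases "\<forall>u\<in>U. \<psi> (L u) = 1")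
  case True then show ?thesis by simp
next
  case False
  then obtain u0 where u0: "u0 \<in> U" "\<psi> (L u0) \<noteq> 1" by blast
  have "(\<Sum>u\<in>U. \<psi> (L u)) = (\<Sum>u\<in>U. \<psi> (L (u + u0)))" using sum_shift[OF assms(2) u0(1), of "\<lambda>u. \<psi> (L u)"] by simp
  also have "\<dots> = \<psi> (L u0) * (\<Sum>u\<in>U. \<psi> (L u))"
    using assms(1) L u0(1) by (simp add: addchar_def sum_distrib_left mult.commute)
  finally have "(1 - \<psi> (L u0)) * (\<Sum>u\<in>U. \<psi> (L u)) = 0" by (simp add: algebra_simps)
  then have "(\<Sum>u\<in>U. \<psi> (L u)) = 0" using u0 by simp
  then show ?thesis using False by (subst if_not_P) auto
qed


lemma Abs_fps_plus: "Abs_fps (f + g) = Abs_fps f + Abs_fps g"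
  by (rule fps_ext) simp

lemma Abs_fps_scale: "Abs_fps (\<lambda>l. (c::'a::comm_ring_1) * f l) = fps_const c * Abs_fps f"
  by (rule fps_ext) (simp add: fps_const_mult_left)

definition tshv :: "nat \<Rightarrow> (nat \<Rightarrow> nat \<Rightarrow> 'a::zero) \<Rightarrow> nat \<Rightarrow> nat \<Rightarrow> 'a" where
  "tshv s w = (\<lambda>j l. if s \<le> l then w j (l - s) else 0)"

lemma Abs_fps_tsh: "Abs_fps (\<lambda>l. if s \<le> l then f (l - s) else (0::'a::comm_ring_1)) = fps_X ^ s * Abs_fps f"
  by (rule fps_ext) (simp add: fps_X_power_mult_nth)

definition scv :: "'a::times \<Rightarrow> (nat \<Rightarrow> nat \<Rightarrow> 'a) \<Rightarrow> nat \<Rightarrow> nat \<Rightarrow> 'a" where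
  "scv c w = (\<lambda>j l. c * w j l)"

definition Mf :: "(nat list \<Rightarrow> 'a::comm_ring_1) \<Rightarrow> nat \<Rightarrow> nat \<Rightarrow> (nat \<Rightarrow> nat \<Rightarrow> nat \<Rightarrow> 'a) \<Rightarrow> 'a fps" where
  "Mf c n r z = (\<Sum>js\<in>idx n r. fps_const (c js) * (\<Prod>p<r. Abs_fps (z p (js ! p))))"

lemma finite_idx: "finite (idx n r)"
  unfolding idx_def using finite_lists_length_eq[of "{..n}" r] by (simp add: conj_commute)

lemma prod_upd:
  fixes z :: "nat \<Rightarrow> 'b" and F :: "'b \<Rightarrow> nat \<Rightarrow> 'c::comm_monoid_mult"
  assumes "p < r"
  shows "(\<Prod>q<r. F ((z(p := v)) q) q) = F v p * (\<Prod>q\<in>{..<r} - {p}. F (z q) q)"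
proof -
  have "(\<Prod>q<r. F ((z(p := v)) q) q) = F ((z(p := v)) p) p * (\<Prod>q\<in>{..<r} - {p}. F ((z(p := v)) q) q)"
    using assms by (intro prod.remove) auto
  also have "(\<Prod>q\<in>{..<r} - {p}. F ((z(p := v)) q) q) = (\<Prod>q\<in>{..<r} - {p}. F (z q) q)"
    by (rule prod.cong) auto
  finally show ?thesis by simp
qed

lemma Mf_upd:
  assumes "p < r"
  shows "Mf c n r (z(p := v)) = (\<Sum>js\<in>idx n r. fps_const (c js) * (Abs_fps (v (js ! p)) * (\<Prod>q\<in>{..<r} - {p}. Abs_fps (z q (js ! q)))))"
  unfolding Mf_def
proof (rule sum.cong[OF refl])
  fix js
  show "fps_const (c js) * (\<Prod>q<r. Abs_fps ((z(p := v)) q (js ! q))) =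
    fps_const (c js) * (Abs_fps (v (js ! p)) * (\<Prod>q\<in>{..<r} - {p}. Abs_fps (z q (js ! q))))"
    using prod_upd[OF assms, of "\<lambda>x q. Abs_fps (x (js ! q))" z v] by simp
qed

lemma ml_Mf: "ml r (Mf c n r)"
  unfolding ml_def
proof (intro conjI allI impI)
  fix z z' :: "nat \<Rightarrow> nat \<Rightarrow> nat \<Rightarrow> 'a" assume "\<forall>q<r. z q = z' q"
  then show "Mf c n r z = Mf c n r z'" unfolding Mf_def by (intro sum.cong refl arg_cong2[where f = "(*)"] prod.cong) auto
next
  fix z :: "nat \<Rightarrow> nat \<Rightarrow> nat \<Rightarrow> 'a" and p u w assume p: "p < r"
  show "Mf c n r (z(p := u + w)) = Mf c n r (z(p := u)) + Mf c n r (z(p := w))"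
    unfolding Mf_upd[OF p] by (simp add: Abs_fps_plus algebra_simps sum.distrib)
qed

lemma Mf_tsh:
  assumes "p < r"
  shows "Mf c n r (z(p := tshv s w)) = fps_X ^ s * Mf c n r (z(p := w))"
  unfolding Mf_upd[OF assms] tshv_def
  by (simp add: Abs_fps_tsh sum_distrib_left algebra_simps)

lemma Mf_scv:
  assumes "p < r"
  shows "Mf c n r (z(p := scv e w)) = fps_const e * Mf c n r (z(p := w))"
  unfolding Mf_upd[OF assms] scv_def
  by (simp add: Abs_fps_scale sum_distrib_left algebra_simps)

lemma mset_perm_list:
  assumes "bij_betw \<tau> {..<r} {..<r}" "length js = r"
  shows "mset (map (\<lambda>q. js ! \<tau> q) [0..<r]) = mset js"
proof -
  have "mset (map (\<lambda>q. js ! \<tau> q) [0..<r]) = image_mset (nth js) (image_mset \<tau> (mset_set {..<r}))"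
    by (simp add: mset_map multiset.map_comp o_def atLeast0LessThan[symmetric] mset_upt)
  also have "image_mset \<tau> (mset_set {..<r}) = mset_set {..<r}"
    using assms(1) by (simp add: image_mset_mset_set bij_betw_def)
  also have "image_mset (nth js) (mset_set {..<r}) = mset js"
  proof -
    have "js = map (nth js) [0..<r]" using assms(2) map_nth[of js] by simp
    then show ?thesis by (metis mset_map mset_upt atLeast0LessThan)
  qed
  finally show ?thesis .
qed

lemma symm_Mf:
  assumes sc: "\<And>js js'. mset js = mset js' \<Longrightarrow> c js = c js'"
  shows "symm r (Mf c n r)"
  unfolding symm_def
proof (intro allI impI)
  fix \<sigma> :: "nat \<Rightarrow> nat" and z :: "nat \<Rightarrow> nat \<Rightarrow> nat \<Rightarrow> 'a"
  assume b: "bij_betw \<sigma> {..<r} {..<r}"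
  define \<tau> where "\<tau> = inv_into {..<r} \<sigma>"
  have bt: "bij_betw \<tau> {..<r} {..<r}" unfolding \<tau>_def by (rule bij_betw_inv_into[OF b])
  have st: "\<tau> (\<sigma> q) = q" if "q < r" for q
    unfolding \<tau>_def using b that by (simp add: bij_betw_def inv_into_f_f)
  have ts: "\<sigma> (\<tau> q) = q" if "q < r" for q
    unfolding \<tau>_def using b that by (simp add: bij_betw_def f_inv_into_f)
  have sm: "\<sigma> q < r" if "q < r" for q using b that by (auto simp: bij_betw_def)
  have tm: "\<tau> q < r" if "q < r" for q using bt that by (auto simp: bij_betw_def)
  define J where "J js = map (\<lambda>q. js ! \<tau> q) [0..<r]" for js :: "nat list"
  define I where "I js = map (\<lambda>q. js ! \<sigma> q) [0..<r]" for js :: "nat list"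
  show "Mf c n r (z \<circ> \<sigma>) = Mf c n r z"
    unfolding Mf_def
  proof (rule sum.reindex_bij_witness[where j = J and i = I])
    fix js assume js: "js \<in> idx n r"
    then have len: "length js = r" by (simp add: idx_def)
    show "I (J js) = js" using len st tm by (intro nth_equalityI) (auto simp: I_def J_def sm)
    have "set (J js) \<subseteq> set js" using tm len by (auto simp: J_def)
    then show "J js \<in> idx n r" using js by (auto simp: J_def idx_def)
    have "c (J js) = c js" unfolding J_def by (rule sc[OF mset_perm_list[OF bt len]])
    moreover have "(\<Prod>p<r. Abs_fps (z p (J js ! p))) = (\<Prod>p<r. Abs_fps ((z \<circ> \<sigma>) p (js ! p)))"
    proof -
      have "(\<Prod>p<r. Abs_fps ((z \<circ> \<sigma>) p (js ! p))) = (\<Prod>q\<in>\<sigma> ` {..<r}. Abs_fps (z q (js ! \<tau> q)))"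
        using b st by (subst prod.reindex) (auto simp: bij_betw_def intro!: prod.cong)
      also have "\<sigma> ` {..<r} = {..<r}" using b by (simp add: bij_betw_def)
      finally show ?thesis using tm by (auto simp: J_def intro!: prod.cong)
    qed
    ultimately show "fps_const (c (J js)) * (\<Prod>p<r. Abs_fps (z p (J js ! p))) = fps_const (c js) * (\<Prod>p<r. Abs_fps ((z \<circ> \<sigma>) p (js ! p)))"
      by simp
  next
    fix js assume js: "js \<in> idx n r"
    then have len: "length js = r" by (simp add: idx_def)
    show "J (I js) = js" using len ts sm by (intro nth_equalityI) (auto simp: I_def J_def tm)
    have "set (I js) \<subseteq> set js" using sm len by (auto simp: I_def)
    then show "I js \<in> idx n r" using js by (auto simp: I_def idx_def)
  qed
qed


lemma prod_list_map_nth: "prod_list (map f xs) = (\<Prod>p<length xs. f (xs ! p))"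
  by (induction xs) (simp_all add: prod.lessThan_Suc_shift del: prod.lessThan_Suc)

lemma Abs_fps_zero: "Abs_fps (\<lambda>_. 0) = 0"
  by (rule fps_ext) simp

lemma prod_list_map_upt: "prod_list (map g [0..<N]) = (\<Prod>p<N. g p)"
  by (simp add: prod_list_map_nth)

lemma tprod_fps: "tprod k xs l = (if l \<le> k then fps_nth (prod_list (map Abs_fps xs)) l else 0)"
proof (induction xs arbitrary: l)
  case Nil then show ?case by (simp add: tprod_def tone_def)
next
  case (Cons x xs)
  have "tprod k (x # xs) l = tmul k x (tprod k xs) l" by (simp add: tprod_def)
  also have "\<dots> = (if l \<le> k then (\<Sum>i\<le>l. x i * fps_nth (prod_list (map Abs_fps xs)) (l - i)) else 0)"
    unfolding tmul_def using Cons.IH by (auto intro!: sum.cong)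
  also have "\<dots> = (if l \<le> k then fps_nth (prod_list (map Abs_fps (x # xs))) l else 0)"
    by (simp add: fps_mult_nth atLeast0AtMost)
  finally show ?case .
qed

lemma tmul_fps:
  assumes "\<And>j. j \<le> k \<Longrightarrow> y j = fps_nth (G) j"
  shows "tmul k x y l = (if l \<le> k then fps_nth ((Abs_fps x * G)) l else 0)"
  unfolding tmul_def using assms by (auto simp: fps_mult_nth atLeast0AtMost intro!: sum.cong)

lemma form_eval_fps:
  "form_eval emb k a n r x l = (if l \<le> k then fps_nth (Mf (\<lambda>js. emb (a js)) n r (\<lambda>_. x)) l else 0)"
proof -
  have "tprod k (map x js) l = (if l \<le> k then fps_nth ((\<Prod>p<r. Abs_fps (x (js ! p)))) l else 0)"
    if "js \<in> idx n r" for js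
    using that by (simp add: tprod_fps prod_list_map_nth idx_def)
  then show ?thesis
    unfolding form_eval_def Mf_def by (auto simp: fps_sum_nth intro!: sum.cong)
qed

definition PsiF :: "('k::field \<Rightarrow> 'K::field) \<Rightarrow> (nat list \<Rightarrow> 'k) \<Rightarrow> nat \<Rightarrow> nat \<Rightarrow> nat
    \<Rightarrow> (nat \<Rightarrow> nat \<Rightarrow> nat \<Rightarrow> 'K) \<Rightarrow> 'K fps" where
  "PsiF emb a n r i ys = (\<Sum>js\<in>idx n (r - 1).
      fps_const (emb (of_nat (fact r) * a (js @ [i]))) * (\<Prod>p<r - 1. Abs_fps (ys p (js ! p))))"

lemma Psi_fps: "Psi emb k a n r i ys l = (if l \<le> k then fps_nth (PsiF emb a n r i ys) l else 0)"
proof -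
  have "tprod k (map (\<lambda>p. ys p (js ! p)) [0..<r - 1]) l = (if l \<le> k then fps_nth ((\<Prod>p<r - 1. Abs_fps (ys p (js ! p)))) l else 0)" for js
    by (simp add: tprod_fps prod_list_map_upt)
  then show ?thesis
    unfolding Psi_def PsiF_def by (auto simp: fps_sum_nth intro!: sum.cong)
qed

lemma prod_list_remove_nth:
  assumes "p < length xs"
  shows "prod_list (map f (take p xs @ drop (Suc p) xs)) = (\<Prod>q\<in>{..<length xs} - {p}. f (xs ! q))"
proof -
  have xs: "xs = map (nth xs) [0..<length xs]" using map_nth[of xs] by simp
  have t: "take p xs = map (nth xs) [0..<p]"
    using assms by (subst xs) (simp add: take_map)
  have dr: "drop (Suc p) xs = map (nth xs) [Suc p..<length xs]"
    by (subst xs) (simp add: drop_map)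
  have "prod_list (map f (take p xs @ drop (Suc p) xs)) = prod_list (map (\<lambda>q. f (xs ! q)) ([0..<p] @ [Suc p..<length xs]))"
    unfolding t dr by (simp add: o_def)
  also have "\<dots> = (\<Prod>q\<in>set ([0..<p] @ [Suc p..<length xs]). f (xs ! q))"
    by (subst prod.distinct_set_conv_list) auto
  also have "set ([0..<p] @ [Suc p..<length xs]) = {..<length xs} - {p}" using assms by auto
  finally show ?thesis .
qed

definition PF :: "('k::field \<Rightarrow> 'K::field) \<Rightarrow> (nat list \<Rightarrow> 'k) \<Rightarrow> nat \<Rightarrow> nat \<Rightarrow> nat
    \<Rightarrow> (nat \<Rightarrow> nat \<Rightarrow> 'K) \<Rightarrow> 'K fps" where
  "PF emb a n r i x = (\<Sum>js\<in>idx n r. fps_const (emb (a js)) *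
      (\<Sum>p<r. if js ! p = i then (\<Prod>q\<in>{..<r} - {p}. Abs_fps (x (js ! q))) else 0))"

lemma partial_fps: "partial_eval emb k a n r i x l = (if l \<le> k then fps_nth (PF emb a n r i x) l else 0)"
proof (cases "l \<le> k")
  case False
  have "tprod k (map x js) l = 0" for js using False by (simp add: tprod_fps)
  then show ?thesis unfolding partial_eval_def using False by (simp del: map_append cong: if_cong)
next
  case True
  have h: "prod_list (map (Abs_fps \<circ> x) (take p js)) * prod_list (map (Abs_fps \<circ> x) (drop (Suc p) js)) = (\<Prod>q\<in>{..<r} - {p}. Abs_fps (x (js ! q)))"
    if "js \<in> idx n r" "p < r" for js p
    using prod_list_remove_nth[of p js "\<lambda>j. Abs_fps (x j)"] that by (simp add: idx_def o_def)
  show ?thesis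
    unfolding partial_eval_def PF_def using True
    by (auto simp: fps_sum_nth tprod_fps h intro!: sum.cong)
qed

lemma grad_identity:
  assumes "r \<ge> 1"
  shows "(\<Sum>i\<le>n. Abs_fps (x1 i) * PF emb a n r i x0) = (\<Sum>p<r. Mf (\<lambda>js. emb (a js)) n r (\<lambda>q. if q = p then x1 else x0))"
proof -
  define Q where "Q js p = (\<Prod>q\<in>{..<r} - {p}. Abs_fps (x0 (js ! q)))" for js p
  have "(\<Sum>i\<le>n. Abs_fps (x1 i) * PF emb a n r i x0) =
      (\<Sum>i\<le>n. \<Sum>js\<in>idx n r. \<Sum>p<r. fps_const (emb (a js)) * (if js ! p = i then Abs_fps (x1 i) * Q js p else 0))"
    unfolding PF_def Q_def by (simp add: sum_distrib_left algebra_simps if_distrib cong: if_cong)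
  also have "\<dots> = (\<Sum>js\<in>idx n r. \<Sum>p<r. \<Sum>i\<le>n. fps_const (emb (a js)) * (if js ! p = i then Abs_fps (x1 i) * Q js p else 0))"
    by (subst sum.swap) (simp add: sum.swap[of _ "{..n}"])
  also have "\<dots> = (\<Sum>js\<in>idx n r. \<Sum>p<r. fps_const (emb (a js)) * (Abs_fps (x1 (js ! p)) * Q js p))"
  proof (rule sum.cong[OF refl], rule sum.cong[OF refl])
    fix js p assume js: "js \<in> idx n r" and p: "p \<in> {..<r}"
    then have "js ! p \<le> n" by (auto simp: idx_def dest!: nth_mem)
    then show "(\<Sum>i\<le>n. fps_const (emb (a js)) * (if js ! p = i then Abs_fps (x1 i) * Q js p else 0)) =
        fps_const (emb (a js)) * (Abs_fps (x1 (js ! p)) * Q js p)"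
      by (simp add: if_distrib[of "\<lambda>t. fps_const (emb (a js)) * t"] sum.delta' cong: if_cong)
  qed
  also have "\<dots> = (\<Sum>p<r. Mf (\<lambda>js. emb (a js)) n r ((\<lambda>_. x0)(p := x1)))"
    by (subst sum.swap) (simp add: Mf_upd Q_def)
  also have "\<dots> = (\<Sum>p<r. Mf (\<lambda>js. emb (a js)) n r (\<lambda>q. if q = p then x1 else x0))"
    by (intro sum.cong refl arg_cong[where f = "Mf _ n r"]) (auto simp: fun_eq_iff)
  finally show ?thesis .
qed

lemma grad_dot_fps:
  assumes "r \<ge> 1"
  shows "grad_dot emb k a n r x1 x0 l =
    (if l \<le> k then fps_nth ((\<Sum>p<r. Mf (\<lambda>js. emb (a js)) n r (\<lambda>q. if q = p then x1 else x0))) l else 0)"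
proof -
  have "grad_dot emb k a n r x1 x0 l = (\<Sum>i\<le>n. if l \<le> k then fps_nth ((Abs_fps (x1 i) * PF emb a n r i x0)) l else 0)"
    unfolding grad_dot_def by (intro sum.cong refl tmul_fps) (simp add: partial_fps)
  also have "\<dots> = (if l \<le> k then fps_nth ((\<Sum>i\<le>n. Abs_fps (x1 i) * PF emb a n r i x0)) l else 0)"
    by (simp add: fps_sum_nth)
  finally show ?thesis using grad_identity[OF assms, of x1 emb a n x0] by simp
qed

definition ev :: "nat \<Rightarrow> (nat \<Rightarrow> 'a::zero) \<Rightarrow> nat \<Rightarrow> nat \<Rightarrow> 'a" where
  "ev i y = (\<lambda>j. if j = i then y else (\<lambda>_. 0))"

lemma idx_snoc_bij:
  assumes "i \<le> n"
  shows "(\<Sum>js\<in>idx n (Suc r). if js ! r = i then g js else 0) = (\<Sum>js\<in>idx n r. g (js @ [i]))"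
proof -
  have "(\<Sum>js\<in>idx n (Suc r). if js ! r = i then g js else 0) = (\<Sum>js\<in>{js \<in> idx n (Suc r). js ! r = i}. g js)"
    by (simp add: sum.inter_filter[OF finite_idx])
  also have "{js \<in> idx n (Suc r). js ! r = i} = (\<lambda>js. js @ [i]) ` idx n r"
  proof (rule set_eqI, rule iffI)
    fix js assume js: "js \<in> {js \<in> idx n (Suc r). js ! r = i}"
    then have len: "length js = Suc r" by (simp add: idx_def)
    then have "js = butlast js @ [js ! r]"
      by (metis append_butlast_last_id diff_Suc_1 last_conv_nth list.size(3) nat.distinct(1))
    moreover have "butlast js \<in> idx n r" using js len by (auto simp: idx_def dest: in_set_butlastD)
    ultimately show "js \<in> (\<lambda>js. js @ [i]) ` idx n r" using js by (metis (mono_tags, lifting) image_eqI mem_Collect_eq)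
  next
    fix js assume "js \<in> (\<lambda>js. js @ [i]) ` idx n r"
    then show "js \<in> {js \<in> idx n (Suc r). js ! r = i}" using assms by (auto simp: idx_def nth_append)
  qed
  also have "(\<Sum>js\<in>(\<lambda>js. js @ [i]) ` idx n r. g js) = (\<Sum>js\<in>idx n r. g (js @ [i]))"
    by (subst sum.reindex) (auto simp: inj_on_def)
  finally show ?thesis .
qed

lemma Mf_last_ev:
  assumes "i \<le> n"
  shows "Mf c n (Suc r) (z(r := ev i y)) =
    (\<Sum>js\<in>idx n r. fps_const (c (js @ [i])) * (\<Prod>p<r. Abs_fps (z p (js ! p)))) * Abs_fps y"
proof -
  have "Mf c n (Suc r) (z(r := ev i y)) = (\<Sum>js\<in>idx n (Suc r). if js ! r = i then
      fps_const (c js) * (Abs_fps y * (\<Prod>q\<in>{..<Suc r} - {r}. Abs_fps (z q (js ! q)))) else 0)"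
  proof -
    have "Mf c n (Suc r) (z(r := ev i y)) = (\<Sum>js\<in>idx n (Suc r). fps_const (c js) *
        (Abs_fps (ev i y (js ! r)) * (\<Prod>q\<in>{..<Suc r} - {r}. Abs_fps (z q (js ! q)))))"
      by (rule Mf_upd) simp
    also have "\<dots> = (\<Sum>js\<in>idx n (Suc r). if js ! r = i then
      fps_const (c js) * (Abs_fps y * (\<Prod>q\<in>{..<Suc r} - {r}. Abs_fps (z q (js ! q)))) else 0)"
      by (intro sum.cong refl) (auto simp: ev_def Abs_fps_zero)
    finally show ?thesis .
  qed
  also have "\<dots> = (\<Sum>js\<in>idx n r. fps_const (c (js @ [i])) * (Abs_fps y * (\<Prod>q\<in>{..<Suc r} - {r}. Abs_fps (z q ((js @ [i]) ! q)))))"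
    by (rule idx_snoc_bij[OF assms])
  also have "\<dots> = (\<Sum>js\<in>idx n r. fps_const (c (js @ [i])) * (\<Prod>p<r. Abs_fps (z p (js ! p)))) * Abs_fps y"
  proof -
    have "{..<Suc r} - {r} = {..<r}" by auto
    moreover have "(\<Prod>q<r. Abs_fps (z q ((js @ [i]) ! q))) = (\<Prod>q<r. Abs_fps (z q (js ! q)))" if "js \<in> idx n r" for js
      using that by (intro prod.cong refl) (auto simp: idx_def nth_append)
    ultimately show ?thesis by (simp add: sum_distrib_left sum_distrib_right algebra_simps)
  qed
  finally show ?thesis .
qed


section \<open>Places and Riemann-Roch spaces\<close>

lemma place_one: assumes "place emb v" shows "v 1 = 0"
proof -
  have "v (1 * 1) = v 1 + v 1" using assms unfolding place_def by (metis one_neq_zero)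
  then show ?thesis by simp
qed

lemma place_uminus: assumes "place emb v" "f \<noteq> 0" shows "v (- f) = v f"
proof -
  have m: "\<And>a b. a \<noteq> 0 \<Longrightarrow> b \<noteq> 0 \<Longrightarrow> v (a * b) = v a + v b" using assms(1) unfolding place_def by blast
  have "v ((-1) * (-1)) = v (-1) + v (-1)" by (rule m) simp_all
  then have "v (-1) = 0" using place_one[OF assms(1)] by simp
  moreover have "v ((-1) * f) = v (-1) + v f" by (rule m) (use assms(2) in simp_all)
  ultimately show ?thesis by simp
qed

lemma RR_zero: "0 \<in> RR_space emb D"
  by (simp add: RR_space_def)

lemma RR_add:
  assumes "f \<in> RR_space emb D" "g \<in> RR_space emb D"
  shows "f + g \<in> RR_space emb D"
  unfolding RR_space_def
proof (cases "f = 0 \<or> g = 0 \<or> f + g = 0")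
  case True then show "f + g \<in> {f. f = 0 \<or> (\<forall>v. place emb v \<longrightarrow> - D v \<le> v f)}"
    using assms by (auto simp: RR_space_def)
next
  case False
  show "f + g \<in> {f. f = 0 \<or> (\<forall>v. place emb v \<longrightarrow> - D v \<le> v f)}"
  proof (simp, intro disjI2 allI impI)
    fix v assume pv: "place emb v"
    then have "min (v f) (v g) \<le> v (f + g)" using False unfolding place_def by blast
    moreover have "- D v \<le> v f" "- D v \<le> v g" using assms False pv by (auto simp: RR_space_def)
    ultimately show "- D v \<le> v (f + g)" by linarith
  qed
qed

lemma RR_uminus:
  assumes "f \<in> RR_space emb D" shows "- f \<in> RR_space emb D"
  using assms place_uminus by (fastforce simp: RR_space_def)

lemma RR_diff:
  assumes "f \<in> RR_space emb D" "g \<in> RR_space emb D" shows "f - g \<in> RR_space emb D"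
  using RR_add[OF assms(1) RR_uminus[OF assms(2)]] by simp

lemma RR_sum: "finite I \<Longrightarrow> (\<And>i. i \<in> I \<Longrightarrow> f i \<in> RR_space emb D) \<Longrightarrow> (\<Sum>i\<in>I. f i) \<in> RR_space emb D"
  by (induction I rule: finite_induct) (auto intro: RR_add RR_zero)

lemma RR_mult:
  assumes "f \<in> RR_space emb D1" "g \<in> RR_space emb D2" "\<And>v. D3 v = D1 v + D2 v"
  shows "f * g \<in> RR_space emb D3"
proof (cases "f = 0 \<or> g = 0")
  case True then show ?thesis by (auto simp: RR_space_def)
next
  case False
  have "- D3 v \<le> v (f * g)" if pv: "place emb v" for v
  proof -
    have "v (f * g) = v f + v g" using pv False unfolding place_def by blast
    moreover have "- D1 v \<le> v f" "- D2 v \<le> v g" using assms False pv by (auto simp: RR_space_def)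
    ultimately show ?thesis using assms(3)[of v] by linarith
  qed
  then show ?thesis by (simp add: RR_space_def)
qed

lemma emb_nonzero: assumes "const_emb emb" "c \<noteq> 0" shows "emb c \<noteq> 0"
proof
  assume "emb c = 0"
  then have "emb (c * inverse c) = 0" using assms(1) by (simp add: const_emb_def)
  then show False using assms by (simp add: const_emb_def)
qed

lemma RR_emb_mult:
  assumes "const_emb emb" "f \<in> RR_space emb D"
  shows "emb c * f \<in> RR_space emb D"
proof (cases "c = 0")
  case True then show ?thesis using assms(1) by (simp add: const_emb_def RR_space_def)
next
  case False
  have "emb c \<in> RR_space emb (\<lambda>_. 0)"
    using emb_nonzero[OF assms(1) False] False by (auto simp: RR_space_def place_def)
  then show ?thesis using RR_mult[of "emb c" emb "\<lambda>_. 0" f D D] assms(2) by simp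
qed

lemma RR_one: "1 \<in> RR_space emb (\<lambda>_. 0)"
  by (auto simp: RR_space_def place_one)

lemma RR_of_nat: "f \<in> RR_space emb D \<Longrightarrow> of_nat N * f \<in> RR_space emb D"
  by (induction N) (auto simp: algebra_simps intro: RR_add RR_zero)

lemma div_scale_1: "div_scale 1 D = D"
  by (simp add: div_scale_def)

lemma div_scale_add: "div_scale (r + s) D v = div_scale r D v + div_scale s D v"
  by (simp add: div_scale_def algebra_simps)

definition coefin :: "'a set \<Rightarrow> 'a fps \<Rightarrow> bool" where
  "coefin S f \<longleftrightarrow> (\<forall>l. fps_nth f l \<in> S)"

lemma coefin_add: "coefin (RR_space emb D) f \<Longrightarrow> coefin (RR_space emb D) g \<Longrightarrow> coefin (RR_space emb D) (f + g)"
  by (simp add: coefin_def RR_add)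

lemma coefin_diff: "coefin (RR_space emb D) f \<Longrightarrow> coefin (RR_space emb D) g \<Longrightarrow> coefin (RR_space emb D) (f - g)"
  by (simp add: coefin_def RR_diff)

lemma coefin_zero: "coefin (RR_space emb D) 0"
  by (simp add: coefin_def RR_zero)

lemma coefin_sum: "finite I \<Longrightarrow> (\<And>i. i \<in> I \<Longrightarrow> coefin (RR_space emb D) (f i)) \<Longrightarrow> coefin (RR_space emb D) (\<Sum>i\<in>I. f i)"
  by (simp add: coefin_def fps_sum_nth RR_sum)

lemma coefin_mult:
  assumes "coefin (RR_space emb D1) f" "coefin (RR_space emb D2) g" "\<And>v. D3 v = D1 v + D2 v"
  shows "coefin (RR_space emb D3) (f * g)"
  unfolding coefin_def fps_mult_nth
  using assms by (auto simp: coefin_def intro!: RR_sum RR_mult)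

lemma coefin_one: "coefin (RR_space emb (\<lambda>_. 0)) 1"
  by (simp add: coefin_def RR_one RR_zero)

lemma coefin_const_emb:
  assumes "const_emb emb" "coefin (RR_space emb D) f"
  shows "coefin (RR_space emb D) (fps_const (emb c) * f)"
  using assms by (auto simp: coefin_def intro: RR_emb_mult)

lemma coefin_of_nat: "coefin (RR_space emb D) f \<Longrightarrow> coefin (RR_space emb D) (of_nat N * f)"
proof -
  assume "coefin (RR_space emb D) f"
  moreover have "of_nat N * f = fps_const (of_nat N) * f" by (simp add: fps_of_nat)
  ultimately show ?thesis by (simp add: coefin_def RR_of_nat)
qed

lemma coefin_Xpow: "coefin (RR_space emb D) f \<Longrightarrow> coefin (RR_space emb D) (fps_X ^ s * f)"
  by (simp add: coefin_def fps_X_power_mult_nth RR_zero)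

definition allin :: "'a set \<Rightarrow> (nat \<Rightarrow> nat \<Rightarrow> 'a) \<Rightarrow> bool" where
  "allin S x \<longleftrightarrow> (\<forall>j l. x j l \<in> S)"

lemma coefin_prod:
  assumes "\<And>p. p < r \<Longrightarrow> coefin (RR_space emb D) (F p)"
  shows "coefin (RR_space emb (div_scale r D)) (\<Prod>p<r. F p)"
  using assms
proof (induction r)
  case 0 then show ?case using coefin_one[of emb] by (simp add: div_scale_def)
next
  case (Suc r)
  have "coefin (RR_space emb (div_scale (Suc r) D)) ((\<Prod>p<r. F p) * F r)"
    by (rule coefin_mult[of emb "div_scale r D" _ D]) (use Suc in \<open>auto simp: div_scale_def algebra_simps\<close>)
  then show ?case by simp
qed

lemma coefin_Mf:
  assumes "const_emb emb" "\<And>p. p < r \<Longrightarrow> allin (RR_space emb D) (z p)"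
  shows "coefin (RR_space emb (div_scale r D)) (Mf (\<lambda>js. emb (a js)) n r z)"
  unfolding Mf_def
proof (intro coefin_sum finite_idx coefin_const_emb[OF assms(1)] coefin_prod)
  fix js p assume "p < r"
  then show "coefin (RR_space emb D) (Abs_fps (z p (js ! p)))"
    using assms(2) by (simp add: coefin_def allin_def)
qed

lemma tvecs_allin: "0 \<in> V \<Longrightarrow> x \<in> tvecs V k N \<Longrightarrow> allin V x"
  by (auto simp: tvecs_def trunc_def allin_def) (metis not_le)

lemma subgrp_tvecs:
  assumes "0 \<in> V" "\<And>x y. x \<in> V \<Longrightarrow> y \<in> V \<Longrightarrow> x + y \<in> V" "\<And>x. x \<in> V \<Longrightarrow> - x \<in> V"
  shows "subgrp (tvecs V k N)"
  using assms by (auto simp: subgrp_def tvecs_def trunc_def zero_fun_def)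

lemma tvecs_mono: "0 \<in> V \<Longrightarrow> k \<le> k' \<Longrightarrow> tvecs V k N \<subseteq> tvecs V k' N"
  by (auto simp: tvecs_def trunc_def) (metis le_trans not_le)

lemma card_tvecs:
  fixes V :: "'a::field set"
  assumes "finite V" "0 \<in> V"
  shows "finite (tvecs V k N) \<and> card (tvecs V k N) = card V ^ ((k + 1) * N)"
proof -
  define A where "A = {..<N} \<times> {..k}"
  define toF where "toF x = (\<lambda>jl\<in>A. x (fst jl) (snd jl))" for x :: "nat \<Rightarrow> nat \<Rightarrow> 'a"
  define ofF where "ofF g = (\<lambda>j l. if j < N \<and> l \<le> k then g (j, l) else (0::'a))" for g :: "nat \<times> nat \<Rightarrow> 'a"
  have bij: "bij_betw toF (tvecs V k N) (PiE A (\<lambda>_. V))"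
  proof (rule bij_betw_byWitness[where f' = ofF])
    show "\<forall>x\<in>tvecs V k N. ofF (toF x) = x"
      by (auto simp: tvecs_def trunc_def ofF_def toF_def A_def fun_eq_iff) (metis not_le)+
    show "\<forall>g\<in>PiE A (\<lambda>_. V). toF (ofF g) = g"
      by (auto simp: ofF_def toF_def A_def fun_eq_iff PiE_def extensional_def)
    show "toF ` tvecs V k N \<subseteq> PiE A (\<lambda>_. V)"
    proof
      fix g assume "g \<in> toF ` tvecs V k N"
      then obtain x where x: "x \<in> tvecs V k N" "g = toF x" by blast
      show "g \<in> PiE A (\<lambda>_. V)" unfolding x(2) toF_def
        by (subst restrict_PiE_iff) (use x(1) in \<open>auto simp: tvecs_def trunc_def A_def\<close>)
    qed
    show "ofF ` PiE A (\<lambda>_. V) \<subseteq> tvecs V k N"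
      using assms(2) by (auto simp: tvecs_def trunc_def ofF_def A_def PiE_def Pi_def)
  qed
  have fin: "finite (PiE A (\<lambda>_. V))" using assms(1) by (simp add: A_def finite_PiE)
  have "card (PiE A (\<lambda>_. V)) = card V ^ ((k + 1) * N)"
    by (simp add: card_PiE A_def card_cartesian_product mult.commute)
  then show ?thesis using bij fin bij_betw_finite bij_betw_same_card by metis
qed


section \<open>Characters\<close>

lemma finite_char_exists:
  "\<exists>N>0. (of_nat N :: 'k::{finite,ring_1}) = 0"
proof -
  have "\<not> inj (of_nat :: nat \<Rightarrow> 'k)"
  proof
    assume "inj (of_nat :: nat \<Rightarrow> 'k)"
    then have "infinite (range (of_nat :: nat \<Rightarrow> 'k))" using finite_imageD infinite_UNIV_nat by blast
    then show False by simp
  qed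
  then obtain x y :: nat where xy: "x \<noteq> y" "(of_nat x :: 'k) = of_nat y" unfolding inj_def by blast
  show ?thesis
  proof (cases "x < y")
    case True
    then have "(of_nat (y - x) :: 'k) = 0" using xy by (simp add: of_nat_diff)
    then show ?thesis using True by (intro exI[of _ "y - x"]) simp
  next
    case False
    then have "(of_nat (x - y) :: 'k) = 0" using xy by (simp add: of_nat_diff)
    then show ?thesis using False xy(1) by (intro exI[of _ "x - y"]) simp
  qed
qed

lemma char_pow: "(\<forall>x y. \<psi> (x + y) = \<psi> x * \<psi> y) \<Longrightarrow> \<psi> (of_nat N * x) = \<psi> x ^ N"
  if "\<psi> 0 = 1" for \<psi> :: "'k::ring_1 \<Rightarrow> complex"
  using that by (induction N) (simp_all add: algebra_simps)

lemma nontriv_cases: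
  fixes \<psi> :: "'k::{finite,field} \<Rightarrow> complex"
  assumes "nontriv_add_char \<psi>"
  shows "(\<forall>x. \<psi> x = 0) \<or> (addchar \<psi> \<and> \<psi> 0 = 1 \<and> (\<exists>x. \<psi> x \<noteq> 1))"
proof (cases "\<psi> 0 = 0")
  case True
  then have "\<psi> x = 0" for x using assms unfolding nontriv_add_char_def by (metis add.right_neutral mult_zero_right)
  then show ?thesis by blast
next
  case False
  have mult: "\<psi> (x + y) = \<psi> x * \<psi> y" for x y using assms by (simp add: nontriv_add_char_def)
  have p0: "\<psi> 0 = 1" using mult[of 0 0] False by simp
  obtain N :: nat where N: "N > 0" "(of_nat N :: 'k) = 0" using finite_char_exists by blast
  have norm1: "cmod (\<psi> x) = 1" for x
  proof -
    have "\<psi> x ^ N = 1" using char_pow[of \<psi> N x] mult p0 N(2) by simp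
    then have "cmod (\<psi> x) ^ N = 1 ^ N" by (metis norm_one norm_power power_one)
    then show ?thesis by (rule power_eq_imp_eq_base) (use N in auto)
  qed
  have "cnj (\<psi> x) = \<psi> (- x)" for x
  proof -
    have "\<psi> x * \<psi> (- x) = 1" using mult[of x "- x"] p0 by simp
    moreover have "\<psi> x * cnj (\<psi> x) = 1" using norm1[of x] by (metis complex_norm_square of_real_1 power_one)
    ultimately show ?thesis by (metis mult.left_commute mult.right_neutral mult_cancel_left zero_neq_one mult_zero_left)
  qed
  then have "addchar \<psi>" using mult by (simp add: addchar_def)
  then show ?thesis using assms p0 by (simp add: nontriv_add_char_def)
qed


lemma psi_m_sum:
  assumes "addchar \<psi>" "\<psi> 0 = 1"
  shows "psi_m \<psi> m c = \<psi> (\<Sum>i\<le>m. c i)"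
proof (induction m)
  case 0 then show ?case by (simp add: psi_m_def)
next
  case (Suc m)
  then show ?case using assms(1) by (simp add: psi_m_def addchar_def)
qed

definition pr :: "(nat \<Rightarrow> 'K \<Rightarrow> 'k::field) \<Rightarrow> nat \<Rightarrow> 'K fps \<Rightarrow> 'k" where
  "pr \<gamma> k f = (\<Sum>l\<le>k. pairing \<gamma> (fps_nth f) l)"

lemma pairing_cong: "(\<And>j. j \<le> l \<Longrightarrow> y j = y' j) \<Longrightarrow> pairing \<gamma> y l = pairing \<gamma> y' l"
  unfolding pairing_def by (intro sum.cong refl) auto

lemma pr_cong: "(\<And>l. l \<le> k \<Longrightarrow> fps_nth f l = fps_nth g l) \<Longrightarrow> pr \<gamma> k f = pr \<gamma> k g"
  unfolding pr_def by (intro sum.cong refl pairing_cong) auto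

lemma tduals_zero:
  assumes "\<gamma> \<in> tduals emb V m" "0 \<in> V"
  shows "\<gamma> i 0 = 0"
proof (cases "i \<le> m")
  case True
  then have "\<gamma> i (0 + 0) = \<gamma> i 0 + \<gamma> i 0" using assms unfolding tduals_def lin_fun_def by blast
  then show ?thesis by (metis add.right_neutral add_left_cancel)
next
  case False then show ?thesis using assms by (auto simp: tduals_def)
qed

lemma tduals_add:
  assumes "\<gamma> \<in> tduals emb V m" "x \<in> V" "y \<in> V"
  shows "\<gamma> i (x + y) = \<gamma> i x + \<gamma> i y"
  using assms by (cases "i \<le> m") (auto simp: tduals_def lin_fun_def)

lemma tduals_emb:
  assumes "\<gamma> \<in> tduals emb V m" "x \<in> V"
  shows "\<gamma> i (emb c * x) = c * \<gamma> i x"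
  using assms by (cases "i \<le> m") (auto simp: tduals_def lin_fun_def)

lemma pr_add:
  assumes "\<gamma> \<in> tduals emb V m" "coefin V f" "coefin V g"
  shows "pr \<gamma> k (f + g) = pr \<gamma> k f + pr \<gamma> k g"
  unfolding pr_def pairing_def using assms
  by (simp add: coefin_def tduals_add sum.distrib)

lemma pr_emb:
  assumes "\<gamma> \<in> tduals emb V m" "coefin V f"
  shows "pr \<gamma> k (fps_const (emb c) * f) = c * pr \<gamma> k f"
  unfolding pr_def pairing_def using assms
  by (simp add: coefin_def tduals_emb sum_distrib_left)

lemma pairing_shift:
  assumes "\<gamma> \<in> tduals emb V m" "0 \<in> V"
  shows "pairing \<gamma> (fps_nth (fps_X ^ s * f)) l = (if l < s then 0 else pairing \<gamma> (fps_nth f) (l - s))"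
proof (cases "l < s")
  case True
  then show ?thesis using tduals_zero[OF assms]
    by (auto simp: pairing_def fps_X_power_mult_nth intro!: sum.neutral)
next
  case False
  have "pairing \<gamma> (fps_nth (fps_X ^ s * f)) l = (\<Sum>i\<le>l. if l - i < s then 0 else \<gamma> i (fps_nth f (l - i - s)))"
    unfolding pairing_def using tduals_zero[OF assms]
    by (intro sum.cong refl) (simp add: fps_X_power_mult_nth)
  also have "\<dots> = (\<Sum>i\<in>{..l - s} \<union> {l - s<..l}. if l - i < s then 0 else \<gamma> i (fps_nth f (l - i - s)))"
    by (intro sum.cong refl) auto
  also have "\<dots> = (\<Sum>i\<le>l - s. if l - i < s then 0 else \<gamma> i (fps_nth f (l - i - s)))
      + (\<Sum>i\<in>{l - s<..l}. if l - i < s then 0 else \<gamma> i (fps_nth f (l - i - s)))"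
    by (rule sum.union_disjoint) auto
  also have "(\<Sum>i\<in>{l - s<..l}. if l - i < s then 0 else \<gamma> i (fps_nth f (l - i - s))) = 0"
    by (intro sum.neutral) auto
  also have "(\<Sum>i\<le>l - s. if l - i < s then 0 else \<gamma> i (fps_nth f (l - i - s))) = pairing \<gamma> (fps_nth f) (l - s)"
    unfolding pairing_def using False by (intro sum.cong refl) (auto simp: add.commute)
  finally show ?thesis using False by simp
qed

lemma pr_shift:
  assumes "\<gamma> \<in> tduals emb V m" "0 \<in> V" "s \<le> k"
  shows "pr \<gamma> k (fps_X ^ s * f) = pr \<gamma> (k - s) f"
proof -
  have "pr \<gamma> k (fps_X ^ s * f) = (\<Sum>l\<le>k. if l < s then 0 else pairing \<gamma> (fps_nth f) (l - s))"
    unfolding pr_def by (simp add: pairing_shift[OF assms(1,2)])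
  also have "\<dots> = (\<Sum>l\<in>{s..k}. pairing \<gamma> (fps_nth f) (l - s))"
    by (rule sum.mono_neutral_cong_right) auto
  also have "\<dots> = (\<Sum>l\<in>{0..k - s}. pairing \<gamma> (fps_nth f) l)"
  proof -
    have e: "{s..k} = {0 + s..(k - s) + s}" using assms(3) by simp
    show ?thesis unfolding e sum.shift_bounds_cl_nat_ivl by simp
  qed
  also have "\<dots> = pr \<gamma> (k - s) f" unfolding pr_def by (simp add: atLeast0AtMost)
  finally show ?thesis .
qed

lemma cumulative_zero:
  fixes g :: "nat \<Rightarrow> 'a::ab_group_add"
  assumes "\<And>t. t \<le> k \<Longrightarrow> (\<Sum>l\<le>k - t. g l) = 0" "l \<le> k"
  shows "g l = 0"
proof (cases l)
  case 0
  then show ?thesis using assms(1)[of k] by simp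
next
  case (Suc l')
  have "(\<Sum>i\<le>l. g i) = 0" using assms(1)[of "k - l"] assms(2) by simp
  moreover have "(\<Sum>i\<le>l'. g i) = 0" using assms(1)[of "k - l'"] assms(2) Suc by simp
  ultimately show ?thesis using Suc by simp
qed

section \<open>Differences relative to a subgroup\<close>

lemma Dl_cong_on:
  assumes "subgrp X" "set ks \<subseteq> X" "\<And>x. x \<in> X \<Longrightarrow> f x = g x" "u \<in> X"
  shows "Dl ks f u = Dl ks g u"
  using assms(2-4)
proof (induction ks arbitrary: f g)
  case Nil then show ?case by simp
next
  case (Cons k ks)
  have "Dl ks (\<lambda>x. f (x + k) - f x) u = Dl ks (\<lambda>x. g (x + k) - g x) u"
    using Cons.prems by (intro Cons.IH) (auto intro: subgrp_add[OF assms(1)])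
  then show ?case by simp
qed

lemma Dl_in:
  assumes "subgrp X" "set ks \<subseteq> X" "\<And>x. x \<in> X \<Longrightarrow> G x \<in> W" "u \<in> X"
    "\<And>a b. a \<in> W \<Longrightarrow> b \<in> W \<Longrightarrow> a - b \<in> W"
  shows "Dl ks G u \<in> W"
  using assms(2-4)
proof (induction ks arbitrary: G)
  case Nil then show ?case by simp
next
  case (Cons k ks)
  show ?case using Cons.prems by (simp, intro Cons.IH) (auto intro: assms(5) subgrp_add[OF assms(1)])
qed

lemma Dl_hom_on:
  assumes "subgrp X" "set ks \<subseteq> X" "\<And>x. x \<in> X \<Longrightarrow> G x \<in> W" "u \<in> X"
    "\<And>a b. a \<in> W \<Longrightarrow> b \<in> W \<Longrightarrow> a - b \<in> W"
    "\<And>a b. a \<in> W \<Longrightarrow> b \<in> W \<Longrightarrow> A (a - b) = A a - A b"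
  shows "Dl ks (\<lambda>x. A (G x)) u = A (Dl ks G u)"
  using assms(2-4)
proof (induction ks arbitrary: G)
  case Nil then show ?case by simp
next
  case (Cons k ks)
  have "Dl (k # ks) (\<lambda>x. A (G x)) u = Dl ks (\<lambda>x. A (G (x + k)) - A (G x)) u" by simp
  also have "\<dots> = Dl ks (\<lambda>x. A (G (x + k) - G x)) u"
    using Cons.prems by (intro Dl_cong_on[OF assms(1)]) (auto intro!: assms(6)[symmetric] intro: subgrp_add[OF assms(1)])
  also have "\<dots> = A (Dl ks (\<lambda>x. G (x + k) - G x) u)"
    using Cons.prems by (intro Cons.IH) (auto intro: assms(5) subgrp_add[OF assms(1)])
  finally show ?case by simp
qed


lemma fps_mult_nth_cong:
  assumes "\<And>i. i \<le> j \<Longrightarrow> fps_nth f i = fps_nth f' i" "\<And>i. i \<le> j \<Longrightarrow> fps_nth g i = fps_nth g' i"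
  shows "fps_nth (f * g) j = fps_nth (f' * g') j"
  unfolding fps_mult_nth using assms by (intro sum.cong refl) auto

lemma emb_of_nat: "const_emb emb \<Longrightarrow> emb (of_nat N) = of_nat N"
  by (induction N) (simp_all add: const_emb_def)

locale L5 =
  fixes emb :: "'k::{finite,field} \<Rightarrow> 'K::field" and \<psi> :: "'k \<Rightarrow> complex"
    and D :: "('K \<Rightarrow> int) \<Rightarrow> int" and a :: "nat list \<Rightarrow> 'k" and n d m :: nat
    and \<alpha> \<beta> :: "nat \<Rightarrow> 'K \<Rightarrow> 'k"
  assumes ce: "const_emb emb" and chr: "addchar \<psi>" and p0: "\<psi> 0 = 1" and ntriv: "\<exists>x. \<psi> x \<noteq> 1"
    and d2: "2 \<le> d" and sym: "sym_coeffs a" and m1: "1 \<le> m"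
    and al: "\<alpha> \<in> tduals emb (RR_space emb (div_scale d D)) m"
    and be: "\<beta> \<in> tduals emb (RR_space emb (div_scale d D)) m"
    and finP: "finite (RR_space emb D)"
begin

abbreviation "P \<equiv> RR_space emb D"
abbreviation "V \<equiv> RR_space emb (div_scale d D)"
abbreviation "M \<equiv> Mf (\<lambda>js. emb (a js)) n d"

definition Fp where "Fp x = M (\<lambda>_. x)"
definition Gp where "Gp x1 x0 = (\<Sum>p<d. M (\<lambda>q. if q = p then x1 else x0))"
definition Phi where "Phi x0 x1 = pr \<alpha> m (Fp x0) + pr \<beta> m (Gp x1 x0)"

lemma grp: "subgrp (tvecs P k N)"
  by (rule subgrp_tvecs) (auto intro: RR_zero RR_add RR_uminus)

lemma fin_tvecs: "finite (tvecs P k N)"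
  using card_tvecs[OF finP RR_zero] by blast

lemma card_tv: "card (tvecs P k N) = card P ^ ((k + 1) * N)"
  using card_tvecs[OF finP RR_zero] by blast

lemma allinP: "x \<in> tvecs P k N \<Longrightarrow> allin P x"
  by (rule tvecs_allin[OF RR_zero])

lemma V0: "0 \<in> V" by (rule RR_zero)

lemma coefM: "(\<And>p. p < d \<Longrightarrow> allin P (z p)) \<Longrightarrow> coefin V (M z)"
  by (rule coefin_Mf[OF ce])

lemma mlM: "ml d M" by (rule ml_Mf)

lemma symM: "symm d M"
proof (rule symm_Mf)
  fix js js' :: "nat list" assume "mset js = mset js'"
  then show "emb (a js) = emb (a js')" using sym unfolding sym_coeffs_def by metis
qed

lemma coefV_diff: "coefin V f \<Longrightarrow> coefin V g \<Longrightarrow> coefin V (f - g)"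
  by (rule coefin_diff)

lemma pr_diff:
  assumes "\<gamma> \<in> tduals emb V m" "coefin V f" "coefin V g"
  shows "pr \<gamma> k (f - g) = pr \<gamma> k f - pr \<gamma> k g"
proof -
  have "pr \<gamma> k ((f - g) + g) = pr \<gamma> k (f - g) + pr \<gamma> k g"
    by (rule pr_add[OF assms(1) coefin_diff[OF assms(2,3)] assms(3)])
  then show ?thesis by simp
qed

lemma S_eq:
  "S_sum emb \<psi> D a n d m \<alpha> \<beta> =
    (\<Sum>x0\<in>{x \<in> tvecs P m (Suc n). glob_gen emb D n x}. \<Sum>x1\<in>tvecs P m (Suc n). \<psi> (Phi x0 x1))"
  unfolding S_sum_def
proof (intro sum.cong refl)
  fix x0 x1
  have "(\<Sum>l\<le>m. pairing \<alpha> (form_eval emb m a n d x0) l + pairing \<beta> (grad_dot emb m a n d x1 x0) l)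
      = Phi x0 x1"
  proof -
    have "pairing \<alpha> (form_eval emb m a n d x0) l = pairing \<alpha> (fps_nth (Fp x0)) l" if "l \<le> m" for l
      using that by (intro pairing_cong) (simp add: form_eval_fps Fp_def)
    moreover have "pairing \<beta> (grad_dot emb m a n d x1 x0) l = pairing \<beta> (fps_nth (Gp x1 x0)) l" if "l \<le> m" for l
      using that d2 by (intro pairing_cong) (simp add: grad_dot_fps Gp_def)
    ultimately show ?thesis unfolding Phi_def pr_def by (simp add: sum.distrib)
  qed
  then show "psi_m \<psi> m (\<lambda>l. pairing \<alpha> (form_eval emb m a n d x0) l + pairing \<beta> (grad_dot emb m a n d x1 x0) l)
      = \<psi> (Phi x0 x1)"
    by (simp add: psi_m_sum[OF chr p0])
qed

definition Nset where
  "Nset \<gamma> k = {ys :: nat \<Rightarrow> nat \<Rightarrow> nat \<Rightarrow> 'K.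
      (\<forall>p<d - 1. ys p \<in> tvecs P k (Suc n)) \<and>
      (\<forall>p\<ge>d - 1. ys p = (\<lambda>_ _. 0)) \<and>
      (\<forall>i\<le>n. \<forall>y\<in>trunc P k. \<forall>l\<le>k.
          pairing \<gamma> (tmul k (Psi emb k a n d i ys) y) l = 0)}"

lemma N_count_eq: "N_count emb D a n d k \<gamma> = card (Nset \<gamma> k)"
  by (simp add: N_count_def Nset_def)

lemma allin_ev: assumes "y \<in> trunc P k" shows "allin P (ev i y)"
proof -
  have "y l \<in> P" for l using assms RR_zero by (cases "l \<le> k") (auto simp: trunc_def)
  then show ?thesis using RR_zero by (auto simp: allin_def ev_def)
qed

lemma ev_tvecs: "y \<in> trunc P k \<Longrightarrow> i \<le> n \<Longrightarrow> ev i y \<in> tvecs P k (Suc n)"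
  by (auto simp: tvecs_def ev_def trunc_def zero_fun_def RR_zero)

lemma M_snoc_upd:
  assumes "length hs = d - 1"
  shows "M (\<lambda>q. (hs @ [u]) ! q) = M ((\<lambda>q. hs ! q)(d - 1 := u))"
  by (rule ml_dep[OF mlM]) (use assms d2 in \<open>auto simp: nth_append\<close>)

lemma PsiF_mult:
  assumes "length hs = d - 1" "i \<le> n"
  shows "PsiF emb a n d i (\<lambda>p. if p < d - 1 then hs ! p else (\<lambda>_ _. 0)) * Abs_fps y
    = of_nat (fact d) * M (\<lambda>q. (hs @ [ev i y]) ! q)"
proof -
  have dd: "Suc (d - 1) = d" using d2 by simp
  have "M (\<lambda>q. (hs @ [ev i y]) ! q) = Mf (\<lambda>js. emb (a js)) n (Suc (d - 1)) ((\<lambda>q. hs ! q)(d - 1 := ev i y))"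
    using M_snoc_upd[OF assms(1)] dd by simp
  also have "\<dots> = (\<Sum>js\<in>idx n (d - 1). fps_const (emb (a (js @ [i]))) * (\<Prod>p<d - 1. Abs_fps ((hs ! p) (js ! p)))) * Abs_fps y"
    by (rule Mf_last_ev[OF assms(2)])
  finally have e: "M (\<lambda>q. (hs @ [ev i y]) ! q) = (\<Sum>js\<in>idx n (d - 1). fps_const (emb (a (js @ [i]))) * (\<Prod>p<d - 1. Abs_fps ((hs ! p) (js ! p)))) * Abs_fps y" .
  have "PsiF emb a n d i (\<lambda>p. if p < d - 1 then hs ! p else (\<lambda>_ _. 0))
      = of_nat (fact d) * (\<Sum>js\<in>idx n (d - 1). fps_const (emb (a (js @ [i]))) * (\<Prod>p<d - 1. Abs_fps ((hs ! p) (js ! p))))"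
  proof -
    have e1: "fps_const (emb (of_nat (fact d) * a js)) = of_nat (fact d) * fps_const (emb (a js))" for js
    proof -
      have "emb (of_nat (fact d) * a js) = of_nat (fact d) * emb (a js)"
        using ce emb_of_nat[OF ce] by (simp add: const_emb_def)
      moreover have "fps_const (of_nat N * e) = fps_const (of_nat N) * fps_const e" for N and e :: 'K by simp
      ultimately show ?thesis by (simp add: fps_of_nat)
    qed
    have e2: "(\<Prod>p<d - 1. Abs_fps ((if p < d - 1 then hs ! p else (\<lambda>_ _. 0)) (js ! p))) = (\<Prod>p<d - 1. Abs_fps ((hs ! p) (js ! p)))" for js
      by (intro prod.cong) auto
    show ?thesis unfolding PsiF_def by (simp add: e1 e2 sum_distrib_left mult.assoc)
  qed
  then show ?thesis using e by (simp add: mult.assoc)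
qed

lemma condN:
  assumes \<gamma>: "\<gamma> \<in> tduals emb V m" and s: "s \<le> m"
    and U: "\<And>y i. y \<in> trunc P (m - s) \<Longrightarrow> i \<le> n \<Longrightarrow> ev i y \<in> U"
    and hs: "hs \<in> lists_of (tvecs P (m - s) (Suc n)) (d - 1)"
    and cond: "\<forall>u\<in>U. \<psi> (pr \<gamma> m (fps_X ^ s * (of_nat (fact d) * M (\<lambda>q. (hs @ [u]) ! q)))) = 1"
  shows "(\<lambda>p. if p < d - 1 then hs ! p else (\<lambda>_ _. 0)) \<in> Nset \<gamma> (m - s)"
proof -
  define k where "k = m - s"
  define ys where "ys = (\<lambda>p. if p < d - 1 then hs ! p else (\<lambda>_ _. (0::'K)))"
  have len: "length hs = d - 1" and hsin: "set hs \<subseteq> tvecs P k (Suc n)"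
    using hs by (auto simp: lists_of_def k_def)
  have hsP: "allin P (hs ! p)" if "p < d - 1" for p
  proof -
    have "hs ! p \<in> set hs" using len that by simp
    then show ?thesis using hsin allinP by blast
  qed
  define G where "G i y' = of_nat (fact d) * M (\<lambda>q. (hs @ [ev i y']) ! q)" for i y'
  have coefG: "coefin V (G i y')" if "y' \<in> trunc P k" for i y'
    unfolding G_def
  proof (intro coefin_of_nat coefM)
    fix p assume "p < d"
    then show "allin P ((hs @ [ev i y']) ! p)"
      using hsP allin_ev[OF that] len by (cases "p < d - 1") (auto simp: nth_append)
  qed
  have zero: "pr \<gamma> m (fps_X ^ s * G i y') = 0" if i: "i \<le> n" and y': "y' \<in> trunc P k" for i y'
  proof (rule ccontr)
    define v where "v = pr \<gamma> m (fps_X ^ s * G i y')"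
    assume "pr \<gamma> m (fps_X ^ s * G i y') \<noteq> 0"
    then have v0: "v \<noteq> 0" by (simp add: v_def)
    obtain x0 where x0: "\<psi> x0 \<noteq> 1" using ntriv by blast
    define c where "c = x0 / v"
    define y'' where "y'' = (\<lambda>l. emb c * y' l)"
    have y''tr: "y'' \<in> trunc P k"
      using y' RR_emb_mult[OF ce] by (auto simp: trunc_def y''_def)
    have ev'': "ev i y'' = scv (emb c) (ev i y')" by (auto simp: ev_def scv_def fun_eq_iff y''_def)
    have dd: "d - 1 < d" using d2 by simp
    have GG: "G i y'' = fps_const (emb c) * G i y'"
    proof -
      have "M (\<lambda>q. (hs @ [ev i y'']) ! q) = M ((\<lambda>q. hs ! q)(d - 1 := scv (emb c) (ev i y')))"
        using M_snoc_upd[OF len] ev'' by simp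
      also have "\<dots> = fps_const (emb c) * M ((\<lambda>q. hs ! q)(d - 1 := ev i y'))"
        by (rule Mf_scv[OF dd])
      also have "\<dots> = fps_const (emb c) * M (\<lambda>q. (hs @ [ev i y']) ! q)"
        using M_snoc_upd[OF len] by simp
      finally show ?thesis unfolding G_def by (simp add: algebra_simps)
    qed
    have "pr \<gamma> m (fps_X ^ s * G i y'') = pr \<gamma> m (fps_const (emb c) * (fps_X ^ s * G i y'))"
      unfolding GG by (simp add: algebra_simps)
    also have "\<dots> = c * v" unfolding v_def
      by (rule pr_emb[OF \<gamma>]) (rule coefin_Xpow[OF coefG[OF y']])
    also have "\<dots> = x0" using v0 by (simp add: c_def)
    finally have "pr \<gamma> m (fps_X ^ s * G i y'') = x0" .
    moreover have "ev i y'' \<in> U" using U y''tr i by (simp add: k_def)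
    ultimately have "\<psi> x0 = 1" using cond unfolding G_def by force
    then show False using x0 by simp
  qed
  have main: "pairing \<gamma> (tmul k (Psi emb k a n d i ys) y) l = 0"
    if i: "i \<le> n" and y: "y \<in> trunc P k" and l: "l \<le> k" for i y l
  proof -
    define Q where "Q = PsiF emb a n d i ys * Abs_fps y"
    define yt where "yt t = (\<lambda>l. if t \<le> l \<and> l \<le> k then y (l - t) else 0)" for t
    have yt_tr: "yt t \<in> trunc P k" if "t \<le> k" for t
      using y RR_zero by (auto simp: trunc_def yt_def)
    have PG: "PsiF emb a n d i ys * Abs_fps y' = G i y'" for y'
      unfolding G_def ys_def by (rule PsiF_mult[OF len i])
    have cum: "(\<Sum>l\<le>k - t. pairing \<gamma> (fps_nth Q) l) = 0" if t: "t \<le> k" for t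
    proof -
      have "0 = pr \<gamma> m (fps_X ^ s * G i (yt t))" using zero[OF i yt_tr[OF t]] by simp
      also have "\<dots> = pr \<gamma> k (G i (yt t))" unfolding k_def by (rule pr_shift[OF \<gamma> V0 s])
      also have "\<dots> = pr \<gamma> k (PsiF emb a n d i ys * Abs_fps (yt t))" by (simp add: PG)
      also have "\<dots> = pr \<gamma> k (fps_X ^ t * Q)"
      proof (rule pr_cong)
        fix l assume "l \<le> k"
        then have "fps_nth (PsiF emb a n d i ys * Abs_fps (yt t)) l = fps_nth (PsiF emb a n d i ys * (fps_X ^ t * Abs_fps y)) l"
          by (intro fps_mult_nth_cong) (auto simp: yt_def fps_X_power_mult_nth)
        then show "fps_nth (PsiF emb a n d i ys * Abs_fps (yt t)) l = fps_nth (fps_X ^ t * Q) l"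
          by (simp add: Q_def algebra_simps)
      qed
      also have "\<dots> = pr \<gamma> (k - t) Q" by (rule pr_shift[OF \<gamma> V0 t])
      finally show ?thesis by (simp add: pr_def)
    qed
    have "pairing \<gamma> (fps_nth Q) l = 0" by (rule cumulative_zero[OF cum l])
    moreover have "pairing \<gamma> (tmul k (Psi emb k a n d i ys) y) l = pairing \<gamma> (fps_nth Q) l"
    proof (rule pairing_cong)
      fix j assume j: "j \<le> l"
      have "tmul k (Psi emb k a n d i ys) y j = (if j \<le> k then fps_nth (Abs_fps (Psi emb k a n d i ys) * Abs_fps y) j else 0)"
        by (rule tmul_fps) simp
      also have "\<dots> = fps_nth Q j"
        using j l unfolding Q_def by (auto intro!: fps_mult_nth_cong simp: Psi_fps)
      finally show "tmul k (Psi emb k a n d i ys) y j = fps_nth Q j" .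
    qed
    ultimately show ?thesis by simp
  qed
  show ?thesis
    unfolding Nset_def k_def[symmetric]
  proof (intro CollectI conjI allI impI ballI)
    fix p assume "p < d - 1"
    then show "(if p < d - 1 then hs ! p else (\<lambda>_ _. 0)) \<in> tvecs P k (Suc n)"
      using hsin len nth_mem[of p hs] by auto
  next
    fix p assume "d - 1 \<le> p"
    then show "(if p < d - 1 then hs ! p else (\<lambda>_ _. 0)) = (\<lambda>_ _. 0)" by simp
  next
    fix i y l assume "i \<le> n" "y \<in> trunc P k" "l \<le> k"
    then show "pairing \<gamma> (tmul k (Psi emb k a n d i (\<lambda>p. if p < d - 1 then hs ! p else (\<lambda>_ _. 0))) y) l = 0"
      using main unfolding ys_def by blast
  qed
qed

end


lemma cmod_char: "addchar \<psi> \<Longrightarrow> \<psi> 0 = 1 \<Longrightarrow> cmod (\<psi> z) = 1"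
proof -
  assume a: "addchar \<psi>" "\<psi> 0 = 1"
  have c: "cnj (\<psi> z) = \<psi> (- z)" using a(1) by (simp add: addchar_def)
  have "\<psi> z * cnj (\<psi> z) = \<psi> (z + - z)" unfolding c using a(1) unfolding addchar_def by metis
  then have "\<psi> z * cnj (\<psi> z) = 1" using a(2) by simp
  then have "complex_of_real ((cmod (\<psi> z))\<^sup>2) = 1" by (simp only: complex_norm_square)
  then have "(cmod (\<psi> z))\<^sup>2 = 1" by (metis of_real_eq_1_iff)
  then show ?thesis using norm_ge_zero[of "\<psi> z"] by (auto simp: power2_eq_1_iff)
qed

context L5
begin

lemma Gp_ins: "Gp y x = of_nat d * M (ins y 0 (\<lambda>_. x))"
proof -
  have "M (\<lambda>q. if q = p then y else x) = M (ins y 0 (\<lambda>_. x))" if "p < d" for p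
  proof -
    have "(\<lambda>q. if q = p then y else x) = ins y p (\<lambda>_. x)" by (auto simp: ins_def fun_eq_iff)
    then show ?thesis using sym_ins[OF symM that] by simp
  qed
  then show ?thesis unfolding Gp_def by simp
qed

lemma mlN: "ml (d - 1) (\<lambda>w. M (ins y 0 w))" by (rule ml_ins[OF mlM])
lemma symN: "symm (d - 1) (\<lambda>w. M (ins y 0 w))" by (rule symm_ins[OF symM mlM])

lemma fact_d: "(of_nat d :: 'K fps) * of_nat (fact (d - 1)) = of_nat (fact d)"
proof -
  have "fact d = d * fact (d - 1)" using d2 fact_reduce[of d, where 'a=nat] by simp
  then show ?thesis by (metis of_nat_mult)
qed

lemma GpLin:
  assumes "length ks + 2 = d"
  shows "Dl ks (Gp y) x = Dl ks (Gp y) 0 + of_nat (fact d) * M (\<lambda>q. (y # ks @ [x]) ! q)"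
proof -
  have G: "Gp y = (\<lambda>x. of_nat d * M (ins y 0 (\<lambda>_. x)))" by (simp add: Gp_ins fun_eq_iff)
  have l: "length ks + 1 = d - 1" using assms by simp
  have "Dl ks (\<lambda>x. M (ins y 0 (\<lambda>_. x))) x = Dl ks (\<lambda>x. M (ins y 0 (\<lambda>_. x))) 0 + of_nat (fact (d - 1)) * M (ins y 0 (\<lambda>q. (ks @ [x]) ! q))"
    by (rule Dl_lin[OF mlN symN l])
  then show ?thesis unfolding G Dl_cmult ins_nth
    by (simp add: algebra_simps fact_d[symmetric])
qed

lemma GpTop:
  assumes "length ks + 1 = d"
  shows "Dl ks (Gp y) x = of_nat (fact d) * M (\<lambda>q. (y # ks) ! q)"
proof -
  have G: "Gp y = (\<lambda>x. of_nat d * M (ins y 0 (\<lambda>_. x)))" by (simp add: Gp_ins fun_eq_iff)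
  have l: "length ks = d - 1" using assms by simp
  have "Dl ks (\<lambda>x. M (ins y 0 (\<lambda>_. x))) x = of_nat (fact (d - 1)) * M (ins y 0 (\<lambda>q. ks ! q))"
    by (rule Dl_top[OF mlN symN l])
  then show ?thesis unfolding G Dl_cmult ins_nth
    by (simp add: algebra_simps fact_d[symmetric])
qed

lemma FpLin:
  assumes "length ks + 1 = d"
  shows "Dl ks Fp x = Dl ks Fp 0 + of_nat (fact d) * M (\<lambda>q. (ks @ [x]) ! q)"
  unfolding Fp_def by (rule Dl_lin[OF mlM symM assms])

lemma coefFp: "x \<in> tvecs P k N \<Longrightarrow> coefin V (Fp x)"
  unfolding Fp_def by (rule coefM) (simp add: allinP)

lemma coefGp: "x1 \<in> tvecs P k N \<Longrightarrow> x0 \<in> tvecs P k' N' \<Longrightarrow> coefin V (Gp x1 x0)"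
  unfolding Gp_def by (intro coefin_sum coefM) (auto simp: allinP)

lemma M_snoc_add:
  assumes "length hs = d - 1"
  shows "M (\<lambda>q. (hs @ [u + w]) ! q) = M (\<lambda>q. (hs @ [u]) ! q) + M (\<lambda>q. (hs @ [w]) ! q)"
  unfolding M_snoc_upd[OF assms] using ml_add[OF mlM, of "d - 1"] d2 by simp

lemma coefM_list:
  assumes "set hs \<subseteq> tvecs P k N" "length hs = d"
  shows "coefin V (M (\<lambda>q. hs ! q))"
  by (rule coefM) (use assms nth_mem in \<open>auto intro: allinP\<close>)

lemma Gp_add1: "Gp (x + y) x0 = Gp x x0 + Gp y x0"
proof -
  have "M (\<lambda>q. if q = p then x + y else x0) = M (\<lambda>q. if q = p then x else x0) + M (\<lambda>q. if q = p then y else x0)"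
    if "p < d" for p
    using ml_add[OF mlM that, of "\<lambda>_. x0" x y] by (simp add: fun_upd_def)
  then show ?thesis unfolding Gp_def by (simp add: sum.distrib)
qed

definition nf :: "(nat \<Rightarrow> nat \<Rightarrow> 'K) list \<Rightarrow> nat \<Rightarrow> nat \<Rightarrow> nat \<Rightarrow> 'K" where
  "nf hs = (\<lambda>p. if p < d - 1 then hs ! p else (\<lambda>_ _. 0))"

lemma Nset_finite: "finite (Nset \<gamma> k)"
proof -
  have "Nset \<gamma> k \<subseteq> nf ` lists_of (tvecs P k (Suc n)) (d - 1)"
  proof
    fix ys assume ys: "ys \<in> Nset \<gamma> k"
    define hs where "hs = map ys [0..<d - 1]"
    have "nf hs = ys" using ys by (auto simp: nf_def hs_def Nset_def fun_eq_iff)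
    moreover have "hs \<in> lists_of (tvecs P k (Suc n)) (d - 1)" using ys by (auto simp: hs_def lists_of_def Nset_def)
    ultimately show "ys \<in> nf ` lists_of (tvecs P k (Suc n)) (d - 1)" by blast
  qed
  moreover have "finite (lists_of (tvecs P k (Suc n)) (d - 1))" by (rule finite_lists_of[OF fin_tvecs])
  ultimately show ?thesis using finite_subset by blast
qed

lemma count_le:
  assumes "A \<subseteq> lists_of Y (d - 1)" "\<And>hs. hs \<in> A \<Longrightarrow> nf hs \<in> Nset \<gamma> k"
  shows "card A \<le> card (Nset \<gamma> k)"
proof (rule card_inj_on_le[OF _ _ Nset_finite])
  show "inj_on nf A"
  proof (rule inj_onI)
    fix hs hs' assume h: "hs \<in> A" "hs' \<in> A" "nf hs = nf hs'"
    have "length hs = d - 1" "length hs' = d - 1" using h assms(1) by (auto simp: lists_of_def)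
    moreover have "hs ! p = hs' ! p" if "p < d - 1" for p using h(3) that by (metis nf_def)
    ultimately show "hs = hs'" by (metis nth_equalityI)
  qed
  show "nf ` A \<subseteq> Nset \<gamma> k" using assms(2) by blast
qed

lemma sum_ind_le:
  assumes "\<And>hs. hs \<in> lists_of Y (d - 1) \<Longrightarrow> Q hs \<Longrightarrow> nf hs \<in> Nset \<gamma> k" "finite Y"
  shows "(\<Sum>hs\<in>lists_of Y (d - 1). if Q hs then 1 else 0) \<le> real (card (Nset \<gamma> k))"
proof -
  have "(\<Sum>hs\<in>lists_of Y (d - 1). if Q hs then 1 else (0::real)) = real (card {hs \<in> lists_of Y (d - 1). Q hs})"
    by (simp add: sum.If_cases finite_lists_of[OF assms(2)] Int_def)
  also have "card {hs \<in> lists_of Y (d - 1). Q hs} \<le> card (Nset \<gamma> k)"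
    by (rule count_le) (use assms in auto)
  finally show ?thesis by simp
qed

lemma grpX: "subgrp (tvecs P k (Suc n))" by (rule grp)

lemma pr_Dl:
  assumes "\<gamma> \<in> tduals emb V m" "set ks \<subseteq> tvecs P k N" "x \<in> tvecs P k N"
    "\<And>x. x \<in> tvecs P k N \<Longrightarrow> coefin V (G x)"
  shows "Dl ks (\<lambda>x. pr \<gamma> m (G x)) x = pr \<gamma> m (Dl ks G x)"
  by (rule Dl_hom_on[OF grp assms(2) _ assms(3), where W = "{f. coefin V f}"])
     (use assms in \<open>auto intro: coefin_diff pr_diff\<close>)

lemma Dl_coef:
  assumes "set ks \<subseteq> tvecs P k N" "x \<in> tvecs P k N" "\<And>x. x \<in> tvecs P k N \<Longrightarrow> coefin V (G x)"
  shows "coefin V (Dl ks G x)"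
  using Dl_in[OF grp assms(1) _ assms(2), where W = "{f. coefin V f}" and G = G] assms(3)
  by (auto intro: coefin_diff)

lemma beta_bound:
  "cmod (S_sum emb \<psi> D a n d m \<alpha> \<beta>) ^ (2 ^ (d - 2)) * real (card (tvecs P m (Suc n))) ^ (d - 1)
   \<le> real (card (tvecs P m (Suc n))) ^ (2 * 2 ^ (d - 2)) * real (card (Nset \<beta> m))"
proof -
  define X where "X = tvecs P m (Suc n)"
  define N :: nat where "N = 2 ^ (d - 2)"
  define j where "j = d - 2"
  define t where "t = real (card X)"
  define B where "B y x = pr \<beta> m (Gp y x)" for y x
  define b where "b y = cmod (\<Sum>x\<in>X. \<psi> (B y x))" for y
  define ind where "ind hs = (if nf hs \<in> Nset \<beta> m then 1 else (0::real))" for hs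
  have finX: "finite X" unfolding X_def by (rule fin_tvecs)
  have gX: "subgrp X" unfolding X_def by (rule grp)
  have N1: "N \<ge> 1" unfolding N_def by simp
  have t0: "t \<ge> 0" unfolding t_def by simp
  have dj: "d - 1 = Suc j" using d2 by (simp add: j_def)
  have tN: "t ^ (N - 1) * t = t ^ N"
  proof -
    have "N = Suc (N - 1)" using N1 by simp
    then show ?thesis by (metis power_Suc2)
  qed
  have Badd: "B (u + w) x0 = B u x0 + B w x0" if "u \<in> X" "w \<in> X" "x0 \<in> X" for u w x0
    unfolding B_def Gp_add1 using that unfolding X_def by (intro pr_add[OF be] coefGp)
  have orth: "(\<Sum>x1\<in>X. \<psi> (B x1 x0)) = complex_of_real (if \<forall>x1\<in>X. \<psi> (B x1 x0) = 1 then t else 0)"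
    if "x0 \<in> X" for x0
    using char_orth[OF chr gX finX, of "\<lambda>x1. B x1 x0"] Badd that by (simp add: t_def)
  have s1: "cmod (S_sum emb \<psi> D a n d m \<alpha> \<beta>) \<le> (\<Sum>y\<in>X. b y)"
  proof -
    have "cmod (S_sum emb \<psi> D a n d m \<alpha> \<beta>) \<le> (\<Sum>x0\<in>{x \<in> X. glob_gen emb D n x}. cmod (\<Sum>x1\<in>X. \<psi> (Phi x0 x1)))"
      unfolding S_eq X_def by (rule norm_sum)
    also have "\<dots> = (\<Sum>x0\<in>{x \<in> X. glob_gen emb D n x}. cmod (\<Sum>x1\<in>X. \<psi> (B x1 x0)))"
    proof (intro sum.cong refl)
      fix x0
      have "(\<Sum>x1\<in>X. \<psi> (Phi x0 x1)) = \<psi> (pr \<alpha> m (Fp x0)) * (\<Sum>x1\<in>X. \<psi> (B x1 x0))"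
        using chr by (simp add: Phi_def B_def addchar_def sum_distrib_left)
      then show "cmod (\<Sum>x1\<in>X. \<psi> (Phi x0 x1)) = cmod (\<Sum>x1\<in>X. \<psi> (B x1 x0))"
        by (simp add: norm_mult cmod_char[OF chr p0])
    qed
    also have "\<dots> \<le> (\<Sum>x0\<in>X. cmod (\<Sum>x1\<in>X. \<psi> (B x1 x0)))"
      by (rule sum_mono2[OF finX]) auto
    also have "\<dots> = (\<Sum>x0\<in>X. (if \<forall>x1\<in>X. \<psi> (B x1 x0) = 1 then t else 0))"
      using orth t0 by (intro sum.cong refl) auto
    also have "\<dots> = cmod (\<Sum>x0\<in>X. \<Sum>x1\<in>X. \<psi> (B x1 x0))"
    proof -
      have "(\<Sum>x0\<in>X. \<Sum>x1\<in>X. \<psi> (B x1 x0)) = (\<Sum>x0\<in>X. complex_of_real (if \<forall>x1\<in>X. \<psi> (B x1 x0) = 1 then t else 0))"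
        using orth by (intro sum.cong) auto
      also have "\<dots> = complex_of_real (\<Sum>x0\<in>X. (if \<forall>x1\<in>X. \<psi> (B x1 x0) = 1 then t else 0))"
        by (rule of_real_sum[symmetric])
      finally have e: "(\<Sum>x0\<in>X. \<Sum>x1\<in>X. \<psi> (B x1 x0)) = complex_of_real (\<Sum>x0\<in>X. (if \<forall>x1\<in>X. \<psi> (B x1 x0) = 1 then t else 0))" .
      have nn: "(\<Sum>x0\<in>X. (if \<forall>x1\<in>X. \<psi> (B x1 x0) = 1 then t else 0)) \<ge> 0"
        using t0 by (intro sum_nonneg) auto
      show ?thesis by (simp only: e norm_of_real abs_of_nonneg[OF nn])
    qed
    also have "\<dots> = cmod (\<Sum>x1\<in>X. \<Sum>x0\<in>X. \<psi> (B x1 x0))" by (rule arg_cong[where f = cmod], rule sum.swap)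
    also have "\<dots> \<le> (\<Sum>y\<in>X. b y)" unfolding b_def by (rule norm_sum)
    finally show ?thesis .
  qed
  have s4: "cmod (\<Sum>x\<in>X. Dcl ks (\<lambda>x. \<psi> (B y x)) x) \<le> t * ind (y # ks)"
    if y: "y \<in> X" and ks: "ks \<in> lists_of X j" for y ks
  proof -
    have ksX: "set ks \<subseteq> X" and lk: "length ks + 2 = d" using ks d2 by (auto simp: lists_of_def j_def)
    define c0 where "c0 = Dl ks (Gp y) 0"
    define E where "E x = of_nat (fact d) * M (\<lambda>q. (y # ks @ [x]) ! q)" for x
    define L where "L x = pr \<beta> m (E x)" for x
    have coefGy: "coefin V (Gp y x)" if "x \<in> X" for x using y that unfolding X_def by (rule coefGp)
    have c0c: "coefin V c0" unfolding c0_def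
      by (rule Dl_coef[where k = m and N = "Suc n"]) (use ksX coefGy subgrp_zero[OF gX] in \<open>auto simp: X_def\<close>)
    have Ec: "coefin V (E x)" if "x \<in> X" for x
      unfolding E_def using ksX y that lk unfolding X_def
      by (intro coefin_of_nat coefM_list[where k = m and N = "Suc n"]) auto
    have val: "Dl ks (\<lambda>x. B y x) x = pr \<beta> m c0 + L x" if x: "x \<in> X" for x
    proof -
      have "Dl ks (\<lambda>x. B y x) x = pr \<beta> m (Dl ks (Gp y) x)"
        unfolding B_def using ksX x coefGy unfolding X_def by (intro pr_Dl[OF be]) auto
      also have "Dl ks (Gp y) x = c0 + E x" unfolding c0_def E_def by (rule GpLin[OF lk])
      also have "pr \<beta> m (c0 + E x) = pr \<beta> m c0 + L x" unfolding L_def by (rule pr_add[OF be c0c Ec[OF x]])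
      finally show ?thesis .
    qed
    have Ladd: "L (u + w) = L u + L w" if "u \<in> X" "w \<in> X" for u w
    proof -
      have "E (u + w) = E u + E w" unfolding E_def
        using M_snoc_add[of "y # ks" u w] lk by (simp add: algebra_simps)
      then show ?thesis unfolding L_def using Ec that by (simp add: pr_add[OF be])
    qed
    have "(\<Sum>x\<in>X. Dcl ks (\<lambda>x. \<psi> (B y x)) x) = (\<Sum>x\<in>X. \<psi> (pr \<beta> m c0) * \<psi> (L x))"
      using val chr by (intro sum.cong refl) (simp add: Dcl_char addchar_def)
    also have "\<dots> = \<psi> (pr \<beta> m c0) * (\<Sum>x\<in>X. \<psi> (L x))" by (simp add: sum_distrib_left)
    finally have "cmod (\<Sum>x\<in>X. Dcl ks (\<lambda>x. \<psi> (B y x)) x) = cmod (\<Sum>x\<in>X. \<psi> (L x))"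
      by (simp add: norm_mult cmod_char[OF chr p0])
    also have "\<dots> = (if \<forall>x\<in>X. \<psi> (L x) = 1 then t else 0)"
      using char_orth[OF chr gX finX, of L] Ladd t0 by (simp add: t_def)
    also have "\<dots> \<le> t * ind (y # ks)"
    proof (cases "\<forall>x\<in>X. \<psi> (L x) = 1")
      case True
      have "nf (y # ks) \<in> Nset \<beta> (m - 0)"
        unfolding nf_def
      proof (rule condN[OF be, where U = X])
        show "0 \<le> m" by simp
        show "ev i y' \<in> X" if "y' \<in> trunc P (m - 0)" "i \<le> n" for y' i
          using ev_tvecs that unfolding X_def by simp
        show "y # ks \<in> lists_of (tvecs P (m - 0) (Suc n)) (d - 1)"
          using y ksX lk unfolding X_def by (auto simp: lists_of_def)
        show "\<forall>u\<in>X. \<psi> (pr \<beta> m (fps_X ^ 0 * (of_nat (fact d) * M (\<lambda>q. ((y # ks) @ [u]) ! q)))) = 1"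
          using True by (simp add: L_def E_def)
      qed
      then show ?thesis using True t0 by (simp add: ind_def)
    next
      case False
      have "0 \<le> t * ind (y # ks)" using t0 by (simp add: ind_def)
      then show ?thesis using False by (subst if_not_P) auto
    qed
    finally show ?thesis .
  qed
  have s3: "b y ^ N * t ^ j \<le> t ^ N * (\<Sum>ks\<in>lists_of X j. ind (y # ks))" if y: "y \<in> X" for y
  proof -
    have "b y ^ N * t ^ j \<le> t ^ (N - 1) * (\<Sum>ks\<in>lists_of X j. cmod (\<Sum>x\<in>X. Dcl ks (\<lambda>x. \<psi> (B y x)) x))"
      unfolding b_def t_def N_def j_def by (rule weyl[OF gX finX gX order_refl])
    also have "\<dots> \<le> t ^ (N - 1) * (\<Sum>ks\<in>lists_of X j. t * ind (y # ks))"
      by (intro mult_left_mono sum_mono s4[OF y]) (use t0 in auto)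
    also have "\<dots> = t ^ (N - 1) * t * (\<Sum>ks\<in>lists_of X j. ind (y # ks))"
      by (simp add: sum_distrib_left mult.assoc)
    also have "\<dots> = t ^ N * (\<Sum>ks\<in>lists_of X j. ind (y # ks))" by (simp only: tN)
    finally show ?thesis .
  qed
  have s5: "(\<Sum>y\<in>X. \<Sum>ks\<in>lists_of X j. ind (y # ks)) \<le> real (card (Nset \<beta> m))"
  proof -
    have "(\<Sum>y\<in>X. \<Sum>ks\<in>lists_of X j. ind (y # ks)) = (\<Sum>hs\<in>lists_of X (d - 1). ind hs)"
      unfolding dj by (simp add: sum_lists_of_Suc)
    also have "\<dots> \<le> real (card (Nset \<beta> m))"
      unfolding ind_def by (rule sum_ind_le[OF _ finX]) simp
    finally show ?thesis .
  qed
  define cS where "cS = cmod (S_sum emb \<psi> D a n d m \<alpha> \<beta>)"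
  have b0: "b y \<ge> 0" for y by (simp add: b_def)
  have "cS ^ N \<le> (\<Sum>y\<in>X. b y) ^ N" unfolding cS_def by (rule power_mono[OF s1]) simp
  also have "\<dots> \<le> t ^ (N - 1) * (\<Sum>y\<in>X. b y ^ N)"
    unfolding N_def t_def by (rule power_mean_2[OF finX]) (simp add: b0)
  finally have c1: "cS ^ N \<le> t ^ (N - 1) * (\<Sum>y\<in>X. b y ^ N)" .
  have c2: "(\<Sum>y\<in>X. b y ^ N) * t ^ j \<le> t ^ N * real (card (Nset \<beta> m))"
  proof -
    have "(\<Sum>y\<in>X. b y ^ N) * t ^ j = (\<Sum>y\<in>X. b y ^ N * t ^ j)" by (simp add: sum_distrib_right)
    also have "\<dots> \<le> (\<Sum>y\<in>X. t ^ N * (\<Sum>ks\<in>lists_of X j. ind (y # ks)))" by (intro sum_mono s3)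
    also have "\<dots> = t ^ N * (\<Sum>y\<in>X. \<Sum>ks\<in>lists_of X j. ind (y # ks))" by (simp add: sum_distrib_left)
    also have "\<dots> \<le> t ^ N * real (card (Nset \<beta> m))" by (intro mult_left_mono s5) (use t0 in simp)
    finally show ?thesis .
  qed
  have "cS ^ N * t ^ j \<le> t ^ (N - 1) * ((\<Sum>y\<in>X. b y ^ N) * t ^ j)"
    using mult_right_mono[OF c1, of "t ^ j"] t0 by (simp add: mult.assoc)
  also have "\<dots> \<le> t ^ (N - 1) * (t ^ N * real (card (Nset \<beta> m)))"
    by (intro mult_left_mono c2) (use t0 in simp)
  finally have c3: "cS ^ N * t ^ j \<le> t ^ (N - 1) * (t ^ N * real (card (Nset \<beta> m)))" .
  have "cS ^ N * t ^ (d - 1) = (cS ^ N * t ^ j) * t"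
    unfolding dj by (simp add: algebra_simps)
  also have "\<dots> \<le> t ^ (N - 1) * (t ^ N * real (card (Nset \<beta> m))) * t"
    by (rule mult_right_mono[OF c3 t0])
  also have "\<dots> = t ^ (2 * N) * real (card (Nset \<beta> m))"
  proof -
    have "t ^ (N - 1) * (t ^ N * real (card (Nset \<beta> m))) * t = (t ^ (N - 1) * t) * t ^ N * real (card (Nset \<beta> m))"
      by (simp only: mult_ac)
    also have "\<dots> = t ^ (2 * N) * real (card (Nset \<beta> m))" unfolding tN by (simp add: mult_2 power_add)
    finally show ?thesis .
  qed
  finally show ?thesis unfolding cS_def t_def X_def N_def by simp
qed

end


context L5
begin

lemma split_sum:
  assumes mp: "1 \<le> mp" "mp \<le> m" "m + 1 \<le> 2 * mp"
  shows "(\<Sum>x\<in>tvecs P m (Suc n). f x) = (\<Sum>u\<in>tvecs P (mp - 1) (Suc n). \<Sum>h\<in>tvecs P (m - mp) (Suc n). f (u + tshv mp h))"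
proof -
  define U where "U = tvecs P (mp - 1) (Suc n)"
  define H where "H = tvecs P (m - mp) (Suc n)"
  define X where "X = tvecs P m (Suc n)"
  define lo where "lo x = (\<lambda>j l. if l < mp then x j l else 0)" for x :: "nat \<Rightarrow> nat \<Rightarrow> 'K"
  define hi where "hi x = (\<lambda>j l. if l \<le> m - mp then x j (l + mp) else 0)" for x :: "nat \<Rightarrow> nat \<Rightarrow> 'K"
  have "(\<Sum>x\<in>X. f x) = (\<Sum>uh\<in>U \<times> H. f (fst uh + tshv mp (snd uh)))"
  proof (rule sum.reindex_bij_witness[where j = "\<lambda>x. (lo x, hi x)" and i = "\<lambda>uh. fst uh + tshv mp (snd uh)"])
    fix uh assume uh: "uh \<in> U \<times> H"
    obtain u h where [simp]: "uh = (u, h)" by (cases uh)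
    have u: "u \<in> U" and h: "h \<in> H" using uh by auto
    have u0: "u j l = 0" if "mp \<le> l" for j l
    proof (cases "j < Suc n")
      case True then show ?thesis using u that mp unfolding U_def by (auto simp: tvecs_def trunc_def)
    next
      case False then show ?thesis using u unfolding U_def by (auto simp: tvecs_def)
    qed
    have h0: "h j l = 0" if "m - mp < l" for j l
    proof (cases "j < Suc n")
      case True then show ?thesis using h that unfolding H_def by (auto simp: tvecs_def trunc_def)
    next
      case False then show ?thesis using h unfolding H_def by (auto simp: tvecs_def)
    qed
    show "(lo (fst uh + tshv mp (snd uh)), hi (fst uh + tshv mp (snd uh))) = uh"
      using u0 h0 mp by (auto simp: lo_def hi_def tshv_def fun_eq_iff)
    show "fst uh + tshv mp (snd uh) \<in> X"
      using u h mp unfolding U_def H_def X_def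
      by (auto simp: tshv_def tvecs_def trunc_def RR_zero intro!: RR_add)
  next
    fix x assume x: "x \<in> X"
    have x0: "x j l = 0" if "m < l" for j l
    proof (cases "j < Suc n")
      case True then show ?thesis using x that unfolding X_def by (auto simp: tvecs_def trunc_def)
    next
      case False then show ?thesis using x unfolding X_def by (auto simp: tvecs_def)
    qed
    have e: "fst (lo x, hi x) + tshv mp (snd (lo x, hi x)) = x"
      using x0 mp by (auto simp: lo_def hi_def tshv_def fun_eq_iff)
    show "fst (lo x, hi x) + tshv mp (snd (lo x, hi x)) = x" by (rule e)
    show "(lo x, hi x) \<in> U \<times> H"
      using x mp unfolding X_def U_def H_def
      by (auto simp: lo_def hi_def tvecs_def trunc_def RR_zero zero_fun_def)
    show "f (fst (lo x, hi x) + tshv mp (snd (lo x, hi x))) = f x" by (simp only: e)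
  qed
  then show ?thesis unfolding U_def H_def X_def by (simp add: sum.cartesian_product case_prod_beta)
qed

lemma gg_shift:
  assumes "1 \<le> mp"
  shows "glob_gen emb D n (u + tshv mp h) = glob_gen emb D n u"
  using assms by (simp add: glob_gen_def tshv_def)

definition L1 where "L1 u h = (\<Sum>p<d. M (\<lambda>q. if q = p then h else u))"
definition L2 where "L2 x1 u h = (\<Sum>p<d - 1. M (ins x1 0 (\<lambda>q. if q = p then h else u)))"
definition ell where "ell mp u x1 h = pr \<alpha> m (fps_X ^ mp * L1 u h) + pr \<beta> m (fps_X ^ mp * (of_nat d * L2 x1 u h))"

lemma ins_upd: "ins y 0 (z(p := v)) = (ins y 0 z)(Suc p := v)"
  by (auto simp: ins_def fun_eq_iff)

lemma Fp_eps: "\<exists>R. Fp (u + tshv mp h) = Fp u + fps_X ^ mp * L1 u h + fps_X ^ mp * fps_X ^ mp * R"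
  unfolding Fp_def L1_def
  by (rule eps_expand[OF mlM]) (rule Mf_tsh)

lemma Gp_eps: "\<exists>R. Gp x1 (u + tshv mp h) = Gp x1 u + fps_X ^ mp * (of_nat d * L2 x1 u h) + fps_X ^ mp * fps_X ^ mp * R"
proof -
  have "\<exists>R. M (ins x1 0 (\<lambda>_. u + tshv mp h)) = M (ins x1 0 (\<lambda>_. u)) + fps_X ^ mp * L2 x1 u h + fps_X ^ mp * fps_X ^ mp * R"
    unfolding L2_def
  proof (rule eps_expand[OF mlN])
    fix z p w assume p: "p < d - 1"
    then have "Suc p < d" by simp
    then show "M (ins x1 0 (z(p := tshv mp w))) = fps_X ^ mp * M (ins x1 0 (z(p := w)))"
      unfolding ins_upd by (rule Mf_tsh)
  qed
  then obtain R where R: "M (ins x1 0 (\<lambda>_. u + tshv mp h)) = M (ins x1 0 (\<lambda>_. u)) + fps_X ^ mp * L2 x1 u h + fps_X ^ mp * fps_X ^ mp * R" by blast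
  show ?thesis
    by (rule exI[of _ "of_nat d * R"]) (simp add: Gp_ins R algebra_simps)
qed

lemma coefL1: "allin P u \<Longrightarrow> allin P h \<Longrightarrow> coefin V (L1 u h)"
  unfolding L1_def by (intro coefin_sum coefM) auto

lemma coefL2: "allin P x1 \<Longrightarrow> allin P u \<Longrightarrow> allin P h \<Longrightarrow> coefin V (L2 x1 u h)"
  unfolding L2_def by (intro coefin_sum coefM) (auto simp: ins_def)

lemma X2_vanish:
  assumes "m + 1 \<le> 2 * mp" "l \<le> m"
  shows "fps_nth (fps_X ^ mp * fps_X ^ mp * R) l = 0"
proof -
  have "fps_X ^ mp * fps_X ^ mp * R = fps_X ^ (2 * mp) * R" by (simp add: power_add[symmetric] mult_2)
  then show ?thesis using assms by (simp add: fps_X_power_mult_nth)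
qed

lemma Phi_shift:
  assumes mp: "m + 1 \<le> 2 * mp" and u: "allin P u" and h: "allin P h" and x1: "allin P x1"
  shows "Phi (u + tshv mp h) x1 = Phi u x1 + ell mp u x1 h"
proof -
  have cFu: "coefin V (Fp u)" unfolding Fp_def by (rule coefM) (use u in simp)
  have cGu: "coefin V (Gp x1 u)" unfolding Gp_def by (intro coefin_sum coefM) (use u x1 in auto)
  have cL1: "coefin V (fps_X ^ mp * L1 u h)" by (intro coefin_Xpow coefL1 u h)
  have cL2: "coefin V (fps_X ^ mp * (of_nat d * L2 x1 u h))" by (intro coefin_Xpow coefin_of_nat coefL2 u h x1)
  obtain R where R: "Fp (u + tshv mp h) = Fp u + fps_X ^ mp * L1 u h + fps_X ^ mp * fps_X ^ mp * R"
    using Fp_eps by blast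
  obtain R' where R': "Gp x1 (u + tshv mp h) = Gp x1 u + fps_X ^ mp * (of_nat d * L2 x1 u h) + fps_X ^ mp * fps_X ^ mp * R'"
    using Gp_eps by blast
  have "pr \<alpha> m (Fp (u + tshv mp h)) = pr \<alpha> m (Fp u + fps_X ^ mp * L1 u h)"
    unfolding R by (rule pr_cong) (simp add: X2_vanish[OF mp])
  also have "\<dots> = pr \<alpha> m (Fp u) + pr \<alpha> m (fps_X ^ mp * L1 u h)" by (rule pr_add[OF al cFu cL1])
  finally have a1: "pr \<alpha> m (Fp (u + tshv mp h)) = pr \<alpha> m (Fp u) + pr \<alpha> m (fps_X ^ mp * L1 u h)" .
  have "pr \<beta> m (Gp x1 (u + tshv mp h)) = pr \<beta> m (Gp x1 u + fps_X ^ mp * (of_nat d * L2 x1 u h))"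
    unfolding R' by (rule pr_cong) (simp add: X2_vanish[OF mp])
  also have "\<dots> = pr \<beta> m (Gp x1 u) + pr \<beta> m (fps_X ^ mp * (of_nat d * L2 x1 u h))" by (rule pr_add[OF be cGu cL2])
  finally have b1: "pr \<beta> m (Gp x1 (u + tshv mp h)) = pr \<beta> m (Gp x1 u) + pr \<beta> m (fps_X ^ mp * (of_nat d * L2 x1 u h))" .
  show ?thesis unfolding Phi_def ell_def a1 b1 by (simp add: algebra_simps)
qed

lemma ell_add:
  assumes u: "allin P u" and x1: "allin P x1" and h: "allin P h" and h': "allin P h'"
  shows "ell mp u x1 (h + h') = ell mp u x1 h + ell mp u x1 h'"
proof -
  have "L1 u (h + h') = L1 u h + L1 u h'"
  proof -
    have "M (\<lambda>q. if q = p then h + h' else u) = M (\<lambda>q. if q = p then h else u) + M (\<lambda>q. if q = p then h' else u)"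
      if "p < d" for p
      using ml_add[OF mlM that, of "\<lambda>_. u" h h'] by (simp add: fun_upd_def)
    then show ?thesis unfolding L1_def by (simp add: sum.distrib)
  qed
  moreover have "L2 x1 u (h + h') = L2 x1 u h + L2 x1 u h'"
  proof -
    have "M (ins x1 0 (\<lambda>q. if q = p then h + h' else u)) = M (ins x1 0 (\<lambda>q. if q = p then h else u)) + M (ins x1 0 (\<lambda>q. if q = p then h' else u))"
      if "p < d - 1" for p
      using ml_add[OF mlN[of x1] that, of "\<lambda>_. u" h h'] by (simp add: fun_upd_def)
    then show ?thesis unfolding L2_def by (simp add: sum.distrib)
  qed
  moreover have "coefin V (fps_X ^ mp * L1 u h)" "coefin V (fps_X ^ mp * L1 u h')"
    "coefin V (fps_X ^ mp * (of_nat d * L2 x1 u h))" "coefin V (fps_X ^ mp * (of_nat d * L2 x1 u h'))"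
    using u x1 h h' by (intro coefin_Xpow coefin_of_nat coefL1 coefL2; simp)+
  ultimately show ?thesis unfolding ell_def
    by (simp add: algebra_simps pr_add[OF al] pr_add[OF be])
qed

lemma tsh_in:
  assumes "h \<in> tvecs P (m - mp) (Suc n)" "mp \<le> m"
  shows "tshv mp h \<in> tvecs P m (Suc n)"
  using assms by (auto simp: tshv_def tvecs_def trunc_def RR_zero)

lemma nth_tsh_upd: "(\<lambda>q. ((tshv mp h # ks) @ [u]) ! q) = (\<lambda>q. ((h # ks) @ [u]) ! q)(0 := tshv mp h)"
  by (auto simp: fun_eq_iff nth_Cons split: nat.split)

lemma nth_upd_triv: "(\<lambda>q. ((h # ks) @ [u]) ! q)(0 := h) = (\<lambda>q. ((h # ks) @ [u]) ! q)"
  by (auto simp: fun_eq_iff)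

lemma alpha_bound:
  assumes mp: "1 \<le> mp" "mp \<le> m" "m + 1 \<le> 2 * mp"
  shows "cmod (S_sum emb \<psi> D a n d m \<alpha> \<beta>) ^ (2 ^ (d - 2)) * real (card (tvecs P (m - mp) (Suc n))) ^ (d - 1)
   \<le> real (card (tvecs P m (Suc n))) ^ (2 * 2 ^ (d - 2)) * real (card (Nset \<alpha> (m - mp)))"
proof -
  define X where "X = tvecs P m (Suc n)"
  define U where "U = tvecs P (mp - 1) (Suc n)"
  define H where "H = tvecs P (m - mp) (Suc n)"
  define N :: nat where "N = 2 ^ (d - 2)"
  define j where "j = d - 2"
  define t where "t = real (card X)"
  define tU where "tU = real (card U)"
  define tH where "tH = real (card H)"
  define nA where "nA = real (card (Nset \<alpha> (m - mp)))"
  define bb where "bb x1 h = cmod (\<Sum>u\<in>U. \<psi> (ell mp u x1 h))" for x1 h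
  define ind where "ind hs = (if nf hs \<in> Nset \<alpha> (m - mp) then 1 else (0::real))" for hs
  have finX: "finite X" and finU: "finite U" and finH: "finite H" unfolding X_def U_def H_def by (rule fin_tvecs)+
  have gX: "subgrp X" and gU: "subgrp U" and gH: "subgrp H" unfolding X_def U_def H_def by (rule grp)+
  have HU: "H \<subseteq> U" unfolding H_def U_def by (rule tvecs_mono[OF RR_zero]) (use mp in simp)
  have UX: "U \<subseteq> X" unfolding X_def U_def by (rule tvecs_mono[OF RR_zero]) (use mp in simp)
  have HX: "H \<subseteq> X" using HU UX by blast
  have N1: "N \<ge> 1" unfolding N_def by simp
  have t0: "t \<ge> 0" "tU \<ge> 0" "tH \<ge> 0" "nA \<ge> 0" by (simp_all add: t_def tU_def tH_def nA_def)
  have dj: "d - 1 = Suc j" using d2 by (simp add: j_def)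
  have tUH: "tU * tH = t"
  proof -
    have "(mp - 1 + 1) * Suc n + (m - mp + 1) * Suc n = (m + 1) * Suc n" using mp
      by (simp add: add_mult_distrib[symmetric])
    then have "card U * card H = card X" unfolding U_def H_def X_def card_tv
      by (simp only: power_add[symmetric])
    then show ?thesis unfolding tU_def tH_def t_def by (metis of_nat_mult)
  qed
  have allX: "allin P x" if "x \<in> X" for x using that unfolding X_def by (rule allinP)
  have allU: "allin P x" if "x \<in> U" for x using that unfolding U_def by (rule allinP)
  have allH: "allin P x" if "x \<in> H" for x using that unfolding H_def by (rule allinP)
  have tshX: "tshv mp h \<in> X" if "h \<in> H" for h using tsh_in[OF _ mp(2)] that unfolding H_def X_def by blast
  have orthH: "(\<Sum>h\<in>H. \<psi> (ell mp u x1 h)) = complex_of_real (if \<forall>h\<in>H. \<psi> (ell mp u x1 h) = 1 then tH else 0)"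
    if "u \<in> U" "x1 \<in> X" for u x1
    using char_orth[OF chr gH finH, of "ell mp u x1"] ell_add[OF allU[OF that(1)] allX[OF that(2)] allH allH]
    by (simp add: tH_def)
  have sf: "cmod (S_sum emb \<psi> D a n d m \<alpha> \<beta>) \<le> (\<Sum>x1\<in>X. \<Sum>h\<in>H. bb x1 h)"
  proof -
    have "S_sum emb \<psi> D a n d m \<alpha> \<beta> = (\<Sum>x1\<in>X. \<Sum>x0\<in>{x \<in> X. glob_gen emb D n x}. \<psi> (Phi x0 x1))"
      unfolding S_eq X_def by (rule sum.swap)
    also have "\<dots> = (\<Sum>x1\<in>X. \<Sum>u\<in>U. if glob_gen emb D n u then \<psi> (Phi u x1) * (\<Sum>h\<in>H. \<psi> (ell mp u x1 h)) else 0)"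
    proof (rule sum.cong[OF refl])
      fix x1 assume x1: "x1 \<in> X"
      have "(\<Sum>x0\<in>{x \<in> X. glob_gen emb D n x}. \<psi> (Phi x0 x1)) = (\<Sum>x0\<in>X. if glob_gen emb D n x0 then \<psi> (Phi x0 x1) else 0)"
        by (rule sum.inter_filter[OF finX])
      also have "\<dots> = (\<Sum>u\<in>U. \<Sum>h\<in>H. if glob_gen emb D n (u + tshv mp h) then \<psi> (Phi (u + tshv mp h) x1) else 0)"
        unfolding X_def U_def H_def by (rule split_sum[OF mp])
      also have "\<dots> = (\<Sum>u\<in>U. if glob_gen emb D n u then \<psi> (Phi u x1) * (\<Sum>h\<in>H. \<psi> (ell mp u x1 h)) else 0)"
      proof (rule sum.cong[OF refl])
        fix u assume u: "u \<in> U"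
        have "\<psi> (Phi (u + tshv mp h) x1) = \<psi> (Phi u x1) * \<psi> (ell mp u x1 h)" if "h \<in> H" for h
          using Phi_shift[OF mp(3) allU[OF u] allH[OF that] allX[OF x1]] chr by (simp add: addchar_def)
        then show "(\<Sum>h\<in>H. if glob_gen emb D n (u + tshv mp h) then \<psi> (Phi (u + tshv mp h) x1) else 0) =
            (if glob_gen emb D n u then \<psi> (Phi u x1) * (\<Sum>h\<in>H. \<psi> (ell mp u x1 h)) else 0)"
          by (simp add: gg_shift[OF mp(1)] sum_distrib_left)
      qed
      finally show "(\<Sum>x0\<in>{x \<in> X. glob_gen emb D n x}. \<psi> (Phi x0 x1)) =
          (\<Sum>u\<in>U. if glob_gen emb D n u then \<psi> (Phi u x1) * (\<Sum>h\<in>H. \<psi> (ell mp u x1 h)) else 0)" .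
    qed
    finally have Se: "S_sum emb \<psi> D a n d m \<alpha> \<beta> = (\<Sum>x1\<in>X. \<Sum>u\<in>U. if glob_gen emb D n u then \<psi> (Phi u x1) * (\<Sum>h\<in>H. \<psi> (ell mp u x1 h)) else 0)" .
    have "cmod (S_sum emb \<psi> D a n d m \<alpha> \<beta>) \<le> (\<Sum>x1\<in>X. \<Sum>u\<in>U. cmod (if glob_gen emb D n u then \<psi> (Phi u x1) * (\<Sum>h\<in>H. \<psi> (ell mp u x1 h)) else 0))"
      unfolding Se by (rule order_trans[OF norm_sum sum_mono[OF norm_sum]])
    also have "\<dots> \<le> (\<Sum>x1\<in>X. \<Sum>u\<in>U. cmod (\<Sum>h\<in>H. \<psi> (ell mp u x1 h)))"
      by (intro sum_mono) (simp add: norm_mult cmod_char[OF chr p0])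
    also have "\<dots> \<le> (\<Sum>x1\<in>X. \<Sum>h\<in>H. bb x1 h)"
    proof (rule sum_mono)
      fix x1 assume x1: "x1 \<in> X"
      define r where "r u = (if \<forall>h\<in>H. \<psi> (ell mp u x1 h) = 1 then tH else 0)" for u
      have r0: "r u \<ge> 0" for u using t0 by (simp add: r_def)
      have "(\<Sum>u\<in>U. cmod (\<Sum>h\<in>H. \<psi> (ell mp u x1 h))) = (\<Sum>u\<in>U. r u)"
        using orthH[OF _ x1] r0 by (intro sum.cong refl) (simp add: r_def)
      also have "\<dots> = cmod (\<Sum>u\<in>U. \<Sum>h\<in>H. \<psi> (ell mp u x1 h))"
      proof -
        have "(\<Sum>u\<in>U. \<Sum>h\<in>H. \<psi> (ell mp u x1 h)) = (\<Sum>u\<in>U. complex_of_real (r u))"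
          using orthH[OF _ x1] by (intro sum.cong refl) (simp add: r_def)
        also have "\<dots> = complex_of_real (\<Sum>u\<in>U. r u)" by (rule of_real_sum[symmetric])
        finally have e: "(\<Sum>u\<in>U. \<Sum>h\<in>H. \<psi> (ell mp u x1 h)) = complex_of_real (\<Sum>u\<in>U. r u)" .
        have nn: "(\<Sum>u\<in>U. r u) \<ge> 0" using r0 by (intro sum_nonneg) auto
        show ?thesis by (simp only: e norm_of_real abs_of_nonneg[OF nn])
      qed
      also have "\<dots> = cmod (\<Sum>h\<in>H. \<Sum>u\<in>U. \<psi> (ell mp u x1 h))" by (rule arg_cong[where f = cmod], rule sum.swap)
      also have "\<dots> \<le> (\<Sum>h\<in>H. bb x1 h)" unfolding bb_def by (rule norm_sum)
      finally show "(\<Sum>u\<in>U. cmod (\<Sum>h\<in>H. \<psi> (ell mp u x1 h))) \<le> (\<Sum>h\<in>H. bb x1 h)" .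
    qed
    finally show ?thesis .
  qed
  have si: "cmod (\<Sum>u\<in>U. Dcl ks (\<lambda>u. \<psi> (ell mp u x1 h)) u) \<le> tU * ind (h # ks)"
    if x1: "x1 \<in> X" and h: "h \<in> H" and ks: "ks \<in> lists_of H j" for x1 h ks
  proof -
    have ksH: "set ks \<subseteq> H" and lk: "length ks + 2 = d" using ks d2 by (auto simp: lists_of_def j_def)
    define ks' where "ks' = tshv mp h # ks"
    have ks'X: "set ks' \<subseteq> X" using ksH HX tshX[OF h] by (auto simp: ks'_def)
    have lk': "length ks' + 1 = d" using lk by (simp add: ks'_def)
    define c0 where "c0 = Dl ks' Fp 0"
    define E where "E u = of_nat (fact d) * (fps_X ^ mp * M (\<lambda>q. ((h # ks) @ [u]) ! q))" for u
    define La where "La u = pr \<alpha> m (E u)" for u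
    define C1 where "C1 = pr \<beta> m (of_nat (fact d) * M (\<lambda>q. (x1 # ks') ! q))"
    have cF: "coefin V (Fp x)" if "x \<in> X" for x using that unfolding X_def by (rule coefFp)
    have cG: "coefin V (Gp x1 x)" if "x \<in> X" for x using x1 that unfolding X_def by (rule coefGp)
    have c0c: "coefin V c0" unfolding c0_def
      by (rule Dl_coef[where k = m and N = "Suc n"]) (use ks'X cF subgrp_zero[OF gX] in \<open>auto simp: X_def\<close>)
    have Ec: "coefin V (E u)" if "u \<in> U" for u
    proof -
      have "set ((h # ks) @ [u]) \<subseteq> X" using h ksH that HX UX by auto
      then show ?thesis unfolding E_def using lk
        by (intro coefin_of_nat coefin_Xpow coefM_list[where k = m and N = "Suc n"]) (auto simp: X_def)
    qed
    have Mtsh: "M (\<lambda>q. (ks' @ [u]) ! q) = fps_X ^ mp * M (\<lambda>q. ((h # ks) @ [u]) ! q)" for u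
    proof -
      have "M (\<lambda>q. (ks' @ [u]) ! q) = M ((\<lambda>q. ((h # ks) @ [u]) ! q)(0 := tshv mp h))"
        unfolding ks'_def by (simp only: nth_tsh_upd)
      also have "\<dots> = fps_X ^ mp * M ((\<lambda>q. ((h # ks) @ [u]) ! q)(0 := h))"
        by (rule Mf_tsh) (use d2 in simp)
      finally show ?thesis unfolding nth_upd_triv .
    qed
    have val: "Dl ks (\<lambda>u. ell mp u x1 h) u = (pr \<alpha> m c0 + C1) + La u" if u: "u \<in> U" for u
    proof -
      have "Dl ks (\<lambda>u. ell mp u x1 h) u = Dl ks (\<lambda>u. Phi (u + tshv mp h) x1 - Phi u x1) u"
      proof (rule Dl_cong_on[OF gU _ _ u])
        show "set ks \<subseteq> U" using ksH HU by blast
        fix x assume "x \<in> U"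
        then show "ell mp x x1 h = Phi (x + tshv mp h) x1 - Phi x x1"
          using Phi_shift[OF mp(3) allU allH[OF h] allX[OF x1]] by simp
      qed
      also have "\<dots> = Dl ks' (\<lambda>u. Phi u x1) u" by (simp add: ks'_def)
      also have "\<dots> = Dl ks' (\<lambda>u. pr \<alpha> m (Fp u)) u + Dl ks' (\<lambda>u. pr \<beta> m (Gp x1 u)) u"
        unfolding Phi_def by (rule Dl_add)
      also have "Dl ks' (\<lambda>u. pr \<alpha> m (Fp u)) u = pr \<alpha> m (Dl ks' Fp u)"
        using ks'X u UX cF unfolding X_def by (intro pr_Dl[OF al]) auto
      also have "Dl ks' (\<lambda>u. pr \<beta> m (Gp x1 u)) u = pr \<beta> m (Dl ks' (Gp x1) u)"
        using ks'X u UX cG unfolding X_def by (intro pr_Dl[OF be]) auto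
      also have "Dl ks' (Gp x1) u = of_nat (fact d) * M (\<lambda>q. (x1 # ks') ! q)" by (rule GpTop[OF lk'])
      also have "Dl ks' Fp u = c0 + of_nat (fact d) * M (\<lambda>q. (ks' @ [u]) ! q)" unfolding c0_def by (rule FpLin[OF lk'])
      also have "of_nat (fact d) * M (\<lambda>q. (ks' @ [u]) ! q) = E u" unfolding E_def Mtsh ..
      also have "pr \<alpha> m (c0 + E u) = pr \<alpha> m c0 + La u" unfolding La_def by (rule pr_add[OF al c0c Ec[OF u]])
      finally show ?thesis by (simp add: C1_def algebra_simps)
    qed
    have Ladd: "La (u + w) = La u + La w" if "u \<in> U" "w \<in> U" for u w
    proof -
      have "E (u + w) = E u + E w" unfolding E_def
        using M_snoc_add[of "h # ks" u w] lk by (simp add: algebra_simps)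
      then show ?thesis unfolding La_def using Ec that by (simp add: pr_add[OF al])
    qed
    have "(\<Sum>u\<in>U. Dcl ks (\<lambda>u. \<psi> (ell mp u x1 h)) u) = (\<Sum>u\<in>U. \<psi> (pr \<alpha> m c0 + C1) * \<psi> (La u))"
      using val by (intro sum.cong refl) (simp add: Dcl_char[OF chr] chr[unfolded addchar_def])
    also have "\<dots> = \<psi> (pr \<alpha> m c0 + C1) * (\<Sum>u\<in>U. \<psi> (La u))" by (simp add: sum_distrib_left)
    finally have "cmod (\<Sum>u\<in>U. Dcl ks (\<lambda>u. \<psi> (ell mp u x1 h)) u) = cmod (\<Sum>u\<in>U. \<psi> (La u))"
      by (simp add: norm_mult cmod_char[OF chr p0])
    also have "\<dots> = (if \<forall>u\<in>U. \<psi> (La u) = 1 then tU else 0)"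
      using char_orth[OF chr gU finU, of La] Ladd t0 by (simp add: tU_def)
    also have "\<dots> \<le> tU * ind (h # ks)"
    proof (cases "\<forall>u\<in>U. \<psi> (La u) = 1")
      case True
      have "nf (h # ks) \<in> Nset \<alpha> (m - mp)"
        unfolding nf_def
      proof (rule condN[OF al mp(2), where U = U])
        show "ev i y \<in> U" if "y \<in> trunc P (m - mp)" "i \<le> n" for y i
          using ev_tvecs[OF that] HU unfolding H_def by blast
        show "h # ks \<in> lists_of (tvecs P (m - mp) (Suc n)) (d - 1)"
          using h ksH lk unfolding H_def by (auto simp: lists_of_def)
        show "\<forall>u\<in>U. \<psi> (pr \<alpha> m (fps_X ^ mp * (of_nat (fact d) * M (\<lambda>q. ((h # ks) @ [u]) ! q)))) = 1"
          using True by (simp add: La_def E_def algebra_simps)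
      qed
      then show ?thesis using True t0 by (simp add: ind_def)
    next
      case False
      have "0 \<le> tU * ind (h # ks)" using t0 by (simp add: ind_def)
      then show ?thesis using False by (subst if_not_P) auto
    qed
    finally show ?thesis .
  qed
  have sh: "bb x1 h ^ N * tH ^ j \<le> tU ^ N * (\<Sum>ks\<in>lists_of H j. ind (h # ks))"
    if x1: "x1 \<in> X" and h: "h \<in> H" for x1 h
  proof -
    have tN: "tU ^ (N - 1) * tU = tU ^ N"
    proof -
      have "N = Suc (N - 1)" using N1 by simp
      then show ?thesis by (metis power_Suc2)
    qed
    have "bb x1 h ^ N * tH ^ j \<le> tU ^ (N - 1) * (\<Sum>ks\<in>lists_of H j. cmod (\<Sum>u\<in>U. Dcl ks (\<lambda>u. \<psi> (ell mp u x1 h)) u))"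
      unfolding bb_def tU_def tH_def N_def j_def by (rule weyl[OF gU finU gH HU])
    also have "\<dots> \<le> tU ^ (N - 1) * (\<Sum>ks\<in>lists_of H j. tU * ind (h # ks))"
      by (intro mult_left_mono sum_mono si[OF x1 h]) (use t0 in auto)
    also have "\<dots> = tU ^ (N - 1) * tU * (\<Sum>ks\<in>lists_of H j. ind (h # ks))"
      by (simp add: sum_distrib_left mult.assoc)
    also have "\<dots> = tU ^ N * (\<Sum>ks\<in>lists_of H j. ind (h # ks))" by (simp only: tN)
    finally show ?thesis .
  qed
  have sj: "(\<Sum>h\<in>H. \<Sum>ks\<in>lists_of H j. ind (h # ks)) \<le> nA"
  proof -
    have "(\<Sum>h\<in>H. \<Sum>ks\<in>lists_of H j. ind (h # ks)) = (\<Sum>hs\<in>lists_of H (d - 1). ind hs)"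
      unfolding dj by (simp add: sum_lists_of_Suc)
    also have "\<dots> \<le> nA"
      unfolding ind_def nA_def by (rule sum_ind_le[OF _ finH]) simp
    finally show ?thesis .
  qed
  define cS where "cS = cmod (S_sum emb \<psi> D a n d m \<alpha> \<beta>)"
  have bb0: "bb x1 h \<ge> 0" for x1 h by (simp add: bb_def)
  have c1: "cS ^ N \<le> (t * tH) ^ (N - 1) * (\<Sum>x1\<in>X. \<Sum>h\<in>H. bb x1 h ^ N)"
  proof -
    have "cS ^ N \<le> (\<Sum>x1\<in>X. \<Sum>h\<in>H. bb x1 h) ^ N" unfolding cS_def by (rule power_mono[OF sf]) simp
    also have "(\<Sum>x1\<in>X. \<Sum>h\<in>H. bb x1 h) = (\<Sum>p\<in>X \<times> H. bb (fst p) (snd p))"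
      by (simp add: sum.cartesian_product case_prod_beta)
    also have "(\<Sum>p\<in>X \<times> H. bb (fst p) (snd p)) ^ N \<le> real (card (X \<times> H)) ^ (N - 1) * (\<Sum>p\<in>X \<times> H. bb (fst p) (snd p) ^ N)"
      unfolding N_def by (rule power_mean_2) (use finX finH bb0 in auto)
    also have "real (card (X \<times> H)) = t * tH" by (simp add: t_def tH_def card_cartesian_product)
    also have "(\<Sum>p\<in>X \<times> H. bb (fst p) (snd p) ^ N) = (\<Sum>x1\<in>X. \<Sum>h\<in>H. bb x1 h ^ N)"
      by (simp add: sum.cartesian_product case_prod_beta)
    finally show ?thesis .
  qed
  have c2: "(\<Sum>x1\<in>X. \<Sum>h\<in>H. bb x1 h ^ N) * tH ^ j \<le> tU ^ N * (t * nA)"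
  proof -
    have "(\<Sum>x1\<in>X. \<Sum>h\<in>H. bb x1 h ^ N) * tH ^ j = (\<Sum>x1\<in>X. \<Sum>h\<in>H. bb x1 h ^ N * tH ^ j)"
      by (simp add: sum_distrib_right)
    also have "\<dots> \<le> (\<Sum>x1\<in>X. \<Sum>h\<in>H. tU ^ N * (\<Sum>ks\<in>lists_of H j. ind (h # ks)))"
      by (intro sum_mono sh) auto
    also have "\<dots> = (\<Sum>x1\<in>X. tU ^ N * (\<Sum>h\<in>H. \<Sum>ks\<in>lists_of H j. ind (h # ks)))"
      by (simp add: sum_distrib_left)
    also have "\<dots> \<le> (\<Sum>x1\<in>X. tU ^ N * nA)"
      by (intro sum_mono mult_left_mono sj) (use t0 in simp)
    also have "\<dots> = tU ^ N * (t * nA)" by (simp add: t_def)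
    finally show ?thesis .
  qed
  have "cS ^ N * tH ^ j \<le> (t * tH) ^ (N - 1) * ((\<Sum>x1\<in>X. \<Sum>h\<in>H. bb x1 h ^ N) * tH ^ j)"
    using mult_right_mono[OF c1, of "tH ^ j"] t0 by (simp add: mult.assoc)
  also have "\<dots> \<le> (t * tH) ^ (N - 1) * (tU ^ N * (t * nA))"
    by (intro mult_left_mono c2) (use t0 in simp)
  finally have c3: "cS ^ N * tH ^ j \<le> (t * tH) ^ (N - 1) * (tU ^ N * (t * nA))" .
  have "cS ^ N * tH ^ (d - 1) = (cS ^ N * tH ^ j) * tH" unfolding dj by (simp add: algebra_simps)
  also have "\<dots> \<le> (t * tH) ^ (N - 1) * (tU ^ N * (t * nA)) * tH" by (rule mult_right_mono[OF c3 t0(3)])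
  also have "\<dots> = ((t * tH) ^ (N - 1) * (t * tH)) * tU ^ N * nA" by (simp only: mult_ac)
  also have "(t * tH) ^ (N - 1) * (t * tH) = (t * tH) ^ N"
  proof -
    have "N = Suc (N - 1)" using N1 by simp
    then show ?thesis by (metis power_Suc2)
  qed
  also have "(t * tH) ^ N * tU ^ N * nA = t ^ N * (tU * tH) ^ N * nA" by (simp add: power_mult_distrib algebra_simps)
  also have "\<dots> = t ^ (2 * N) * nA" unfolding tUH by (simp add: mult_2 power_add)
  finally show ?thesis unfolding cS_def t_def tH_def nA_def X_def H_def N_def by simp
qed

end


lemma mprime_props:
  assumes "m \<ge> (1::nat)"
  defines "mp \<equiv> nat \<lceil>(real m + 1) / 2\<rceil>"
  shows "1 \<le> mp" "mp \<le> m" "m + 1 \<le> 2 * mp"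
proof -
  have c1: "(real m + 1) / 2 \<le> real_of_int \<lceil>(real m + 1) / 2\<rceil>" by (rule le_of_int_ceiling)
  have c2: "\<lceil>(real m + 1) / 2\<rceil> \<le> int m" using assms(1) by (simp add: ceiling_le_iff)
  have c3: "1 \<le> \<lceil>(real m + 1) / 2\<rceil>" using assms(1) by (simp add: le_ceiling_iff)
  show "1 \<le> mp" using c3 unfolding mp_def by linarith
  show "mp \<le> m" using c2 c3 unfolding mp_def by linarith
  have "2 * ((real m + 1) / 2) \<le> 2 * real_of_int \<lceil>(real m + 1) / 2\<rceil>" using c1 by (rule mult_left_mono) simp
  then have "real m + 1 \<le> 2 * real_of_int \<lceil>(real m + 1) / 2\<rceil>" by simp
  then have "int m + 1 \<le> 2 * \<lceil>(real m + 1) / 2\<rceil>" by linarith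
  then show "m + 1 \<le> 2 * mp" using c3 unfolding mp_def by linarith
qed

lemma tvecs_infinite:
  fixes V :: "'a::field set"
  assumes "infinite V" "0 \<in> V"
  shows "infinite (tvecs V k (Suc n))"
proof
  assume fin: "finite (tvecs V k (Suc n))"
  define f where "f y = (\<lambda>j::nat. \<lambda>l::nat. if j = 0 \<and> l = 0 then y else (0::'a))" for y :: 'a
  have "inj_on f V" by (auto simp: inj_on_def f_def fun_eq_iff)
  moreover have "f ` V \<subseteq> tvecs V k (Suc n)" using assms(2) by (auto simp: f_def tvecs_def trunc_def)
  ultimately have "finite V" using fin by (metis finite_subset inj_on_finite)
  then show False using assms(1) by simp
qed

theorem lemma5p3:
  fixes emb :: "'k::{finite,field} \<Rightarrow> 'K::field"
    and \<psi> :: "'k \<Rightarrow> complex"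
    and D :: "('K \<Rightarrow> int) \<Rightarrow> int"
    and a :: "nat list \<Rightarrow> 'k"
    and n d m :: nat
    and \<alpha> \<beta> :: "nat \<Rightarrow> 'K \<Rightarrow> 'k"
  assumes "function_field emb"
    and "nontriv_add_char \<psi>"
    and "divisor emb D"
    and "div_deg emb D \<ge> 2 * genus emb - 1"
    and "d \<ge> 2"
    and "sym_coeffs a"
    and "m \<ge> 1"
    and "\<alpha> \<in> tduals emb (RR_space emb (div_scale d D)) m"
    and "\<beta> \<in> tduals emb (RR_space emb (div_scale d D)) m"
  shows "let m' = nat \<lceil>(real m + 1) / 2\<rceil>; P = RR_space emb D in
    cmod (S_sum emb \<psi> D a n d m \<alpha> \<beta>) ^ (2 ^ (d - 2))
    \<le> real (card (tvecs P m (2 * (n + 1)))) ^ (2 ^ (d - 2))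
       / real (card (tvecs P (m - m') (n + 1))) ^ (d - 1)
       * min (real (N_count emb D a n d (m - m') \<alpha>))
             (real (N_count emb D a n d m \<beta>) / real (card (tvecs P (m' - 1) (n + 1))) ^ (d - 1))"
proof -
  define mp where "mp = nat \<lceil>(real m + 1) / 2\<rceil>"
  define P where "P = RR_space emb D"
  define N :: nat where "N = 2 ^ (d - 2)"
  have N1: "N \<ge> 1" unfolding N_def by simp
  have mpp: "1 \<le> mp" "mp \<le> m" "m + 1 \<le> 2 * mp" using mprime_props[OF assms(7)] unfolding mp_def by auto
  have ce: "const_emb emb" using assms(1) by (simp add: function_field_def)
  define RHS where "RHS = real (card (tvecs P m (2 * (n + 1)))) ^ N
       / real (card (tvecs P (m - mp) (n + 1))) ^ (d - 1)
       * min (real (N_count emb D a n d (m - mp) \<alpha>))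
             (real (N_count emb D a n d m \<beta>) / real (card (tvecs P (mp - 1) (n + 1))) ^ (d - 1))"
  have RHS0: "RHS \<ge> 0" unfolding RHS_def by simp
  have goal: "cmod (S_sum emb \<psi> D a n d m \<alpha> \<beta>) ^ N \<le> RHS"
  proof (cases "finite P \<and> \<not> (\<forall>x. \<psi> x = 0)")
    case False
    have "S_sum emb \<psi> D a n d m \<alpha> \<beta> = 0"
    proof (cases "finite P")
      case False
      then have "infinite (tvecs P m (Suc n))" using tvecs_infinite RR_zero unfolding P_def by blast
      then show ?thesis unfolding S_sum_def P_def by simp
    next
      case True
      with \<open>\<not> (finite P \<and> \<not> (\<forall>x. \<psi> x = 0))\<close> have z: "\<forall>x. \<psi> x = 0" by blast
      have "psi_m \<psi> m c = 0" for c unfolding psi_m_def using z by simp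
      then show ?thesis unfolding S_sum_def by simp
    qed
    then show ?thesis using RHS0 N1 by (simp add: power_0_left)
  next
    case True
    then have finP: "finite P" and nz: "\<not> (\<forall>x. \<psi> x = 0)" by auto
    then have chr: "addchar \<psi>" "\<psi> 0 = 1" "\<exists>x. \<psi> x \<noteq> 1" using nontriv_cases[OF assms(2)] by auto
    interpret L: L5 emb \<psi> D a n d m \<alpha> \<beta>
      by unfold_locales (use ce chr assms finP in \<open>auto simp: P_def\<close>)
    define T where "T = real (card (tvecs P m (Suc n)))"
    define T1 where "T1 = real (card (tvecs P (m - mp) (Suc n)))"
    define T2 where "T2 = real (card (tvecs P (mp - 1) (Suc n)))"
    define cS where "cS = cmod (S_sum emb \<psi> D a n d m \<alpha> \<beta>)"
    define NA where "NA = real (N_count emb D a n d (m - mp) \<alpha>)"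
    define NB where "NB = real (N_count emb D a n d m \<beta>)"
    have cardP: "card P > 0" using finP RR_zero[of emb D] unfolding P_def by (auto simp: card_gt_0_iff)
    have T1p: "T1 > 0" unfolding T1_def P_def L.card_tv using cardP unfolding P_def by simp
    have T2p: "T2 > 0" unfolding T2_def P_def L.card_tv using cardP unfolding P_def by simp
    have T12: "T1 * T2 = T"
    proof -
      have e: "(m - mp + 1) * Suc n + (mp - 1 + 1) * Suc n = (m + 1) * Suc n" using mpp
        by (simp add: add_mult_distrib[symmetric])
      have "card (tvecs P (m - mp) (Suc n)) * card (tvecs P (mp - 1) (Suc n)) = card (tvecs P m (Suc n))"
        unfolding P_def L.card_tv by (simp only: power_add[symmetric] e)
      then show ?thesis unfolding T1_def T2_def T_def by (metis of_nat_mult)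
    qed
    have T2n: "real (card (tvecs P m (2 * (n + 1)))) = T ^ 2"
    proof -
      have e: "(m + 1) * (2 * (n + 1)) = ((m + 1) * Suc n) * 2" by simp
      have "card (tvecs P m (2 * (n + 1))) = card (tvecs P m (Suc n)) ^ 2"
        unfolding P_def L.card_tv e power_mult ..
      then show ?thesis unfolding T_def by simp
    qed
    have ab: "cS ^ N * T1 ^ (d - 1) \<le> T ^ (2 * N) * NA"
      using L.alpha_bound[OF mpp] unfolding cS_def T1_def T_def NA_def N_def P_def L.N_count_eq by simp
    have bb: "cS ^ N * T ^ (d - 1) \<le> T ^ (2 * N) * NB"
      using L.beta_bound unfolding cS_def T_def NB_def N_def P_def L.N_count_eq by simp
    define c where "c = T ^ (2 * N) / T1 ^ (d - 1)"
    have c0: "c \<ge> 0" using T1p by (simp add: c_def T_def)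
    have A: "cS ^ N \<le> c * NA"
      using ab T1p unfolding c_def by (simp add: field_simps)
    have B: "cS ^ N \<le> c * (NB / T2 ^ (d - 1))"
    proof -
      have "T ^ (d - 1) = T1 ^ (d - 1) * T2 ^ (d - 1)" unfolding T12[symmetric] by (simp add: power_mult_distrib)
      then show ?thesis using bb T1p T2p unfolding c_def by (simp add: field_simps)
    qed
    have "cS ^ N \<le> c * min NA (NB / T2 ^ (d - 1))"
      using A B c0 by (simp add: min_def)
    moreover have "RHS = c * min NA (NB / T2 ^ (d - 1))"
      unfolding RHS_def c_def NA_def NB_def T2_def T1_def T2n by (simp add: power_mult[symmetric] mult.commute)
    ultimately show ?thesis unfolding cS_def by simp
  qed
  then show ?thesis unfolding RHS_def mp_def P_def N_def Let_def .
qed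


end
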